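(* Let $k$ be a field and let $\mathsf{E}$ be a left strictly locally finite $k$-linear category. Then the contramodule forgetful functor $\Theta_\mathsf{E}$ from the category of left $\mathcal{C}_\mathsf{E}$-contramodules to the category of left $\mathsf{E}$-modules is fully faithful.
   Context: A small $k$-linear category $\mathsf{E}$ has $k$-vector spaces $\operatorname{Hom}_\mathsf{E}(x,y)$, $k$-bilinear associative composition and identities; it is assumed that $\mathrm{id}_x\neq0$ for every object $x$. A left $\mathsf{E}$-module is a $k$-linear functor $\mathsf{E}\to k\text{-Vect}$ (spaces $P(x)$ and action maps $\operatorname{Hom}_\mathsf{E}(x,y)\otimes_kP(x)\to P(y)$); morphisms are natural transformations. Write $x\preceq y$ if there are $n\ge1$ and objects $x=z_0,\dots,z_n=y$ with $\operatorname{Hom}_\mathsf{E}(z_{i-1},z_i)\neq0$ for all $i$; $x\prec y$ means $x\preceq y$ and not $y\preceq x$. $\mathsf{E}$ is locally finite if all $\operatorname{Hom}_\mathsf{E}(x,y)$ are finite-dimensional and all sets $\{z:x\preceq z\preceq y\}$ are finite. $\mathsf{E}$ is left strictly locally finite if it is locally finite and for every object $y$ there is a finite set of objects $X_y$, with $x\prec y$ for all $x\in X_y$, such that every $f:z\to y$ with $z\prec y$ equals $\sum_{i=1}^n h_ig_i$ ($n\ge0$) for some $g_i:z\to x_i$, $h_i:x_i\to y$, $x_i\in X_y$. $\mathcal{C}_\mathsf{E}=\bigoplus_{x,y}\mathcal{C}^{x,y}$, $\mathcal{C}^{x,y}=\operatorname{Hom}_\mathsf{E}(x,y)^*$, with counit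 zero on $\mathcal{C}^{x,y}$ for $x\neq y$ and evaluation at $\mathrm{id}_x$ on $\mathcal{C}^{x,x}$, and comultiplication $\mathcal{C}^{x,y}\to\bigoplus_z\mathcal{C}^{x,z}\otimes\mathcal{C}^{z,y}$ with components dual to composition $\operatorname{Hom}_\mathsf{E}(x,z)\otimes\operatorname{Hom}_\mathsf{E}(z,y)\to\operatorname{Hom}_\mathsf{E}(x,y)$, $g\otimes h\mapsto hg$. A left contramodule over a coalgebra $(\mathcal{C},\mu,\epsilon)$ is a space $\mathfrak{P}$ with $\pi:\operatorname{Hom}_k(\mathcal{C},\mathfrak{P})\to\mathfrak{P}$ such that $\pi(c\mapsto\epsilon(c)p)=p$ and, under $\operatorname{Hom}_k(\mathcal{C},\operatorname{Hom}_k(\mathcal{C},\mathfrak{P}))\cong\operatorname{Hom}_k(\mathcal{C}\otimes\mathcal{C},\mathfrak{P})$, $f\mapsto(c'\otimes c''\mapsto f(c'')(c'))$, one has $\pi(c\mapsto\pi(f(c)))=\pi(f\circ\mu)$; morphisms commute with $\pi$. For $\varphi\in\mathcal{C}^*$ set $\varphi\cdot p=\pi(c\mapsto\varphi(c)p)$. $\Theta_\mathsf{E}$: with $e_x\in\mathcal{C}_\mathsf{E}^*$ evaluation at $\mathrm{id}_x$ on $\mathcal{C}^{x,x}$ (zero elsewhere) and, for $f\in\operatorname{Hom}_\mathsf{E}(x,y)$, $\mathrm{ev}_f$ evaluation at $f$ on $\mathcal{C}^{x,y}$ (zero elsewhere), $\Theta_\mathsf{E}(\mathfrak{P})(x)=e_x\cdot\mathfrak{P}$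 (with $\mathfrak{P}\cong\prod_xe_x\cdot\mathfrak{P}$), $f$ acting by $p\mapsto\mathrm{ev}_f\cdot p$; on morphisms it takes restrictions. *)

theory Defs
  imports Complex_Main
begin

text \<open>A small k-linear category: objects of type 'o, morphisms live in a k-vector space
  of type 'm (scalar multiplication sM); Hom x y is a subspace of 'm; cmp x y z h g is the
  composite h g of g : x -> y and h : y -> z; idm x is the identity of x.\<close>

definition klin_cat ::
  "('k::field \<Rightarrow> 'm::ab_group_add \<Rightarrow> 'm) \<Rightarrow> ('o \<Rightarrow> 'o \<Rightarrow> 'm set)
   \<Rightarrow> ('o \<Rightarrow> 'o \<Rightarrow> 'o \<Rightarrow> 'm \<Rightarrow> 'm \<Rightarrow> 'm) \<Rightarrow> ('o \<Rightarrow> 'm) \<Rightarrow> bool" where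
  "klin_cat sM Hom cmp idm \<longleftrightarrow>
     vector_space sM \<and>
     (\<forall>x y. module.subspace sM (Hom x y)) \<and>
     (\<forall>x y z g h. g \<in> Hom x y \<longrightarrow> h \<in> Hom y z \<longrightarrow> cmp x y z h g \<in> Hom x z) \<and>
     (\<forall>x y z g g' h. g \<in> Hom x y \<longrightarrow> g' \<in> Hom x y \<longrightarrow> h \<in> Hom y z \<longrightarrow>
         cmp x y z h (g + g') = cmp x y z h g + cmp x y z h g') \<and>
     (\<forall>x y z g h h'. g \<in> Hom x y \<longrightarrow> h \<in> Hom y z \<longrightarrow> h' \<in> Hom y z \<longrightarrow>
         cmp x y z (h + h') g = cmp x y z h g + cmp x y z h' g) \<and>
     (\<forall>x y z g h a. g \<in> Hom x y \<longrightarrow> h \<in> Hom y z \<longrightarrow>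
         cmp x y z h (sM a g) = sM a (cmp x y z h g) \<and>
         cmp x y z (sM a h) g = sM a (cmp x y z h g)) \<and>
     (\<forall>w x y z g h l. g \<in> Hom w x \<longrightarrow> h \<in> Hom x y \<longrightarrow> l \<in> Hom y z \<longrightarrow>
         cmp w y z l (cmp w x y h g) = cmp w x z (cmp x y z l h) g) \<and>
     (\<forall>x. idm x \<in> Hom x x \<and> idm x \<noteq> 0) \<and>
     (\<forall>x y g. g \<in> Hom x y \<longrightarrow> cmp x x y g (idm x) = g \<and> cmp x y y (idm y) g = g)"

definition hrel :: "('o \<Rightarrow> 'o \<Rightarrow> 'm::zero set) \<Rightarrow> ('o \<times> 'o) set" where
  "hrel Hom = {(x, y). Hom x y \<noteq> {0}}"

definition precle :: "('o \<Rightarrow> 'o \<Rightarrow> 'm::zero set) \<Rightarrow> 'o \<Rightarrow> 'o \<Rightarrow> bool" where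
  "precle Hom x y \<longleftrightarrow> (x, y) \<in> (hrel Hom)\<^sup>+"

definition precl :: "('o \<Rightarrow> 'o \<Rightarrow> 'm::zero set) \<Rightarrow> 'o \<Rightarrow> 'o \<Rightarrow> bool" where
  "precl Hom x y \<longleftrightarrow> precle Hom x y \<and> \<not> precle Hom y x"

definition locally_finite ::
  "('k::field \<Rightarrow> 'm::ab_group_add \<Rightarrow> 'm) \<Rightarrow> ('o \<Rightarrow> 'o \<Rightarrow> 'm set) \<Rightarrow> bool" where
  "locally_finite sM Hom \<longleftrightarrow>
     (\<forall>x y. \<exists>B. finite B \<and> Hom x y \<subseteq> module.span sM B) \<and>
     (\<forall>x y. finite {z. precle Hom x z \<and> precle Hom z y})"

definition left_strictly_locally_finite ::
  "('k::field \<Rightarrow> 'm::ab_group_add \<Rightarrow> 'm) \<Rightarrow> ('o \<Rightarrow> 'o \<Rightarrow> 'm set)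
   \<Rightarrow> ('o \<Rightarrow> 'o \<Rightarrow> 'o \<Rightarrow> 'm \<Rightarrow> 'm \<Rightarrow> 'm) \<Rightarrow> bool" where
  "left_strictly_locally_finite sM Hom cmp \<longleftrightarrow>
     locally_finite sM Hom \<and>
     (\<forall>y. \<exists>X. finite X \<and> (\<forall>x\<in>X. precl Hom x y) \<and>
        (\<forall>z f. precl Hom z y \<longrightarrow> f \<in> Hom z y \<longrightarrow>
           (\<exists>(n::nat) xs g h. (\<forall>i<n. xs i \<in> X \<and> g i \<in> Hom z (xs i) \<and> h i \<in> Hom (xs i) y) \<and>
               f = (\<Sum>i<n. cmp z (xs i) y (h i) (g i)))))"

text \<open>Elements of C_E = (direct sum over x,y of Hom(x,y)^* ) are represented as finitely supported
  families c with c x y a linear functional on Hom x y (extended by 0 outside Hom x y).\<close>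

definition dualsp :: "('k::field \<Rightarrow> 'm::ab_group_add \<Rightarrow> 'm) \<Rightarrow> 'm set \<Rightarrow> ('m \<Rightarrow> 'k) set" where
  "dualsp sM V = {\<phi>. (\<forall>u\<in>V. \<forall>v\<in>V. \<phi> (u + v) = \<phi> u + \<phi> v) \<and>
                     (\<forall>a. \<forall>v\<in>V. \<phi> (sM a v) = a * \<phi> v) \<and> (\<forall>v. v \<notin> V \<longrightarrow> \<phi> v = 0)}"

definition csupp :: "('o \<Rightarrow> 'o \<Rightarrow> 'm \<Rightarrow> 'k::zero) \<Rightarrow> ('o \<times> 'o) set" where
  "csupp c = {(x, y). c x y \<noteq> (\<lambda>_. 0)}"

definition Cset :: "('k::field \<Rightarrow> 'm::ab_group_add \<Rightarrow> 'm) \<Rightarrow> ('o \<Rightarrow> 'o \<Rightarrow> 'm set)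
   \<Rightarrow> ('o \<Rightarrow> 'o \<Rightarrow> 'm \<Rightarrow> 'k) set" where
  "Cset sM Hom = {c. (\<forall>x y. c x y \<in> dualsp sM (Hom x y)) \<and> finite (csupp c)}"

definition cadd :: "('o \<Rightarrow> 'o \<Rightarrow> 'm \<Rightarrow> 'k::field) \<Rightarrow> ('o \<Rightarrow> 'o \<Rightarrow> 'm \<Rightarrow> 'k) \<Rightarrow> ('o \<Rightarrow> 'o \<Rightarrow> 'm \<Rightarrow> 'k)" where
  "cadd c d = (\<lambda>x y m. c x y m + d x y m)"

definition cscale :: "'k::field \<Rightarrow> ('o \<Rightarrow> 'o \<Rightarrow> 'm \<Rightarrow> 'k) \<Rightarrow> ('o \<Rightarrow> 'o \<Rightarrow> 'm \<Rightarrow> 'k)" where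
  "cscale a c = (\<lambda>x y m. a * c x y m)"

text \<open>Counit: zero on C^{x,y} for x \<noteq> y, evaluation at idm x on C^{x,x}.\<close>
definition counit :: "('o \<Rightarrow> 'm) \<Rightarrow> ('o \<Rightarrow> 'o \<Rightarrow> 'm \<Rightarrow> 'k::field) \<Rightarrow> 'k" where
  "counit idm c = (\<Sum>x\<in>{x. (x, x) \<in> csupp c}. c x x (idm x))"

definition cdelta :: "'o \<Rightarrow> 'o \<Rightarrow> ('m \<Rightarrow> 'k::zero) \<Rightarrow> ('o \<Rightarrow> 'o \<Rightarrow> 'm \<Rightarrow> 'k)" where
  "cdelta x y \<phi> = (\<lambda>x' y'. if x' = x \<and> y' = y then \<phi> else (\<lambda>_. 0))"

definition hbasis :: "('k::field \<Rightarrow> 'm::ab_group_add \<Rightarrow> 'm) \<Rightarrow> ('o \<Rightarrow> 'o \<Rightarrow> 'm set) \<Rightarrow> 'o \<Rightarrow> 'o \<Rightarrow> 'm set" where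
  "hbasis sM Hom x y = (SOME B. B \<subseteq> Hom x y \<and> module.independent sM B \<and> module.span sM B = Hom x y)"

definition dualvec :: "('k::field \<Rightarrow> 'm::ab_group_add \<Rightarrow> 'm) \<Rightarrow> 'm set \<Rightarrow> 'm \<Rightarrow> ('m \<Rightarrow> 'k)" where
  "dualvec sM B g = (\<lambda>v. module.representation sM B v g)"

definition homC :: "('k::field \<Rightarrow> 'm::ab_group_add \<Rightarrow> 'm) \<Rightarrow> ('o \<Rightarrow> 'o \<Rightarrow> 'm set)
   \<Rightarrow> ('k \<Rightarrow> 'p::ab_group_add \<Rightarrow> 'p) \<Rightarrow> (('o \<Rightarrow> 'o \<Rightarrow> 'm \<Rightarrow> 'k) \<Rightarrow> 'p) set" where
  "homC sM Hom sP = {f. (\<forall>c\<in>Cset sM Hom. \<forall>d\<in>Cset sM Hom. f (cadd c d) = f c + f d) \<and>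
                       (\<forall>a. \<forall>c\<in>Cset sM Hom. f (cscale a c) = sP a (f c)) \<and>
                       (\<forall>c. c \<notin> Cset sM Hom \<longrightarrow> f c = 0)}"

definition homCC :: "('k::field \<Rightarrow> 'm::ab_group_add \<Rightarrow> 'm) \<Rightarrow> ('o \<Rightarrow> 'o \<Rightarrow> 'm set)
   \<Rightarrow> ('k \<Rightarrow> 'p::ab_group_add \<Rightarrow> 'p)
   \<Rightarrow> (('o \<Rightarrow> 'o \<Rightarrow> 'm \<Rightarrow> 'k) \<Rightarrow> ('o \<Rightarrow> 'o \<Rightarrow> 'm \<Rightarrow> 'k) \<Rightarrow> 'p) set" where
  "homCC sM Hom sP = {F. (\<forall>c\<in>Cset sM Hom. F c \<in> homC sM Hom sP) \<and>
       (\<forall>c\<in>Cset sM Hom. \<forall>d\<in>Cset sM Hom. F (cadd c d) = (\<lambda>e. F c e + F d e)) \<and>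
       (\<forall>a. \<forall>c\<in>Cset sM Hom. F (cscale a c) = (\<lambda>e. sP a (F c e))) \<and>
       (\<forall>c. c \<notin> Cset sM Hom \<longrightarrow> F c = (\<lambda>_. 0))}"

text \<open>For F in Hom_k(C, Hom_k(C, P)), viewed as the map C \<otimes> C \<rightarrow> P, c' \<otimes> c'' \<mapsto> F c'' c',
  this is the composite with the comultiplication, F \<circ> \<mu> in Hom_k(C, P).  The comultiplication
  C^{x,y} \<rightarrow> \<bigoplus>_z C^{x,z} \<otimes> C^{z,y}, dual to composition, is written out in dual bases:
  \<mu>(\<phi>) = \<Sum>_z \<Sum>_{g,h} \<phi>(h g) g^* \<otimes> h^*  (g running over a basis of Hom x z, h over a basis of Hom z y).\<close>
definition comult_comp :: "('k::field \<Rightarrow> 'm::ab_group_add \<Rightarrow> 'm) \<Rightarrow> ('o \<Rightarrow> 'o \<Rightarrow> 'm set)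
   \<Rightarrow> ('o \<Rightarrow> 'o \<Rightarrow> 'o \<Rightarrow> 'm \<Rightarrow> 'm \<Rightarrow> 'm) \<Rightarrow> ('k \<Rightarrow> 'p::ab_group_add \<Rightarrow> 'p)
   \<Rightarrow> (('o \<Rightarrow> 'o \<Rightarrow> 'm \<Rightarrow> 'k) \<Rightarrow> ('o \<Rightarrow> 'o \<Rightarrow> 'm \<Rightarrow> 'k) \<Rightarrow> 'p)
   \<Rightarrow> (('o \<Rightarrow> 'o \<Rightarrow> 'm \<Rightarrow> 'k) \<Rightarrow> 'p)" where
  "comult_comp sM Hom cmp sP F = (\<lambda>c. if c \<in> Cset sM Hom then
      (\<Sum>(x, y)\<in>csupp c. \<Sum>z\<in>{z. precle Hom x z \<and> precle Hom z y}.
         \<Sum>g\<in>hbasis sM Hom x z. \<Sum>h\<in>hbasis sM Hom z y.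
           sP (c x y (cmp x z y h g))
              (F (cdelta z y (dualvec sM (hbasis sM Hom z y) h))
                 (cdelta x z (dualvec sM (hbasis sM Hom x z) g))))
    else 0)"

definition contramodule :: "('k::field \<Rightarrow> 'm::ab_group_add \<Rightarrow> 'm) \<Rightarrow> ('o \<Rightarrow> 'o \<Rightarrow> 'm set)
   \<Rightarrow> ('o \<Rightarrow> 'o \<Rightarrow> 'o \<Rightarrow> 'm \<Rightarrow> 'm \<Rightarrow> 'm) \<Rightarrow> ('o \<Rightarrow> 'm)
   \<Rightarrow> ('k \<Rightarrow> 'p::ab_group_add \<Rightarrow> 'p) \<Rightarrow> ((('o \<Rightarrow> 'o \<Rightarrow> 'm \<Rightarrow> 'k) \<Rightarrow> 'p) \<Rightarrow> 'p) \<Rightarrow> bool" where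
  "contramodule sM Hom cmp idm sP \<pi> \<longleftrightarrow>
     vector_space sP \<and>
     (\<forall>f\<in>homC sM Hom sP. \<forall>g\<in>homC sM Hom sP. \<pi> (\<lambda>c. f c + g c) = \<pi> f + \<pi> g) \<and>
     (\<forall>a. \<forall>f\<in>homC sM Hom sP. \<pi> (\<lambda>c. sP a (f c)) = sP a (\<pi> f)) \<and>
     (\<forall>p. \<pi> (\<lambda>c. if c \<in> Cset sM Hom then sP (counit idm c) p else 0) = p) \<and>
     (\<forall>F\<in>homCC sM Hom sP.
        \<pi> (\<lambda>c. if c \<in> Cset sM Hom then \<pi> (F c) else 0) = \<pi> (comult_comp sM Hom cmp sP F))"

definition contra_mor :: "('k::field \<Rightarrow> 'm::ab_group_add \<Rightarrow> 'm) \<Rightarrow> ('o \<Rightarrow> 'o \<Rightarrow> 'm set)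
   \<Rightarrow> ('k \<Rightarrow> 'p::ab_group_add \<Rightarrow> 'p) \<Rightarrow> ((('o \<Rightarrow> 'o \<Rightarrow> 'm \<Rightarrow> 'k) \<Rightarrow> 'p) \<Rightarrow> 'p)
   \<Rightarrow> ('k \<Rightarrow> 'q::ab_group_add \<Rightarrow> 'q) \<Rightarrow> ((('o \<Rightarrow> 'o \<Rightarrow> 'm \<Rightarrow> 'k) \<Rightarrow> 'q) \<Rightarrow> 'q)
   \<Rightarrow> ('p \<Rightarrow> 'q) \<Rightarrow> bool" where
  "contra_mor sM Hom sP \<pi>P sQ \<pi>Q t \<longleftrightarrow>
     (\<forall>p p'. t (p + p') = t p + t p') \<and> (\<forall>a p. t (sP a p) = sQ a (t p)) \<and>
     (\<forall>f\<in>homC sM Hom sP. t (\<pi>P f) = \<pi>Q (t \<circ> f))"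

definition cact :: "('k::field \<Rightarrow> 'm::ab_group_add \<Rightarrow> 'm) \<Rightarrow> ('o \<Rightarrow> 'o \<Rightarrow> 'm set)
   \<Rightarrow> ('k \<Rightarrow> 'p::ab_group_add \<Rightarrow> 'p) \<Rightarrow> ((('o \<Rightarrow> 'o \<Rightarrow> 'm \<Rightarrow> 'k) \<Rightarrow> 'p) \<Rightarrow> 'p)
   \<Rightarrow> (('o \<Rightarrow> 'o \<Rightarrow> 'm \<Rightarrow> 'k) \<Rightarrow> 'k) \<Rightarrow> 'p \<Rightarrow> 'p" where
  "cact sM Hom sP \<pi> \<phi> p = \<pi> (\<lambda>c. if c \<in> Cset sM Hom then sP (\<phi> c) p else 0)"

definition evf :: "'o \<Rightarrow> 'o \<Rightarrow> 'm \<Rightarrow> (('o \<Rightarrow> 'o \<Rightarrow> 'm \<Rightarrow> 'k) \<Rightarrow> 'k)" where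
  "evf x y f = (\<lambda>c. c x y f)"

definition eobj :: "('o \<Rightarrow> 'm) \<Rightarrow> 'o \<Rightarrow> (('o \<Rightarrow> 'o \<Rightarrow> 'm \<Rightarrow> 'k) \<Rightarrow> 'k)" where
  "eobj idm x = evf x x (idm x)"

definition Theta_obj :: "('k::field \<Rightarrow> 'm::ab_group_add \<Rightarrow> 'm) \<Rightarrow> ('o \<Rightarrow> 'o \<Rightarrow> 'm set) \<Rightarrow> ('o \<Rightarrow> 'm)
   \<Rightarrow> ('k \<Rightarrow> 'p::ab_group_add \<Rightarrow> 'p) \<Rightarrow> ((('o \<Rightarrow> 'o \<Rightarrow> 'm \<Rightarrow> 'k) \<Rightarrow> 'p) \<Rightarrow> 'p) \<Rightarrow> 'o \<Rightarrow> 'p set" where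
  "Theta_obj sM Hom idm sP \<pi> x = range (cact sM Hom sP \<pi> (eobj idm x))"

definition Theta_act :: "('k::field \<Rightarrow> 'm::ab_group_add \<Rightarrow> 'm) \<Rightarrow> ('o \<Rightarrow> 'o \<Rightarrow> 'm set)
   \<Rightarrow> ('k \<Rightarrow> 'p::ab_group_add \<Rightarrow> 'p) \<Rightarrow> ((('o \<Rightarrow> 'o \<Rightarrow> 'm \<Rightarrow> 'k) \<Rightarrow> 'p) \<Rightarrow> 'p)
   \<Rightarrow> 'o \<Rightarrow> 'o \<Rightarrow> 'm \<Rightarrow> 'p \<Rightarrow> 'p" where
  "Theta_act sM Hom sP \<pi> x y f p = cact sM Hom sP \<pi> (evf x y f) p"

definition module_mor :: "('o \<Rightarrow> 'o \<Rightarrow> 'm set)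
   \<Rightarrow> ('k \<Rightarrow> 'p::ab_group_add \<Rightarrow> 'p) \<Rightarrow> ('o \<Rightarrow> 'p set) \<Rightarrow> ('o \<Rightarrow> 'o \<Rightarrow> 'm \<Rightarrow> 'p \<Rightarrow> 'p)
   \<Rightarrow> ('k \<Rightarrow> 'q::ab_group_add \<Rightarrow> 'q) \<Rightarrow> ('o \<Rightarrow> 'q set) \<Rightarrow> ('o \<Rightarrow> 'o \<Rightarrow> 'm \<Rightarrow> 'q \<Rightarrow> 'q)
   \<Rightarrow> ('o \<Rightarrow> 'p \<Rightarrow> 'q) \<Rightarrow> bool" where
  "module_mor Hom sP P actP sQ Q actQ t \<longleftrightarrow>
     (\<forall>x. \<forall>p\<in>P x. t x p \<in> Q x) \<and>
     (\<forall>x. \<forall>p\<in>P x. \<forall>p'\<in>P x. t x (p + p') = t x p + t x p') \<and>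
     (\<forall>x a. \<forall>p\<in>P x. t x (sP a p) = sQ a (t x p)) \<and>
     (\<forall>x y f. \<forall>p\<in>P x. f \<in> Hom x y \<longrightarrow> t y (actP x y f p) = actQ x y f (t x p))"

end

theory Submission
  imports Defs
begin

locale kcat =
  fixes sM :: "'k::field \<Rightarrow> 'm::ab_group_add \<Rightarrow> 'm" and Hom :: "'o \<Rightarrow> 'o \<Rightarrow> 'm set"
    and cmp :: "'o \<Rightarrow> 'o \<Rightarrow> 'o \<Rightarrow> 'm \<Rightarrow> 'm \<Rightarrow> 'm" and idm :: "'o \<Rightarrow> 'm"
  assumes kc: "klin_cat sM Hom cmp idm" and lf: "locally_finite sM Hom"
begin

lemmas kc1 = kc[unfolded klin_cat_def, THEN conjunct1]
lemmas kc2 = kc[unfolded klin_cat_def, THEN conjunct2, THEN conjunct1]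
lemmas kc3 = kc[unfolded klin_cat_def, THEN conjunct2, THEN conjunct2, THEN conjunct1]
lemmas kc4 = kc[unfolded klin_cat_def, THEN conjunct2, THEN conjunct2, THEN conjunct2, THEN conjunct1]
lemmas kc5 = kc[unfolded klin_cat_def, THEN conjunct2, THEN conjunct2, THEN conjunct2, THEN conjunct2, THEN conjunct1]
lemmas kc6 = kc[unfolded klin_cat_def, THEN conjunct2, THEN conjunct2, THEN conjunct2, THEN conjunct2, THEN conjunct2, THEN conjunct1]
lemmas kc7 = kc[unfolded klin_cat_def, THEN conjunct2, THEN conjunct2, THEN conjunct2, THEN conjunct2, THEN conjunct2, THEN conjunct2, THEN conjunct1]
lemmas kc8 = kc[unfolded klin_cat_def, THEN conjunct2, THEN conjunct2, THEN conjunct2, THEN conjunct2, THEN conjunct2, THEN conjunct2, THEN conjunct2, THEN conjunct1]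
lemmas kc9 = kc[unfolded klin_cat_def, THEN conjunct2, THEN conjunct2, THEN conjunct2, THEN conjunct2, THEN conjunct2, THEN conjunct2, THEN conjunct2, THEN conjunct2]

sublocale M: vector_space sM by (rule kc1)

lemma Hom_sub: "M.subspace (Hom x y)" using kc2 by blast
lemma Hom_0: "0 \<in> Hom x y" using Hom_sub M.subspace_0 by blast
lemma Hom_add: "u \<in> Hom x y \<Longrightarrow> v \<in> Hom x y \<Longrightarrow> u + v \<in> Hom x y" using Hom_sub M.subspace_add by blast
lemma Hom_scale: "u \<in> Hom x y \<Longrightarrow> sM a u \<in> Hom x y" using Hom_sub M.subspace_scale by blast
lemma Hom_sum: "(\<And>s. s \<in> S \<Longrightarrow> u s \<in> Hom x y) \<Longrightarrow> (\<Sum>s\<in>S. u s) \<in> Hom x y"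
  using Hom_sub M.subspace_sum by blast
lemma cmp_Hom: "g \<in> Hom x y \<Longrightarrow> h \<in> Hom y z \<Longrightarrow> cmp x y z h g \<in> Hom x z"
  using kc3 by blast
lemma cmp_add_r: "g \<in> Hom x y \<Longrightarrow> g' \<in> Hom x y \<Longrightarrow> h \<in> Hom y z \<Longrightarrow>
         cmp x y z h (g + g') = cmp x y z h g + cmp x y z h g'"
  using kc4 by blast
lemma cmp_add_l: "g \<in> Hom x y \<Longrightarrow> h \<in> Hom y z \<Longrightarrow> h' \<in> Hom y z \<Longrightarrow>
         cmp x y z (h + h') g = cmp x y z h g + cmp x y z h' g"
  using kc5 by blast
lemma cmp_scale_r: "g \<in> Hom x y \<Longrightarrow> h \<in> Hom y z \<Longrightarrow> cmp x y z h (sM a g) = sM a (cmp x y z h g)"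
  using kc6 by blast
lemma cmp_scale_l: "g \<in> Hom x y \<Longrightarrow> h \<in> Hom y z \<Longrightarrow> cmp x y z (sM a h) g = sM a (cmp x y z h g)"
  using kc6 by blast
lemma cmp_assoc: "g \<in> Hom w x \<Longrightarrow> h \<in> Hom x y \<Longrightarrow> l \<in> Hom y z \<Longrightarrow>
         cmp w y z l (cmp w x y h g) = cmp w x z (cmp x y z l h) g"
  using kc7 by blast
lemma idm_Hom: "idm x \<in> Hom x x" using kc8 by blast
lemma idm_nz: "idm x \<noteq> 0" using kc8 by blast
lemma cmp_id_r: "g \<in> Hom x y \<Longrightarrow> cmp x x y g (idm x) = g" using kc9 by blast
lemma cmp_id_l: "g \<in> Hom x y \<Longrightarrow> cmp x y y (idm y) g = g" using kc9 by blast

lemma cmp_0_r: assumes "h \<in> Hom y z" shows "cmp x y z h 0 = 0"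
proof -
  have "cmp x y z h 0 = cmp x y z h (sM 0 0)" by simp
  also have "\<dots> = sM 0 (cmp x y z h 0)" by (rule cmp_scale_r[OF Hom_0 assms])
  finally show ?thesis by simp
qed
lemma cmp_0_l: assumes "g \<in> Hom x y" shows "cmp x y z 0 g = 0"
proof -
  have "cmp x y z 0 g = cmp x y z (sM 0 0) g" by simp
  also have "\<dots> = sM 0 (cmp x y z 0 g)" by (rule cmp_scale_l[OF assms Hom_0])
  finally show ?thesis by simp
qed

lemma cmp_sum_r: "(\<And>s. s \<in> S \<Longrightarrow> g s \<in> Hom x y) \<Longrightarrow> h \<in> Hom y z \<Longrightarrow>
   cmp x y z h (\<Sum>s\<in>S. g s) = (\<Sum>s\<in>S. cmp x y z h (g s))"
proof (induction S rule: infinite_finite_induct)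
  case (infinite A) then show ?case by (simp add: cmp_0_r)
next
  case empty then show ?case by (simp add: cmp_0_r)
next
  case (insert s F)
  then show ?case by (simp add: cmp_add_r Hom_sum)
qed

lemma cmp_sum_l: "(\<And>s. s \<in> S \<Longrightarrow> h s \<in> Hom y z) \<Longrightarrow> g \<in> Hom x y \<Longrightarrow>
   cmp x y z (\<Sum>s\<in>S. h s) g = (\<Sum>s\<in>S. cmp x y z (h s) g)"
proof (induction S rule: infinite_finite_induct)
  case (infinite A) then show ?case by (simp add: cmp_0_l)
next
  case empty then show ?case by (simp add: cmp_0_l)
next
  case (insert s F)
  then show ?case by (simp add: cmp_add_l Hom_sum)
qed

abbreviation B where "B x y \<equiv> hbasis sM Hom x y"
abbreviation dv where "dv x y b \<equiv> dualvec sM (hbasis sM Hom x y) b"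

lemma hbasis_ex: "\<exists>Bs. Bs \<subseteq> Hom x y \<and> M.independent Bs \<and> M.span Bs = Hom x y"
proof -
  obtain Bs where 1: "Bs \<subseteq> Hom x y" and 2: "M.independent Bs" and 3: "Hom x y \<subseteq> M.span Bs"
    using M.basis_exists[of "Hom x y"] by metis
  have "M.span Bs \<subseteq> Hom x y" by (rule M.span_minimal[OF 1 Hom_sub])
  with 1 2 3 have "Bs \<subseteq> Hom x y \<and> M.independent Bs \<and> M.span Bs = Hom x y" by (simp add: subset_antisym)
  then show ?thesis by (rule exI)
qed

lemma hbasis_all: "B x y \<subseteq> Hom x y \<and> M.independent (B x y) \<and> M.span (B x y) = Hom x y"
  unfolding hbasis_def by (rule someI_ex[OF hbasis_ex])
lemmas hbasis = hbasis_all[THEN conjunct1] hbasis_all[THEN conjunct2, THEN conjunct1] hbasis_all[THEN conjunct2, THEN conjunct2]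

lemma hb_Hom: "b \<in> B x y \<Longrightarrow> b \<in> Hom x y" using hbasis(1) by blast

lemma hbasis_finite: "finite (B x y)"
proof -
  obtain T where T: "finite T" "Hom x y \<subseteq> M.span T" using lf unfolding locally_finite_def by blast
  have sp: "B x y \<subseteq> M.span T" using hbasis(1) T(2) by (rule subset_trans)
  show ?thesis using M.independent_span_bound[OF T(1) hbasis(2)[of x y] sp] by simp
qed

lemma expand: "m \<in> Hom x y \<Longrightarrow> (\<Sum>b\<in>B x y. sM (dv x y b m) b) = m"
  unfolding dualvec_def
  using M.sum_representation_eq[of "B x y" m "B x y"] hbasis hbasis_finite by auto

lemma dv_out: "m \<notin> Hom x y \<Longrightarrow> dv x y b m = 0"
  unfolding dualvec_def M.representation_def using hbasis by auto

lemma dv_add: "u \<in> Hom x y \<Longrightarrow> v \<in> Hom x y \<Longrightarrow> dv x y b (u + v) = dv x y b u + dv x y b v"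
  unfolding dualvec_def using M.representation_add[of "B x y" v u] hbasis by auto

lemma dv_scale: "v \<in> Hom x y \<Longrightarrow> dv x y b (sM a v) = a * dv x y b v"
  unfolding dualvec_def using M.representation_scale[of "B x y" v a] hbasis by auto

lemma dv_dualsp: "dv x y b \<in> dualsp sM (Hom x y)"
  unfolding dualsp_def mem_Collect_eq
  by (intro conjI ballI allI impI dv_add dv_scale dv_out)


lemma dualsp_add: "\<phi> \<in> dualsp sM (Hom x y) \<Longrightarrow> u \<in> Hom x y \<Longrightarrow> v \<in> Hom x y \<Longrightarrow> \<phi> (u + v) = \<phi> u + \<phi> v"
  unfolding dualsp_def by blast
lemma dualsp_scale: "\<phi> \<in> dualsp sM (Hom x y) \<Longrightarrow> u \<in> Hom x y \<Longrightarrow> \<phi> (sM a u) = a * \<phi> u"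
  unfolding dualsp_def by blast
lemma dualsp_out: "\<phi> \<in> dualsp sM (Hom x y) \<Longrightarrow> u \<notin> Hom x y \<Longrightarrow> \<phi> u = 0"
  unfolding dualsp_def by blast

lemma dualsp_0: assumes "\<phi> \<in> dualsp sM (Hom x y)" shows "\<phi> 0 = 0"
proof -
  have "\<phi> (sM 0 0) = 0 * \<phi> 0" by (rule dualsp_scale[OF assms Hom_0])
  then show ?thesis by simp
qed

lemma dualsp_sum: "\<phi> \<in> dualsp sM (Hom x y) \<Longrightarrow> (\<And>s. s \<in> S \<Longrightarrow> u s \<in> Hom x y) \<Longrightarrow>
   \<phi> (\<Sum>s\<in>S. u s) = (\<Sum>s\<in>S. \<phi> (u s))"
proof (induction S rule: infinite_finite_induct)
  case (infinite A) then show ?case by (simp add: dualsp_0)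
next
  case empty then show ?case by (simp add: dualsp_0)
next
  case (insert s F)
  then show ?case by (simp add: dualsp_add Hom_sum)
qed

lemma dualsp_expand: assumes p: "\<phi> \<in> dualsp sM (Hom x y)"
  shows "\<phi> m = (\<Sum>b\<in>B x y. dv x y b m * \<phi> b)"
proof (cases "m \<in> Hom x y")
  case True
  have "\<phi> m = \<phi> (\<Sum>b\<in>B x y. sM (dv x y b m) b)" using expand[OF True] by simp
  also have "\<dots> = (\<Sum>b\<in>B x y. \<phi> (sM (dv x y b m) b))"
    by (rule dualsp_sum[OF p], rule Hom_scale, erule hb_Hom)
  also have "\<dots> = (\<Sum>b\<in>B x y. dv x y b m * \<phi> b)"
    by (rule sum.cong, rule refl, rule dualsp_scale[OF p], erule hb_Hom)
  finally show ?thesis .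
next
  case False
  then show ?thesis using dv_out dualsp_out[OF p] by simp
qed

lemma bilin: assumes c: "\<phi> \<in> dualsp sM (Hom x y)" and m: "m \<in> Hom z y" and m': "m' \<in> Hom x z"
  shows "(\<Sum>g\<in>B x z. \<Sum>h\<in>B z y. \<phi> (cmp x z y h g) * (dv z y h m * dv x z g m')) = \<phi> (cmp x z y m m')"
proof -
  have e1: "(\<Sum>g\<in>B x z. sM (dv x z g m') g) \<in> Hom x z"
    by (rule Hom_sum, rule Hom_scale, erule hb_Hom)
  have "cmp x z y m m' = cmp x z y (\<Sum>h\<in>B z y. sM (dv z y h m) h) (\<Sum>g\<in>B x z. sM (dv x z g m') g)"
    using expand[OF m] expand[OF m'] by simp
  also have "\<dots> = (\<Sum>h\<in>B z y. cmp x z y (sM (dv z y h m) h) (\<Sum>g\<in>B x z. sM (dv x z g m') g))"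
    by (rule cmp_sum_l[OF _ e1], rule Hom_scale, erule hb_Hom)
  also have "\<dots> = (\<Sum>h\<in>B z y. \<Sum>g\<in>B x z. sM (dv z y h m * dv x z g m') (cmp x z y h g))"
  proof (rule sum.cong[OF refl])
    fix h assume h: "h \<in> B z y"
    have hH: "h \<in> Hom z y" using h by (rule hb_Hom)
    have "cmp x z y (sM (dv z y h m) h) (\<Sum>g\<in>B x z. sM (dv x z g m') g)
       = (\<Sum>g\<in>B x z. cmp x z y (sM (dv z y h m) h) (sM (dv x z g m') g))"
      by (rule cmp_sum_r[OF _ Hom_scale[OF hH]], rule Hom_scale, erule hb_Hom)
    also have "\<dots> = (\<Sum>g\<in>B x z. sM (dv z y h m * dv x z g m') (cmp x z y h g))"
    proof (rule sum.cong[OF refl])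
      fix g assume g: "g \<in> B x z"
      have gH: "g \<in> Hom x z" using g by (rule hb_Hom)
      show "cmp x z y (sM (dv z y h m) h) (sM (dv x z g m') g) = sM (dv z y h m * dv x z g m') (cmp x z y h g)"
        using cmp_scale_l[OF Hom_scale[OF gH] hH] cmp_scale_r[OF gH hH] by (simp add: mult.commute)
    qed
    finally show "cmp x z y (sM (dv z y h m) h) (\<Sum>g\<in>B x z. sM (dv x z g m') g)
       = (\<Sum>g\<in>B x z. sM (dv z y h m * dv x z g m') (cmp x z y h g))" .
  qed
  finally have e: "cmp x z y m m' = (\<Sum>h\<in>B z y. \<Sum>g\<in>B x z. sM (dv z y h m * dv x z g m') (cmp x z y h g))" .
  have cH: "\<And>h g. h \<in> B z y \<Longrightarrow> g \<in> B x z \<Longrightarrow> cmp x z y h g \<in> Hom x y"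
    by (rule cmp_Hom, erule hb_Hom, erule hb_Hom)
  have "\<phi> (cmp x z y m m') = (\<Sum>h\<in>B z y. \<phi> (\<Sum>g\<in>B x z. sM (dv z y h m * dv x z g m') (cmp x z y h g)))"
    unfolding e by (rule dualsp_sum[OF c], rule Hom_sum, rule Hom_scale, rule cH)
  also have "\<dots> = (\<Sum>h\<in>B z y. \<Sum>g\<in>B x z. \<phi> (sM (dv z y h m * dv x z g m') (cmp x z y h g)))"
    by (rule sum.cong[OF refl], rule dualsp_sum[OF c], rule Hom_scale, rule cH)
  also have "\<dots> = (\<Sum>h\<in>B z y. \<Sum>g\<in>B x z. \<phi> (cmp x z y h g) * (dv z y h m * dv x z g m'))"
    by (rule sum.cong[OF refl], rule sum.cong[OF refl], subst dualsp_scale[OF c], rule cH, simp_all add: mult.commute)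
  also have "\<dots> = (\<Sum>g\<in>B x z. \<Sum>h\<in>B z y. \<phi> (cmp x z y h g) * (dv z y h m * dv x z g m'))"
    by (rule sum.swap)
  finally show ?thesis by simp
qed

end

context kcat begin

lemma Cset_dualsp: "c \<in> Cset sM Hom \<Longrightarrow> c x y \<in> dualsp sM (Hom x y)"
  unfolding Cset_def by blast
lemma Cset_fin: "c \<in> Cset sM Hom \<Longrightarrow> finite (csupp c)"
  unfolding Cset_def by blast
lemma csupp_out: "(x, y) \<notin> csupp c \<Longrightarrow> c x y v = 0"
  unfolding csupp_def by auto
lemma CsetI: "(\<And>x y. c x y \<in> dualsp sM (Hom x y)) \<Longrightarrow> finite (csupp c) \<Longrightarrow> c \<in> Cset sM Hom"
  unfolding Cset_def by blast

lemma dualsp_addf: "\<phi> \<in> dualsp sM V \<Longrightarrow> \<psi> \<in> dualsp sM V \<Longrightarrow> (\<lambda>v. \<phi> v + \<psi> v) \<in> dualsp sM V"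
  unfolding dualsp_def by (simp add: algebra_simps)
lemma dualsp_scalef: "\<phi> \<in> dualsp sM V \<Longrightarrow> (\<lambda>v. a * \<phi> v) \<in> dualsp sM V"
  unfolding dualsp_def by (simp add: algebra_simps)
lemma dualsp_zerof: "(\<lambda>v. 0) \<in> dualsp sM V"
  unfolding dualsp_def by simp

lemma csupp_cadd: "csupp (cadd c d) \<subseteq> csupp c \<union> csupp d"
  unfolding csupp_def cadd_def by (auto simp: fun_eq_iff)
lemma csupp_cscale: "csupp (cscale a c) \<subseteq> csupp c"
  unfolding csupp_def cscale_def by (auto simp: fun_eq_iff)
lemma csupp_cdelta: "csupp (cdelta x y \<phi>) \<subseteq> {(x, y)}"
  unfolding csupp_def cdelta_def by (auto simp: fun_eq_iff)

lemma cadd_Cset: "c \<in> Cset sM Hom \<Longrightarrow> d \<in> Cset sM Hom \<Longrightarrow> cadd c d \<in> Cset sM Hom"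
proof (rule CsetI)
  fix x y assume "c \<in> Cset sM Hom" "d \<in> Cset sM Hom"
  then show "cadd c d x y \<in> dualsp sM (Hom x y)"
    unfolding cadd_def by (intro dualsp_addf Cset_dualsp)
next
  assume "c \<in> Cset sM Hom" "d \<in> Cset sM Hom"
  then show "finite (csupp (cadd c d))"
    using csupp_cadd Cset_fin by (meson finite_UnI finite_subset)
qed

lemma cscale_Cset: "c \<in> Cset sM Hom \<Longrightarrow> cscale a c \<in> Cset sM Hom"
proof (rule CsetI)
  fix x y assume "c \<in> Cset sM Hom"
  then show "cscale a c x y \<in> dualsp sM (Hom x y)"
    unfolding cscale_def by (intro dualsp_scalef Cset_dualsp)
next
  assume "c \<in> Cset sM Hom"
  then show "finite (csupp (cscale a c))"
    using csupp_cscale Cset_fin by (meson finite_subset)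
qed

lemma cdelta_Cset: "\<phi> \<in> dualsp sM (Hom x y) \<Longrightarrow> cdelta x y \<phi> \<in> Cset sM Hom"
proof (rule CsetI)
  fix x' y' assume "\<phi> \<in> dualsp sM (Hom x y)"
  then show "cdelta x y \<phi> x' y' \<in> dualsp sM (Hom x' y')"
    unfolding cdelta_def using dualsp_zerof by auto
next
  show "finite (csupp (cdelta x y \<phi>))"
    using csupp_cdelta by (meson finite.emptyI finite_insert finite_subset)
qed

lemma vsm: "vector_space s \<Longrightarrow> module s" by (simp add: module_iff_vector_space)

lemma csupp_out_sP: "vector_space sP \<Longrightarrow> (x, y) \<notin> csupp c \<Longrightarrow> sP (c x y v) p = 0"
  using csupp_out module.scale_zero_left[OF vsm] by metis
lemma csupp_nz: "vector_space sP \<Longrightarrow> sP (c x y v) p \<noteq> 0 \<Longrightarrow> (x, y) \<in> csupp c"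
  using csupp_out_sP by metis

definition fam :: "('k \<Rightarrow> 'p::ab_group_add \<Rightarrow> 'p) \<Rightarrow> 'i set \<Rightarrow> ('i \<Rightarrow> 'o) \<Rightarrow> ('i \<Rightarrow> 'o) \<Rightarrow> ('i \<Rightarrow> 'm)
   \<Rightarrow> ('i \<Rightarrow> 'p) \<Rightarrow> ('o \<Rightarrow> 'o \<Rightarrow> 'm \<Rightarrow> 'k) \<Rightarrow> 'p" where
  "fam sP I src tgt mor val c = (if c \<in> Cset sM Hom then
      (\<Sum>i\<in>{i\<in>I. (src i, tgt i) \<in> csupp c}. sP (c (src i) (tgt i) (mor i)) (val i)) else 0)"

definition famok :: "'i set \<Rightarrow> ('i \<Rightarrow> 'o) \<Rightarrow> ('i \<Rightarrow> 'o) \<Rightarrow> ('i \<Rightarrow> 'm) \<Rightarrow> bool" where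
  "famok I src tgt mor \<longleftrightarrow> (\<forall>i\<in>I. mor i \<in> Hom (src i) (tgt i)) \<and> (\<forall>a b. finite {i\<in>I. src i = a \<and> tgt i = b})"

lemma famok_Hom: "famok I src tgt mor \<Longrightarrow> i \<in> I \<Longrightarrow> mor i \<in> Hom (src i) (tgt i)"
  unfolding famok_def by blast

lemma famok_fin1: "famok I src tgt mor \<Longrightarrow> finite {i\<in>I. src i = a \<and> tgt i = b}"
  unfolding famok_def by blast

lemma famok_fin: assumes "famok I src tgt mor" "finite S"
  shows "finite {i\<in>I. (src i, tgt i) \<in> S}"
proof -
  have "{i\<in>I. (src i, tgt i) \<in> S} = (\<Union>(a, b)\<in>S. {i\<in>I. src i = a \<and> tgt i = b})" by auto
  then show ?thesis using assms famok_fin1 by auto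
qed

lemma famokI: "(\<And>i. i \<in> I \<Longrightarrow> mor i \<in> Hom (src i) (tgt i)) \<Longrightarrow> (\<And>a b. finite {i\<in>I. src i = a \<and> tgt i = b})
  \<Longrightarrow> famok I src tgt mor"
  unfolding famok_def by blast

lemma famok_subset: assumes ok: "famok I src tgt mor" and J: "J \<subseteq> I" shows "famok J src tgt mor"
proof (rule famokI)
  fix i assume "i \<in> J"
  then have "i \<in> I" using J by (rule subsetD[rotated])
  then show "mor i \<in> Hom (src i) (tgt i)" by (rule famok_Hom[OF ok])
next
  fix a b
  have "{i\<in>J. src i = a \<and> tgt i = b} \<subseteq> {i\<in>I. src i = a \<and> tgt i = b}" using J by auto
  then show "finite {i\<in>J. src i = a \<and> tgt i = b}"
    by (rule finite_subset) (rule famok_fin1[OF ok])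
qed

lemma fam_sup:
  assumes vs: "vector_space sP" and ok: "famok I src tgt mor" and c: "c \<in> Cset sM Hom"
    and S: "finite S" "csupp c \<subseteq> S"
  shows "fam sP I src tgt mor val c = (\<Sum>i\<in>{i\<in>I. (src i, tgt i) \<in> S}. sP (c (src i) (tgt i) (mor i)) (val i))"
proof -
  have "fam sP I src tgt mor val c = (\<Sum>i\<in>{i\<in>I. (src i, tgt i) \<in> csupp c}. sP (c (src i) (tgt i) (mor i)) (val i))"
    using c unfolding fam_def by simp
  also have "\<dots> = (\<Sum>i\<in>{i\<in>I. (src i, tgt i) \<in> S}. sP (c (src i) (tgt i) (mor i)) (val i))"
  proof (rule sum.mono_neutral_left)
    show "finite {i\<in>I. (src i, tgt i) \<in> S}" by (rule famok_fin[OF ok S(1)])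
    show "{i\<in>I. (src i, tgt i) \<in> csupp c} \<subseteq> {i\<in>I. (src i, tgt i) \<in> S}" using S(2) by auto
    show "\<forall>i\<in>{i\<in>I. (src i, tgt i) \<in> S} - {i\<in>I. (src i, tgt i) \<in> csupp c}. sP (c (src i) (tgt i) (mor i)) (val i) = 0"
    proof
      fix i assume "i \<in> {i\<in>I. (src i, tgt i) \<in> S} - {i\<in>I. (src i, tgt i) \<in> csupp c}"
      then have "(src i, tgt i) \<notin> csupp c" by blast
      then show "sP (c (src i) (tgt i) (mor i)) (val i) = 0"
        using csupp_out module.scale_zero_left[OF vsm[OF vs]] by metis
    qed
  qed
  finally show ?thesis .
qed

lemma fam_out: "c \<notin> Cset sM Hom \<Longrightarrow> fam sP I src tgt mor val c = 0"
  unfolding fam_def by simp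

lemma fam_homC:
  assumes vs: "vector_space sP" and ok: "famok I src tgt mor"
  shows "fam sP I src tgt mor val \<in> homC sM Hom sP"
  unfolding homC_def mem_Collect_eq
proof (intro conjI ballI allI impI)
  fix c d assume c: "c \<in> Cset sM Hom" and d: "d \<in> Cset sM Hom"
  let ?S = "csupp c \<union> csupp d"
  have S: "finite ?S" using c d Cset_fin by auto
  have cd: "cadd c d \<in> Cset sM Hom" by (rule cadd_Cset[OF c d])
  have "fam sP I src tgt mor val (cadd c d) = (\<Sum>i\<in>{i\<in>I. (src i, tgt i) \<in> ?S}. sP (cadd c d (src i) (tgt i) (mor i)) (val i))"
    by (rule fam_sup[OF vs ok cd S csupp_cadd])
  also have "\<dots> = (\<Sum>i\<in>{i\<in>I. (src i, tgt i) \<in> ?S}. sP (c (src i) (tgt i) (mor i)) (val i) + sP (d (src i) (tgt i) (mor i)) (val i))"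
    unfolding cadd_def by (simp add: module.scale_left_distrib[OF vsm[OF vs]])
  also have "\<dots> = fam sP I src tgt mor val c + fam sP I src tgt mor val d"
    by (simp add: sum.distrib fam_sup[OF vs ok c S] fam_sup[OF vs ok d S])
  finally show "fam sP I src tgt mor val (cadd c d) = fam sP I src tgt mor val c + fam sP I src tgt mor val d" .
next
  fix a c assume c: "c \<in> Cset sM Hom"
  have S: "finite (csupp c)" using c Cset_fin by auto
  have ac: "cscale a c \<in> Cset sM Hom" by (rule cscale_Cset[OF c])
  have "fam sP I src tgt mor val (cscale a c) = (\<Sum>i\<in>{i\<in>I. (src i, tgt i) \<in> csupp c}. sP (cscale a c (src i) (tgt i) (mor i)) (val i))"
    by (rule fam_sup[OF vs ok ac S csupp_cscale])
  also have "\<dots> = sP a (fam sP I src tgt mor val c)"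
    unfolding cscale_def
    by (simp add: fam_sup[OF vs ok c S order_refl] module.scale_sum_right[OF vsm[OF vs]] module.scale_scale[OF vsm[OF vs]])
  finally show "fam sP I src tgt mor val (cscale a c) = sP a (fam sP I src tgt mor val c)" .
next
  fix c assume "c \<notin> Cset sM Hom"
  then show "fam sP I src tgt mor val c = 0" by (rule fam_out)
qed

lemma fam_add_val: assumes vs: "vector_space sP"
  shows "fam sP I src tgt mor (\<lambda>i. val i + val' i) = (\<lambda>c. fam sP I src tgt mor val c + fam sP I src tgt mor val' c)"
  unfolding fam_def by (auto simp: fun_eq_iff sum.distrib module.scale_right_distrib[OF vsm[OF vs]])

lemma fam_scale_val: assumes vs: "vector_space sP"
  shows "fam sP I src tgt mor (\<lambda>i. sP a (val i)) = (\<lambda>c. sP a (fam sP I src tgt mor val c))"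
  unfolding fam_def by (auto simp: fun_eq_iff module.scale_sum_right[OF vsm[OF vs]] module.scale_scale[OF vsm[OF vs]] mult.commute module.scale_zero_right[OF vsm[OF vs]])

lemma fam_zero_val: assumes vs: "vector_space sP"
  shows "fam sP I src tgt mor (\<lambda>i. 0) = (\<lambda>c. 0)"
  unfolding fam_def by (auto simp: fun_eq_iff module.scale_zero_right[OF vsm[OF vs]])

lemma fam_diff_val: assumes vs: "vector_space sP"
  shows "fam sP I src tgt mor (\<lambda>i. val i - val' i) = (\<lambda>c. fam sP I src tgt mor val c - fam sP I src tgt mor val' c)"
  unfolding fam_def by (auto simp: fun_eq_iff sum_subtractf module.scale_right_diff_distrib[OF vsm[OF vs]])

lemma fam_cong: "I = I' \<Longrightarrow> (\<And>i. i \<in> I \<Longrightarrow> src i = src' i \<and> tgt i = tgt' i \<and> mor i = mor' i \<and> val i = val' i)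
   \<Longrightarrow> fam sP I src tgt mor val = fam sP I' src' tgt' mor' val'"
  unfolding fam_def fun_eq_iff
  apply (intro allI)
  apply (subgoal_tac "{i \<in> I. (src i, tgt i) \<in> csupp x} = {i \<in> I'. (src' i, tgt' i) \<in> csupp x}")
   apply (auto intro!: sum.cong)
  done

lemma fam_union: assumes vs: "vector_space sP" and ok: "famok (I1 \<union> I2) src tgt mor" and dis: "I1 \<inter> I2 = {}"
  shows "fam sP (I1 \<union> I2) src tgt mor val = (\<lambda>c. fam sP I1 src tgt mor val c + fam sP I2 src tgt mor val c)"
proof
  fix c show "fam sP (I1 \<union> I2) src tgt mor val c = fam sP I1 src tgt mor val c + fam sP I2 src tgt mor val c"
  proof (cases "c \<in> Cset sM Hom")
    case True
    have f1: "finite {i\<in>I1 \<union> I2. (src i, tgt i) \<in> csupp c}" using famok_fin[OF ok Cset_fin[OF True]] .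
    have e: "{i\<in>I1 \<union> I2. (src i, tgt i) \<in> csupp c} = {i\<in>I1. (src i, tgt i) \<in> csupp c} \<union> {i\<in>I2. (src i, tgt i) \<in> csupp c}" by auto
    have "(\<Sum>i\<in>{i\<in>I1 \<union> I2. (src i, tgt i) \<in> csupp c}. sP (c (src i) (tgt i) (mor i)) (val i))
       = (\<Sum>i\<in>{i\<in>I1. (src i, tgt i) \<in> csupp c}. sP (c (src i) (tgt i) (mor i)) (val i))
        + (\<Sum>i\<in>{i\<in>I2. (src i, tgt i) \<in> csupp c}. sP (c (src i) (tgt i) (mor i)) (val i))"
      unfolding e by (rule sum.union_disjoint) (use f1 e dis in auto)
    then show ?thesis unfolding fam_def using True by simp
  next
    case False then show ?thesis unfolding fam_def by simp
  qed
qed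

lemma fam_nz: assumes vs: "vector_space sP" and ok: "famok I src tgt mor"
  shows "fam sP I src tgt mor val = fam sP {i\<in>I. mor i \<noteq> 0} src tgt mor val"
proof
  fix c show "fam sP I src tgt mor val c = fam sP {i\<in>I. mor i \<noteq> 0} src tgt mor val c"
  proof (cases "c \<in> Cset sM Hom")
    case True
    show ?thesis unfolding fam_def if_P[OF True]
    proof (rule sum.mono_neutral_right)
      show "finite {i \<in> I. (src i, tgt i) \<in> csupp c}" using famok_fin[OF ok Cset_fin[OF True]] .
      show "{i \<in> {i \<in> I. mor i \<noteq> 0}. (src i, tgt i) \<in> csupp c} \<subseteq> {i \<in> I. (src i, tgt i) \<in> csupp c}" by auto
      show "\<forall>i\<in>{i \<in> I. (src i, tgt i) \<in> csupp c} - {i \<in> {i \<in> I. mor i \<noteq> 0}. (src i, tgt i) \<in> csupp c}.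
        sP (c (src i) (tgt i) (mor i)) (val i) = 0"
      proof
        fix i assume "i \<in> {i \<in> I. (src i, tgt i) \<in> csupp c} - {i \<in> {i \<in> I. mor i \<noteq> 0}. (src i, tgt i) \<in> csupp c}"
        then have "mor i = 0" by blast
        then show "sP (c (src i) (tgt i) (mor i)) (val i) = 0"
          using dualsp_0[OF Cset_dualsp[OF True]] module.scale_zero_left[OF vsm[OF vs]] by simp
      qed
    qed
  next
    case False then show ?thesis unfolding fam_def by simp
  qed
qed

lemma fam_val0: assumes vs: "vector_space sP" and ok: "famok I src tgt mor" and J: "J \<subseteq> I"
  and z: "\<And>i. i \<in> I - J \<Longrightarrow> val i = 0"
  shows "fam sP I src tgt mor val = fam sP J src tgt mor val"
proof
  fix c show "fam sP I src tgt mor val c = fam sP J src tgt mor val c"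
  proof (cases "c \<in> Cset sM Hom")
    case True
    show ?thesis unfolding fam_def if_P[OF True]
    proof (rule sum.mono_neutral_right)
      show "finite {i \<in> I. (src i, tgt i) \<in> csupp c}" using famok_fin[OF ok Cset_fin[OF True]] .
      show "{i \<in> J. (src i, tgt i) \<in> csupp c} \<subseteq> {i \<in> I. (src i, tgt i) \<in> csupp c}" using J by auto
      show "\<forall>i\<in>{i \<in> I. (src i, tgt i) \<in> csupp c} - {i \<in> J. (src i, tgt i) \<in> csupp c}.
        sP (c (src i) (tgt i) (mor i)) (val i) = 0"
      proof
        fix i assume "i \<in> {i \<in> I. (src i, tgt i) \<in> csupp c} - {i \<in> J. (src i, tgt i) \<in> csupp c}"
        then have "val i = 0" using z by blast
        then show "sP (c (src i) (tgt i) (mor i)) (val i) = 0"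
          using module.scale_zero_right[OF vsm[OF vs]] by simp
      qed
    qed
  next
    case False then show ?thesis unfolding fam_def by simp
  qed
qed

lemma fam_reindex: assumes inj: "inj_on h K"
  shows "fam sP (h ` K) src tgt mor val = fam sP K (src \<circ> h) (tgt \<circ> h) (mor \<circ> h) (val \<circ> h)"
proof
  fix c show "fam sP (h ` K) src tgt mor val c = fam sP K (src \<circ> h) (tgt \<circ> h) (mor \<circ> h) (val \<circ> h) c"
  proof (cases "c \<in> Cset sM Hom")
    case True
    have e: "{i \<in> h ` K. (src i, tgt i) \<in> csupp c} = h ` {k \<in> K. (src (h k), tgt (h k)) \<in> csupp c}" by auto
    have inj2: "inj_on h {k \<in> K. (src (h k), tgt (h k)) \<in> csupp c}" using inj by (rule inj_on_subset) auto
    show ?thesis unfolding fam_def using True e by (simp add: sum.reindex[OF inj2])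
  next
    case False then show ?thesis unfolding fam_def by simp
  qed
qed

lemma fam_finite: assumes vs: "vector_space sP" and fin: "finite I"
  shows "fam sP I src tgt mor val = (\<lambda>c. \<Sum>i\<in>I. fam sP {i} src tgt mor val c)"
proof
  fix c show "fam sP I src tgt mor val c = (\<Sum>i\<in>I. fam sP {i} src tgt mor val c)"
  proof (cases "c \<in> Cset sM Hom")
    case True
    have "fam sP I src tgt mor val c = (\<Sum>i\<in>{i \<in> I. (src i, tgt i) \<in> csupp c}. sP (c (src i) (tgt i) (mor i)) (val i))"
      unfolding fam_def using True by simp
    also have "\<dots> = (\<Sum>i\<in>I. sP (c (src i) (tgt i) (mor i)) (val i))"
      using fin csupp_nz[OF vs] by (intro sum.mono_neutral_left) auto
    also have "\<dots> = (\<Sum>i\<in>I. fam sP {i} src tgt mor val c)"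
      unfolding fam_def using True csupp_out_sP[OF vs]
      by (intro sum.cong refl) (auto simp: Collect_conv_if)
    finally show ?thesis .
  next
    case False then show ?thesis unfolding fam_def by simp
  qed
qed

lemma fam_single: assumes vs: "vector_space sP"
  shows "fam sP {i} src tgt mor val = (\<lambda>c. if c \<in> Cset sM Hom then sP (c (src i) (tgt i) (mor i)) (val i) else 0)"
  unfolding fam_def using csupp_out_sP[OF vs] by (auto simp: fun_eq_iff Collect_conv_if)

lemma famok_single: "mor i \<in> Hom (src i) (tgt i) \<Longrightarrow> famok {i} src tgt mor"
  by (rule famokI) auto

end

locale kcontra = kcat sM Hom cmp idm
  for sM :: "'k::field \<Rightarrow> 'm::ab_group_add \<Rightarrow> 'm" and Hom :: "'o \<Rightarrow> 'o \<Rightarrow> 'm set"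
    and cmp :: "'o \<Rightarrow> 'o \<Rightarrow> 'o \<Rightarrow> 'm \<Rightarrow> 'm \<Rightarrow> 'm" and idm :: "'o \<Rightarrow> 'm" +
  fixes sP :: "'k \<Rightarrow> 'p::ab_group_add \<Rightarrow> 'p" and \<pi> :: "(('o \<Rightarrow> 'o \<Rightarrow> 'm \<Rightarrow> 'k) \<Rightarrow> 'p) \<Rightarrow> 'p"
  assumes cm: "contramodule sM Hom cmp idm sP \<pi>"
begin

lemmas cm1 = cm[unfolded contramodule_def, THEN conjunct1]
lemmas cm2 = cm[unfolded contramodule_def, THEN conjunct2, THEN conjunct1]
lemmas cm3 = cm[unfolded contramodule_def, THEN conjunct2, THEN conjunct2, THEN conjunct1]
lemmas cm4 = cm[unfolded contramodule_def, THEN conjunct2, THEN conjunct2, THEN conjunct2, THEN conjunct1]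
lemmas cm5 = cm[unfolded contramodule_def, THEN conjunct2, THEN conjunct2, THEN conjunct2, THEN conjunct2]

sublocale P: vector_space sP by (rule cm1)

lemma pi_add: "f \<in> homC sM Hom sP \<Longrightarrow> g \<in> homC sM Hom sP \<Longrightarrow> \<pi> (\<lambda>c. f c + g c) = \<pi> f + \<pi> g"
  using cm2 by blast
lemma pi_scale: "f \<in> homC sM Hom sP \<Longrightarrow> \<pi> (\<lambda>c. sP a (f c)) = sP a (\<pi> f)"
  using cm3 by blast
lemma pi_unit: "\<pi> (\<lambda>c. if c \<in> Cset sM Hom then sP (counit idm c) p else 0) = p"
  using cm4 by blast
lemma pi_assoc: "F \<in> homCC sM Hom sP \<Longrightarrow>
        \<pi> (\<lambda>c. if c \<in> Cset sM Hom then \<pi> (F c) else 0) = \<pi> (comult_comp sM Hom cmp sP F)"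
  using cm5 by blast

lemma homC_add: "f \<in> homC sM Hom sP \<Longrightarrow> g \<in> homC sM Hom sP \<Longrightarrow> (\<lambda>c. f c + g c) \<in> homC sM Hom sP"
  unfolding homC_def by (auto simp: P.scale_right_distrib)
lemma homC_scale: "f \<in> homC sM Hom sP \<Longrightarrow> (\<lambda>c. sP a (f c)) \<in> homC sM Hom sP"
  unfolding homC_def by (auto simp: P.scale_right_distrib mult.commute)
lemma homC_zero: "(\<lambda>c. 0) \<in> homC sM Hom sP"
  unfolding homC_def by auto
lemma homC_diff: "f \<in> homC sM Hom sP \<Longrightarrow> g \<in> homC sM Hom sP \<Longrightarrow> (\<lambda>c. f c - g c) \<in> homC sM Hom sP"
  unfolding homC_def by (auto simp: P.scale_right_diff_distrib)
lemma pi_zero: "\<pi> (\<lambda>c. 0) = 0"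
  using pi_add[OF homC_zero homC_zero] by simp
lemma pi_diff: "f \<in> homC sM Hom sP \<Longrightarrow> g \<in> homC sM Hom sP \<Longrightarrow> \<pi> (\<lambda>c. f c - g c) = \<pi> f - \<pi> g"
proof -
  assume f: "f \<in> homC sM Hom sP" and g: "g \<in> homC sM Hom sP"
  have "\<pi> f = \<pi> (\<lambda>c. (f c - g c) + g c)" by simp
  also have "\<dots> = \<pi> (\<lambda>c. f c - g c) + \<pi> g" by (rule pi_add[OF homC_diff[OF f g] g])
  finally show ?thesis by simp
qed

lemma homC_sum: "finite S \<Longrightarrow> (\<And>s. s \<in> S \<Longrightarrow> f s \<in> homC sM Hom sP) \<Longrightarrow> (\<lambda>c. \<Sum>s\<in>S. f s c) \<in> homC sM Hom sP"
proof (induction S rule: finite_induct)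
  case empty then show ?case using homC_zero by simp
next
  case (insert s F) then show ?case by (simp add: homC_add)
qed

lemma pi_sum: "finite S \<Longrightarrow> (\<And>s. s \<in> S \<Longrightarrow> f s \<in> homC sM Hom sP) \<Longrightarrow> \<pi> (\<lambda>c. \<Sum>s\<in>S. f s c) = (\<Sum>s\<in>S. \<pi> (f s))"
proof (induction S rule: finite_induct)
  case empty then show ?case using pi_zero by simp
next
  case (insert s F)
  have "\<pi> (\<lambda>c. \<Sum>s\<in>insert s F. f s c) = \<pi> (\<lambda>c. f s c + (\<Sum>s\<in>F. f s c))" using insert by simp
  also have "\<dots> = \<pi> (f s) + \<pi> (\<lambda>c. \<Sum>s\<in>F. f s c)"
    using insert by (intro pi_add homC_sum) auto
  finally show ?case using insert by simp
qed

lemma homC_linear: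
  assumes f: "f \<in> homC sM Hom sP" and c: "c \<in> Cset sM Hom" and d: "d \<in> Cset sM Hom"
  shows "f (cadd c d) = f c + f d"
  using assms unfolding homC_def by blast
lemma homC_scaleC:
  assumes f: "f \<in> homC sM Hom sP" and c: "c \<in> Cset sM Hom"
  shows "f (cscale a c) = sP a (f c)"
  using assms unfolding homC_def by blast
lemma homC_out:
  assumes f: "f \<in> homC sM Hom sP" and c: "c \<notin> Cset sM Hom"
  shows "f c = 0"
  using assms unfolding homC_def by blast

end

context kcat begin
lemma precle_nz: "m \<in> Hom a b \<Longrightarrow> m \<noteq> 0 \<Longrightarrow> precle Hom a b"
  unfolding precle_def hrel_def by (rule r_into_trancl) auto
lemma Z_finite: "finite {z. precle Hom x z \<and> precle Hom z y}"
  using lf unfolding locally_finite_def by blast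
end

context kcontra begin

lemmas vsP = cm1

lemma assoc_inner:
  assumes okI: "famok I src tgt mor" and okJ: "\<And>i. i \<in> I \<Longrightarrow> famok (J i) (srcJ i) (tgtJ i) (morJ i)"
    and c: "c \<in> Cset sM Hom"
  shows "(\<Sum>g\<in>B x z. \<Sum>h\<in>B z y. sP (c x y (cmp x z y h g))
            (fam sP I src tgt mor (\<lambda>i. fam sP (J i) (srcJ i) (tgtJ i) (morJ i) (valJ i) (cdelta x z (dv x z g))) (cdelta z y (dv z y h))))
       = (\<Sum>i\<in>{i\<in>I. src i = z \<and> tgt i = y}. \<Sum>j\<in>{j\<in>J i. srcJ i j = x \<and> tgtJ i j = z}.
            sP (c x y (cmp x z y (mor i) (morJ i j))) (valJ i j))"
proof -
  let ?Iz = "{i\<in>I. src i = z \<and> tgt i = y}"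
  let ?Jx = "\<lambda>i. {j\<in>J i. srcJ i j = x \<and> tgtJ i j = z}"
  have finI: "finite ?Iz" by (rule famok_fin1[OF okI])
  have ev: "fam sP I src tgt mor (\<lambda>i. fam sP (J i) (srcJ i) (tgtJ i) (morJ i) (valJ i) (cdelta x z (dv x z g))) (cdelta z y (dv z y h))
        = (\<Sum>i\<in>?Iz. \<Sum>j\<in>?Jx i. sP (dv z y h (mor i) * dv x z g (morJ i j)) (valJ i j))" for g h
  proof -
    have e1: "{i\<in>I. (src i, tgt i) \<in> {(z, y)}} = ?Iz" by auto
    have "fam sP I src tgt mor (\<lambda>i. fam sP (J i) (srcJ i) (tgtJ i) (morJ i) (valJ i) (cdelta x z (dv x z g))) (cdelta z y (dv z y h))
       = (\<Sum>i\<in>{i\<in>I. (src i, tgt i) \<in> {(z, y)}}. sP (cdelta z y (dv z y h) (src i) (tgt i) (mor i))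
             (fam sP (J i) (srcJ i) (tgtJ i) (morJ i) (valJ i) (cdelta x z (dv x z g))))"
      by (rule fam_sup[OF vsP okI cdelta_Cset[OF dv_dualsp] _ csupp_cdelta]) auto
    also have "\<dots> = (\<Sum>i\<in>?Iz. sP (dv z y h (mor i)) (\<Sum>j\<in>?Jx i. sP (dv x z g (morJ i j)) (valJ i j)))"
      unfolding e1
    proof (rule sum.cong[OF refl])
      fix i assume i: "i \<in> ?Iz"
      have e2: "{j\<in>J i. (srcJ i j, tgtJ i j) \<in> {(x, z)}} = ?Jx i" by auto
      have "fam sP (J i) (srcJ i) (tgtJ i) (morJ i) (valJ i) (cdelta x z (dv x z g))
          = (\<Sum>j\<in>{j\<in>J i. (srcJ i j, tgtJ i j) \<in> {(x, z)}}. sP (cdelta x z (dv x z g) (srcJ i j) (tgtJ i j) (morJ i j)) (valJ i j))"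
        by (rule fam_sup[OF vsP okJ[of i] cdelta_Cset[OF dv_dualsp] _ csupp_cdelta]) (use i in auto)
      also have "\<dots> = (\<Sum>j\<in>?Jx i. sP (dv x z g (morJ i j)) (valJ i j))"
        unfolding e2 by (rule sum.cong[OF refl]) (simp add: cdelta_def)
      finally have "fam sP (J i) (srcJ i) (tgtJ i) (morJ i) (valJ i) (cdelta x z (dv x z g)) = \<dots>" .
      then show "sP (cdelta z y (dv z y h) (src i) (tgt i) (mor i)) (fam sP (J i) (srcJ i) (tgtJ i) (morJ i) (valJ i) (cdelta x z (dv x z g)))
          = sP (dv z y h (mor i)) (\<Sum>j\<in>?Jx i. sP (dv x z g (morJ i j)) (valJ i j))"
        using i by (simp add: cdelta_def)
    qed
    also have "\<dots> = (\<Sum>i\<in>?Iz. \<Sum>j\<in>?Jx i. sP (dv z y h (mor i) * dv x z g (morJ i j)) (valJ i j))"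
      by (simp add: P.scale_sum_right)
    finally show ?thesis .
  qed
  have "(\<Sum>g\<in>B x z. \<Sum>h\<in>B z y. sP (c x y (cmp x z y h g))
            (fam sP I src tgt mor (\<lambda>i. fam sP (J i) (srcJ i) (tgtJ i) (morJ i) (valJ i) (cdelta x z (dv x z g))) (cdelta z y (dv z y h))))
     = (\<Sum>g\<in>B x z. \<Sum>h\<in>B z y. \<Sum>i\<in>?Iz. \<Sum>j\<in>?Jx i. sP (c x y (cmp x z y h g) * (dv z y h (mor i) * dv x z g (morJ i j))) (valJ i j))"
    unfolding ev by (simp add: P.scale_sum_right)
  also have "\<dots> = (\<Sum>g\<in>B x z. \<Sum>i\<in>?Iz. \<Sum>h\<in>B z y. \<Sum>j\<in>?Jx i. sP (c x y (cmp x z y h g) * (dv z y h (mor i) * dv x z g (morJ i j))) (valJ i j))"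
    by (rule sum.cong[OF refl], rule sum.swap)
  also have "\<dots> = (\<Sum>g\<in>B x z. \<Sum>i\<in>?Iz. \<Sum>j\<in>?Jx i. \<Sum>h\<in>B z y. sP (c x y (cmp x z y h g) * (dv z y h (mor i) * dv x z g (morJ i j))) (valJ i j))"
    by (rule sum.cong[OF refl], rule sum.cong[OF refl], rule sum.swap)
  also have "\<dots> = (\<Sum>i\<in>?Iz. \<Sum>g\<in>B x z. \<Sum>j\<in>?Jx i. \<Sum>h\<in>B z y. sP (c x y (cmp x z y h g) * (dv z y h (mor i) * dv x z g (morJ i j))) (valJ i j))"
    by (rule sum.swap)
  also have "\<dots> = (\<Sum>i\<in>?Iz. \<Sum>j\<in>?Jx i. \<Sum>g\<in>B x z. \<Sum>h\<in>B z y. sP (c x y (cmp x z y h g) * (dv z y h (mor i) * dv x z g (morJ i j))) (valJ i j))"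
    by (rule sum.cong[OF refl], rule sum.swap)
  also have "\<dots> = (\<Sum>i\<in>?Iz. \<Sum>j\<in>?Jx i. sP (\<Sum>g\<in>B x z. \<Sum>h\<in>B z y. c x y (cmp x z y h g) * (dv z y h (mor i) * dv x z g (morJ i j))) (valJ i j))"
    by (simp add: P.scale_sum_left)
  also have "\<dots> = (\<Sum>i\<in>?Iz. \<Sum>j\<in>?Jx i. sP (c x y (cmp x z y (mor i) (morJ i j))) (valJ i j))"
  proof (rule sum.cong[OF refl], rule sum.cong[OF refl])
    fix i j assume i: "i \<in> ?Iz" and j: "j \<in> ?Jx i"
    have m: "mor i \<in> Hom z y" using famok_Hom[OF okI] i by auto
    have m': "morJ i j \<in> Hom x z" using famok_Hom[OF okJ] i j by fastforce
    show "sP (\<Sum>g\<in>B x z. \<Sum>h\<in>B z y. c x y (cmp x z y h g) * (dv z y h (mor i) * dv x z g (morJ i j))) (valJ i j)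
        = sP (c x y (cmp x z y (mor i) (morJ i j))) (valJ i j)"
      by (simp only: bilin[OF Cset_dualsp[OF c] m m'])
  qed
  finally show ?thesis .
qed


lemma assoc_zsum:
  assumes okI: "famok I src tgt mor" and okJ: "\<And>i. i \<in> I \<Longrightarrow> famok (J i) (srcJ i) (tgtJ i) (morJ i)"
    and c: "c \<in> Cset sM Hom"
    and K: "K = {k. fst k \<in> I \<and> snd k \<in> J (fst k) \<and> tgtJ (fst k) (snd k) = src (fst k)}"
    and finK: "finite {k\<in>K. srcJ (fst k) (snd k) = x \<and> tgt (fst k) = y}"
  shows "(\<Sum>z\<in>{z. precle Hom x z \<and> precle Hom z y}. \<Sum>i\<in>{i\<in>I. src i = z \<and> tgt i = y}. \<Sum>j\<in>{j\<in>J i. srcJ i j = x \<and> tgtJ i j = z}.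
            sP (c x y (cmp x z y (mor i) (morJ i j))) (valJ i j))
       = (\<Sum>k\<in>{k\<in>K. srcJ (fst k) (snd k) = x \<and> tgt (fst k) = y}.
            sP (c x y (cmp (srcJ (fst k) (snd k)) (src (fst k)) (tgt (fst k)) (mor (fst k)) (morJ (fst k) (snd k)))) (valJ (fst k) (snd k)))"
    (is "?L = (\<Sum>k\<in>?Kxy. ?t k)")
proof -
  let ?Z = "{z. precle Hom x z \<and> precle Hom z y}"
  let ?K' = "{k\<in>?Kxy. src (fst k) \<in> ?Z}"
  have finZ: "finite ?Z" by (rule Z_finite)
  have fin': "finite ?K'" using finK by (rule finite_subset[rotated]) auto
  have "(\<Sum>k\<in>?Kxy. ?t k) = (\<Sum>k\<in>?K'. ?t k)"
  proof (rule sum.mono_neutral_right[OF finK])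
    show "?K' \<subseteq> ?Kxy" by auto
    show "\<forall>k\<in>?Kxy - ?K'. ?t k = 0"
    proof
      fix k assume k: "k \<in> ?Kxy - ?K'"
      have kI: "fst k \<in> I" and kJ: "snd k \<in> J (fst k)" and kt: "tgtJ (fst k) (snd k) = src (fst k)"
        and kx: "srcJ (fst k) (snd k) = x" and ky: "tgt (fst k) = y" and kz: "src (fst k) \<notin> ?Z"
        using k K by auto
      have m: "mor (fst k) \<in> Hom (src (fst k)) y" using famok_Hom[OF okI kI] ky by simp
      have m': "morJ (fst k) (snd k) \<in> Hom x (src (fst k))" using famok_Hom[OF okJ[OF kI] kJ] kt kx by simp
      have "mor (fst k) = 0 \<or> morJ (fst k) (snd k) = 0"
        using kz precle_nz[OF m] precle_nz[OF m'] by blast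
      then have "cmp x (src (fst k)) y (mor (fst k)) (morJ (fst k) (snd k)) = 0"
        using cmp_0_l[OF m'] cmp_0_r[OF m] by auto
      then show "?t k = 0" using kx ky dualsp_0[OF Cset_dualsp[OF c]] by simp
    qed
  qed
  also have "\<dots> = (\<Sum>z\<in>?Z. \<Sum>k\<in>{k. k \<in> ?K' \<and> src (fst k) = z}. ?t k)"
    by (rule sum.group[symmetric, OF fin' finZ]) auto
  also have "\<dots> = ?L"
  proof (rule sum.cong[OF refl])
    fix z assume z: "z \<in> ?Z"
    have e: "{k. k \<in> ?K' \<and> src (fst k) = z} = Sigma {i\<in>I. src i = z \<and> tgt i = y} (\<lambda>i. {j\<in>J i. srcJ i j = x \<and> tgtJ i j = z})"
      using z K by auto
    have "(\<Sum>k\<in>{k. k \<in> ?K' \<and> src (fst k) = z}. ?t k) = (\<Sum>k\<in>Sigma {i\<in>I. src i = z \<and> tgt i = y} (\<lambda>i. {j\<in>J i. srcJ i j = x \<and> tgtJ i j = z}). ?t k)"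
      unfolding e ..
    also have "\<dots> = (\<Sum>i\<in>{i\<in>I. src i = z \<and> tgt i = y}. \<Sum>j\<in>{j\<in>J i. srcJ i j = x \<and> tgtJ i j = z}. ?t (i, j))"
    proof -
      have "(\<Sum>i\<in>{i\<in>I. src i = z \<and> tgt i = y}. \<Sum>j\<in>{j\<in>J i. srcJ i j = x \<and> tgtJ i j = z}. ?t (i, j))
          = (\<Sum>(i, j)\<in>Sigma {i\<in>I. src i = z \<and> tgt i = y} (\<lambda>i. {j\<in>J i. srcJ i j = x \<and> tgtJ i j = z}). ?t (i, j))"
        by (rule sum.Sigma) (use famok_fin1[OF okI] famok_fin1[OF okJ] in auto)
      then show ?thesis by (simp add: split_beta)
    qed
    also have "\<dots> = (\<Sum>i\<in>{i\<in>I. src i = z \<and> tgt i = y}. \<Sum>j\<in>{j\<in>J i. srcJ i j = x \<and> tgtJ i j = z}.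
            sP (c x y (cmp x z y (mor i) (morJ i j))) (valJ i j))"
      by (intro sum.cong refl) auto
    finally show "(\<Sum>k\<in>{k. k \<in> ?K' \<and> src (fst k) = z}. ?t k) = \<dots>" .
  qed
  finally show ?thesis by simp
qed

lemma assoc:
  assumes okI: "famok I src tgt mor" and okJ: "\<And>i. i \<in> I \<Longrightarrow> famok (J i) (srcJ i) (tgtJ i) (morJ i)"
    and K: "K = {k. fst k \<in> I \<and> snd k \<in> J (fst k) \<and> tgtJ (fst k) (snd k) = src (fst k)}"
    and finK: "\<And>a b. finite {k\<in>K. srcJ (fst k) (snd k) = a \<and> tgt (fst k) = b}"
  shows "\<pi> (fam sP I src tgt mor (\<lambda>i. \<pi> (fam sP (J i) (srcJ i) (tgtJ i) (morJ i) (valJ i))))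
       = \<pi> (fam sP K (\<lambda>k. srcJ (fst k) (snd k)) (\<lambda>k. tgt (fst k))
              (\<lambda>k. cmp (srcJ (fst k) (snd k)) (src (fst k)) (tgt (fst k)) (mor (fst k)) (morJ (fst k) (snd k)))
              (\<lambda>k. valJ (fst k) (snd k)))"
proof -
  let ?sK = "\<lambda>k. srcJ (fst k) (snd k)" and ?tK = "\<lambda>k. tgt (fst k)"
    and ?mK = "\<lambda>k. cmp (srcJ (fst k) (snd k)) (src (fst k)) (tgt (fst k)) (mor (fst k)) (morJ (fst k) (snd k))"
    and ?vK = "\<lambda>k. valJ (fst k) (snd k)"
  define F where "F = (\<lambda>c e. fam sP I src tgt mor (\<lambda>i. fam sP (J i) (srcJ i) (tgtJ i) (morJ i) (valJ i) e) c)"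
  have Fc: "F c = (\<lambda>e. \<Sum>i\<in>{i\<in>I. (src i, tgt i) \<in> csupp c}. sP (c (src i) (tgt i) (mor i)) (fam sP (J i) (srcJ i) (tgtJ i) (morJ i) (valJ i) e))"
    if c: "c \<in> Cset sM Hom" for c
    unfolding F_def fam_def[of sP I] using c by simp
  have Fin: "finite {i\<in>I. (src i, tgt i) \<in> csupp c}" if c: "c \<in> Cset sM Hom" for c
    by (rule famok_fin[OF okI Cset_fin[OF c]])
  have Fhom: "(\<lambda>e. sP a (fam sP (J i) (srcJ i) (tgtJ i) (morJ i) (valJ i) e)) \<in> homC sM Hom sP" if "i \<in> I" for i a
    by (rule homC_scale, rule fam_homC[OF vsP okJ[OF that]])
  have famI: "fam sP I src tgt mor v \<in> homC sM Hom sP" for v by (rule fam_homC[OF vsP okI])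
  have FCC: "F \<in> homCC sM Hom sP"
    unfolding homCC_def mem_Collect_eq
  proof (intro conjI ballI allI impI)
    fix c assume c: "c \<in> Cset sM Hom"
    show "F c \<in> homC sM Hom sP" unfolding Fc[OF c]
      by (rule homC_sum[OF Fin[OF c]], rule Fhom) auto
  next
    fix c d assume c: "c \<in> Cset sM Hom" and d: "d \<in> Cset sM Hom"
    show "F (cadd c d) = (\<lambda>e. F c e + F d e)"
      unfolding F_def by (rule ext, rule homC_linear[OF famI c d])
  next
    fix a c assume c: "c \<in> Cset sM Hom"
    show "F (cscale a c) = (\<lambda>e. sP a (F c e))"
      unfolding F_def by (rule ext, rule homC_scaleC[OF famI c])
  next
    fix c :: "'o \<Rightarrow> 'o \<Rightarrow> 'm \<Rightarrow> 'k" assume c: "c \<notin> Cset sM Hom"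
    show "F c = (\<lambda>e. 0)" unfolding F_def by (rule ext, rule fam_out[OF c])
  qed
  have lhs: "(\<lambda>c. if c \<in> Cset sM Hom then \<pi> (F c) else 0) = fam sP I src tgt mor (\<lambda>i. \<pi> (fam sP (J i) (srcJ i) (tgtJ i) (morJ i) (valJ i)))"
  proof
    fix c show "(if c \<in> Cset sM Hom then \<pi> (F c) else 0) = fam sP I src tgt mor (\<lambda>i. \<pi> (fam sP (J i) (srcJ i) (tgtJ i) (morJ i) (valJ i))) c"
    proof (cases "c \<in> Cset sM Hom")
      case True
      have "\<pi> (F c) = (\<Sum>i\<in>{i\<in>I. (src i, tgt i) \<in> csupp c}. \<pi> (\<lambda>e. sP (c (src i) (tgt i) (mor i)) (fam sP (J i) (srcJ i) (tgtJ i) (morJ i) (valJ i) e)))"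
        unfolding Fc[OF True] by (rule pi_sum[OF Fin[OF True]], rule Fhom) auto
      also have "\<dots> = (\<Sum>i\<in>{i\<in>I. (src i, tgt i) \<in> csupp c}. sP (c (src i) (tgt i) (mor i)) (\<pi> (fam sP (J i) (srcJ i) (tgtJ i) (morJ i) (valJ i))))"
        by (rule sum.cong[OF refl], rule pi_scale, rule fam_homC[OF vsP okJ]) auto
      finally show ?thesis using True unfolding fam_def by simp
    next
      case False then show ?thesis by (simp add: fam_out)
    qed
  qed
  have okK: "famok K ?sK ?tK ?mK"
  proof (rule famokI)
    fix k assume k: "k \<in> K"
    have kI: "fst k \<in> I" and kJ: "snd k \<in> J (fst k)" and kt: "tgtJ (fst k) (snd k) = src (fst k)" using k K by auto
    show "?mK k \<in> Hom (?sK k) (?tK k)"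
      by (rule cmp_Hom) (use famok_Hom[OF okJ[OF kI] kJ] kt famok_Hom[OF okI kI] in auto)
  next
    fix a b show "finite {k\<in>K. ?sK k = a \<and> ?tK k = b}" by (rule finK)
  qed
  have rhs: "comult_comp sM Hom cmp sP F = fam sP K ?sK ?tK ?mK ?vK"
  proof
    fix c show "comult_comp sM Hom cmp sP F c = fam sP K ?sK ?tK ?mK ?vK c"
    proof (cases "c \<in> Cset sM Hom")
      case False then show ?thesis unfolding comult_comp_def by (simp add: fam_out)
    next
      case True
      let ?Kxy = "\<lambda>x y. {k\<in>K. srcJ (fst k) (snd k) = x \<and> tgt (fst k) = y}"
      have "comult_comp sM Hom cmp sP F c = (\<Sum>(x, y)\<in>csupp c. \<Sum>z\<in>{z. precle Hom x z \<and> precle Hom z y}.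
         \<Sum>g\<in>B x z. \<Sum>h\<in>B z y. sP (c x y (cmp x z y h g)) (F (cdelta z y (dv z y h)) (cdelta x z (dv x z g))))"
        unfolding comult_comp_def using True by simp
      also have "\<dots> = (\<Sum>(x, y)\<in>csupp c. \<Sum>z\<in>{z. precle Hom x z \<and> precle Hom z y}.
          \<Sum>i\<in>{i\<in>I. src i = z \<and> tgt i = y}. \<Sum>j\<in>{j\<in>J i. srcJ i j = x \<and> tgtJ i j = z}.
            sP (c x y (cmp x z y (mor i) (morJ i j))) (valJ i j))"
        unfolding F_def by (rule sum.cong[OF refl], clarify, rule sum.cong[OF refl], rule assoc_inner[OF okI okJ True])
      also have "\<dots> = (\<Sum>(x, y)\<in>csupp c. \<Sum>k\<in>?Kxy x y. sP (c x y (?mK k)) (?vK k))"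
        by (rule sum.cong[OF refl], clarify, rule assoc_zsum[OF okI okJ True K finK])
      also have "\<dots> = (\<Sum>p\<in>csupp c. \<Sum>k\<in>{k. k \<in> {k\<in>K. (?sK k, ?tK k) \<in> csupp c} \<and> (?sK k, ?tK k) = p}. sP (c (?sK k) (?tK k) (?mK k)) (?vK k))"
      proof (rule sum.cong[OF refl], clarify)
        fix x y assume xy: "(x, y) \<in> csupp c"
        have e: "{k. k \<in> {k\<in>K. (?sK k, ?tK k) \<in> csupp c} \<and> (?sK k, ?tK k) = (x, y)} = ?Kxy x y" using xy by auto
        show "(\<Sum>k\<in>?Kxy x y. sP (c x y (?mK k)) (?vK k)) = (\<Sum>k\<in>{k. k \<in> {k\<in>K. (?sK k, ?tK k) \<in> csupp c} \<and> (?sK k, ?tK k) = (x, y)}. sP (c (?sK k) (?tK k) (?mK k)) (?vK k))"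
          unfolding e by (rule sum.cong[OF refl]) auto
      qed
      also have "\<dots> = (\<Sum>k\<in>{k\<in>K. (?sK k, ?tK k) \<in> csupp c}. sP (c (?sK k) (?tK k) (?mK k)) (?vK k))"
        by (rule sum.group[OF famok_fin[OF okK Cset_fin[OF True]] Cset_fin[OF True]]) auto
      also have "\<dots> = fam sP K ?sK ?tK ?mK ?vK c" unfolding fam_def using True by simp
      finally show ?thesis .
    qed
  qed
  show ?thesis using pi_assoc[OF FCC] unfolding lhs rhs .
qed
end

context kcontra begin

abbreviation act where "act x y f p \<equiv> cact sM Hom sP \<pi> (evf x y f) p"
abbreviation ee where "ee x p \<equiv> cact sM Hom sP \<pi> (eobj idm x) p"

lemma ee_act: "ee x p = act x x (idm x) p"
  unfolding eobj_def ..

lemma act_fam: "act x y f p = \<pi> (fam sP {()} (\<lambda>_. x) (\<lambda>_. y) (\<lambda>_. f) (\<lambda>_. p))"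
  unfolding cact_def evf_def fam_single[OF vsP] by simp

lemma fam_empty: "fam sP {} src tgt mor val = (\<lambda>c. 0)"
  unfolding fam_def by auto

lemma act_comp: assumes f: "f \<in> Hom x y" and h: "h \<in> Hom y z"
  shows "act y z h (act x y f p) = act x z (cmp x y z h f) p"
proof -
  have "act y z h (act x y f p) = \<pi> (fam sP {()} (\<lambda>_. y) (\<lambda>_. z) (\<lambda>_. h) (\<lambda>_. \<pi> (fam sP {()} (\<lambda>_. x) (\<lambda>_. y) (\<lambda>_. f) (\<lambda>_. p))))"
    unfolding act_fam ..
  also have "\<dots> = \<pi> (fam sP {k. fst k \<in> {()} \<and> snd k \<in> {()} \<and> y = y} (\<lambda>k. x) (\<lambda>k. z) (\<lambda>k. cmp x y z h f) (\<lambda>k. p))"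
    by (rule assoc[where J="\<lambda>_. {()}" and srcJ="\<lambda>_ _. x" and tgtJ="\<lambda>_ _. y" and morJ="\<lambda>_ _. f" and valJ="\<lambda>_ _. p", simplified])
       (auto intro: famok_single f h)
  also have "{k. fst k \<in> {()} \<and> snd k \<in> {()} \<and> y = y} = {((), ())}" by auto
  also have "\<pi> (fam sP {((), ())} (\<lambda>k. x) (\<lambda>k. z) (\<lambda>k. cmp x y z h f) (\<lambda>k. p)) = act x z (cmp x y z h f) p"
    unfolding act_fam fam_single[OF vsP] ..
  finally show ?thesis .
qed

lemma act_mismatch: assumes "y' \<noteq> y" and f: "f \<in> Hom x y'" and h: "h \<in> Hom y z"
  shows "act y z h (act x y' f p) = 0"
proof -
  have "act y z h (act x y' f p) = \<pi> (fam sP {()} (\<lambda>_. y) (\<lambda>_. z) (\<lambda>_. h) (\<lambda>_. \<pi> (fam sP {()} (\<lambda>_. x) (\<lambda>_. y') (\<lambda>_. f) (\<lambda>_. p))))"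
    unfolding act_fam ..
  also have "\<dots> = \<pi> (fam sP {k. fst k \<in> {()} \<and> snd k \<in> {()} \<and> y' = y} (\<lambda>k. x) (\<lambda>k. z) (\<lambda>k. cmp x y z h f) (\<lambda>k. p))"
    by (rule assoc[where J="\<lambda>_. {()}" and srcJ="\<lambda>_ _. x" and tgtJ="\<lambda>_ _. y'" and morJ="\<lambda>_ _. f" and valJ="\<lambda>_ _. p", simplified])
       (use assms in \<open>auto intro: famok_single\<close>)
  also have "{k. fst k \<in> {()} \<and> snd k \<in> {()} \<and> y' = y} = {}" using assms by auto
  finally show ?thesis by (simp add: fam_empty pi_zero)
qed

lemma ee_idem: "ee y (ee y p) = ee y p"
  unfolding ee_act using act_comp[OF idm_Hom idm_Hom] cmp_id_l[OF idm_Hom] by simp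

lemma act_out: assumes "f \<notin> Hom x y" shows "act x y f p = 0"
proof -
  have "act x y f p = \<pi> (\<lambda>c. 0)" unfolding cact_def evf_def
    by (rule arg_cong[where f=\<pi>]) (auto simp: dualsp_out[OF Cset_dualsp assms])
  then show ?thesis by (simp add: pi_zero)
qed

lemma act_add: "act x y f (p + q) = act x y f p + act x y f q"
proof (cases "f \<in> Hom x y")
  case True
  have "act x y f (p + q) = \<pi> (\<lambda>c. fam sP {()} (\<lambda>_. x) (\<lambda>_. y) (\<lambda>_. f) (\<lambda>_. p) c + fam sP {()} (\<lambda>_. x) (\<lambda>_. y) (\<lambda>_. f) (\<lambda>_. q) c)"
    unfolding act_fam fam_add_val[OF vsP, symmetric] ..
  also have "\<dots> = act x y f p + act x y f q"
    unfolding act_fam by (rule pi_add; rule fam_homC[OF vsP]; rule famok_single; simp add: True)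
  finally show ?thesis .
next
  case False then show ?thesis by (simp add: act_out)
qed

lemma act_scale: "act x y f (sP a p) = sP a (act x y f p)"
proof (cases "f \<in> Hom x y")
  case True
  have "act x y f (sP a p) = \<pi> (\<lambda>c. sP a (fam sP {()} (\<lambda>_. x) (\<lambda>_. y) (\<lambda>_. f) (\<lambda>_. p) c))"
    unfolding act_fam fam_scale_val[OF vsP, symmetric] ..
  also have "\<dots> = sP a (act x y f p)"
    unfolding act_fam by (rule pi_scale; rule fam_homC[OF vsP]; rule famok_single; simp add: True)
  finally show ?thesis .
next
  case False then show ?thesis by (simp add: act_out)
qed

lemma act_zero: "act x y f 0 = 0"
  using act_add[of x y f 0 0] by simp

lemma act_diff: "act x y f (p - q) = act x y f p - act x y f q"
  using act_add[of x y f "p - q" q] by simp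

lemma act_sum: "act x y f (\<Sum>s\<in>S. p s) = (\<Sum>s\<in>S. act x y f (p s))"
  by (induction S rule: infinite_finite_induct) (auto simp: act_zero act_add)

lemma ee_add: "ee y (p + q) = ee y p + ee y q" unfolding ee_act by (rule act_add)
lemma ee_scale: "ee y (sP a p) = sP a (ee y p)" unfolding ee_act by (rule act_scale)
lemma ee_diff: "ee y (p - q) = ee y p - ee y q" unfolding ee_act by (rule act_diff)
lemma ee_zero: "ee y 0 = 0" unfolding ee_act by (rule act_zero)

lemma Theta_iff: "p \<in> Theta_obj sM Hom idm sP \<pi> y \<longleftrightarrow> ee y p = p"
proof
  assume "p \<in> Theta_obj sM Hom idm sP \<pi> y"
  then obtain q where "p = ee y q" unfolding Theta_obj_def by blast
  then show "ee y p = p" using ee_idem by simp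
next
  assume "ee y p = p"
  then show "p \<in> Theta_obj sM Hom idm sP \<pi> y" unfolding Theta_obj_def by (metis rangeI)
qed

lemma Theta_ee: "ee y p \<in> Theta_obj sM Hom idm sP \<pi> y"
  unfolding Theta_obj_def by simp

lemma Theta_add: "p \<in> Theta_obj sM Hom idm sP \<pi> y \<Longrightarrow> q \<in> Theta_obj sM Hom idm sP \<pi> y \<Longrightarrow> p + q \<in> Theta_obj sM Hom idm sP \<pi> y"
  unfolding Theta_iff by (simp add: ee_add)
lemma Theta_diff: "p \<in> Theta_obj sM Hom idm sP \<pi> y \<Longrightarrow> q \<in> Theta_obj sM Hom idm sP \<pi> y \<Longrightarrow> p - q \<in> Theta_obj sM Hom idm sP \<pi> y"
  unfolding Theta_iff by (simp add: ee_diff)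
lemma Theta_scale: "p \<in> Theta_obj sM Hom idm sP \<pi> y \<Longrightarrow> sP a p \<in> Theta_obj sM Hom idm sP \<pi> y"
  unfolding Theta_iff by (simp add: ee_scale)
lemma Theta_zero: "0 \<in> Theta_obj sM Hom idm sP \<pi> y"
  unfolding Theta_iff by (simp add: ee_zero)
lemma Theta_sum: "(\<And>s. s \<in> S \<Longrightarrow> p s \<in> Theta_obj sM Hom idm sP \<pi> y) \<Longrightarrow> (\<Sum>s\<in>S. p s) \<in> Theta_obj sM Hom idm sP \<pi> y"
  by (induction S rule: infinite_finite_induct) (auto simp: Theta_zero Theta_add)

lemma act_Theta: assumes f: "f \<in> Hom x y" shows "act x y f p \<in> Theta_obj sM Hom idm sP \<pi> y"
  unfolding Theta_iff ee_act using act_comp[OF f idm_Hom] cmp_id_l[OF f] by simp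

lemma act_famI:
  assumes ok: "famok I src tgt mor" and h: "h \<in> Hom y z"
  shows "act y z h (\<pi> (fam sP I src tgt mor val)) = \<pi> (fam sP {i\<in>I. tgt i = y} src (\<lambda>_. z) (\<lambda>i. cmp (src i) y z h (mor i)) val)"
proof -
  let ?K = "{k. fst k \<in> {()} \<and> snd k \<in> I \<and> tgt (snd k) = y}"
  have "act y z h (\<pi> (fam sP I src tgt mor val)) = \<pi> (fam sP {()} (\<lambda>_. y) (\<lambda>_. z) (\<lambda>_. h) (\<lambda>_. \<pi> (fam sP I src tgt mor val)))"
    unfolding act_fam ..
  also have "\<dots> = \<pi> (fam sP ?K (\<lambda>k. src (snd k)) (\<lambda>k. z) (\<lambda>k. cmp (src (snd k)) y z h (mor (snd k))) (\<lambda>k. val (snd k)))"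
  proof (rule assoc[where J="\<lambda>_. I" and srcJ="\<lambda>_. src" and tgtJ="\<lambda>_. tgt" and morJ="\<lambda>_. mor" and valJ="\<lambda>_. val"])
    show "famok {()} (\<lambda>_. y) (\<lambda>_. z) (\<lambda>_. h)" by (rule famok_single) (simp add: h)
    show "\<And>i. i \<in> {()} \<Longrightarrow> famok I src tgt mor" by (rule ok)
    show "?K = {k. fst k \<in> {()} \<and> snd k \<in> I \<and> tgt (snd k) = y}" ..
    fix a b
    have "{k \<in> ?K. src (snd k) = a \<and> z = b} \<subseteq> (\<lambda>i. ((), i)) ` {i\<in>I. src i = a \<and> tgt i = y}"
      by (auto simp: image_iff)
    then show "finite {k \<in> ?K. src (snd k) = a \<and> z = b}"
      by (rule finite_subset) (use famok_fin1[OF ok] in blast)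
  qed
  also have "?K = (\<lambda>i. ((), i)) ` {i\<in>I. tgt i = y}" by (auto simp: image_iff)
  also have "fam sP ((\<lambda>i. ((), i)) ` {i\<in>I. tgt i = y}) (\<lambda>k. src (snd k)) (\<lambda>k. z) (\<lambda>k. cmp (src (snd k)) y z h (mor (snd k))) (\<lambda>k. val (snd k))
     = fam sP {i\<in>I. tgt i = y} src (\<lambda>_. z) (\<lambda>i. cmp (src i) y z h (mor i)) val"
    by (subst fam_reindex) (auto simp: inj_on_def comp_def)
  finally show ?thesis .
qed

lemma ee_fam:
  assumes ok: "famok I src tgt mor"
  shows "ee y (\<pi> (fam sP I src tgt mor val)) = \<pi> (fam sP {i\<in>I. tgt i = y} src tgt mor val)"
proof -
  have "ee y (\<pi> (fam sP I src tgt mor val)) = \<pi> (fam sP {i\<in>I. tgt i = y} src (\<lambda>_. y) (\<lambda>i. cmp (src i) y y (idm y) (mor i)) val)"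
    unfolding ee_act by (rule act_famI[OF ok idm_Hom])
  also have "\<dots> = \<pi> (fam sP {i\<in>I. tgt i = y} src tgt mor val)"
    by (rule arg_cong[where f=\<pi>], rule fam_cong) (use famok_Hom[OF ok] cmp_id_l in auto)
  finally show ?thesis .
qed

lemma col_Theta:
  assumes ok: "famok I src tgt mor" and t: "\<And>i. i \<in> I \<Longrightarrow> tgt i = y"
  shows "\<pi> (fam sP I src tgt mor val) \<in> Theta_obj sM Hom idm sP \<pi> y"
  unfolding Theta_iff ee_fam[OF ok] using t by (metis (mono_tags, lifting) Collect_cong Collect_mem_eq)

lemma proj_vals:
  assumes ok: "famok I src tgt mor"
  shows "\<pi> (fam sP I src tgt mor (\<lambda>i. ee (src i) (val i))) = \<pi> (fam sP I src tgt mor val)"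
proof -
  let ?K = "{k. fst k \<in> I \<and> snd k \<in> {()} \<and> src (fst k) = src (fst k)}"
  have "\<pi> (fam sP I src tgt mor (\<lambda>i. ee (src i) (val i)))
      = \<pi> (fam sP I src tgt mor (\<lambda>i. \<pi> (fam sP {()} (\<lambda>_. src i) (\<lambda>_. src i) (\<lambda>_. idm (src i)) (\<lambda>_. val i))))"
    unfolding ee_act act_fam ..
  also have "\<dots> = \<pi> (fam sP ?K (\<lambda>k. src (fst k)) (\<lambda>k. tgt (fst k)) (\<lambda>k. cmp (src (fst k)) (src (fst k)) (tgt (fst k)) (mor (fst k)) (idm (src (fst k)))) (\<lambda>k. val (fst k)))"
  proof (rule assoc[where J="\<lambda>_. {()}" and srcJ="\<lambda>i _. src i" and tgtJ="\<lambda>i _. src i" and morJ="\<lambda>i _. idm (src i)" and valJ="\<lambda>i _. val i"])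
    show "famok I src tgt mor" by (rule ok)
    show "\<And>i. i \<in> I \<Longrightarrow> famok {()} (\<lambda>_. src i) (\<lambda>_. src i) (\<lambda>_. idm (src i))" by (rule famok_single) (simp add: idm_Hom)
    show "?K = {k. fst k \<in> I \<and> snd k \<in> {()} \<and> src (fst k) = src (fst k)}" ..
    fix a b
    have "{k \<in> ?K. src (fst k) = a \<and> tgt (fst k) = b} \<subseteq> (\<lambda>i. (i, ())) ` {i\<in>I. src i = a \<and> tgt i = b}"
      by (auto simp: image_iff)
    then show "finite {k \<in> ?K. src (fst k) = a \<and> tgt (fst k) = b}"
      by (rule finite_subset) (use famok_fin1[OF ok] in blast)
  qed
  also have "?K = (\<lambda>i. (i, ())) ` I" by (auto simp: image_iff)
  also have "fam sP ((\<lambda>i. (i, ())) ` I) (\<lambda>k. src (fst k)) (\<lambda>k. tgt (fst k)) (\<lambda>k. cmp (src (fst k)) (src (fst k)) (tgt (fst k)) (mor (fst k)) (idm (src (fst k)))) (\<lambda>k. val (fst k))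
     = fam sP I src tgt mor val"
    by (subst fam_reindex) (auto simp: inj_on_def comp_def cmp_id_r famok_Hom[OF ok] intro!: fam_cong)
  finally show ?thesis .
qed

abbreviation objfam where "objfam v \<equiv> fam sP UNIV (\<lambda>x. x) (\<lambda>x. x) idm v"

lemma famok_obj: "famok UNIV (\<lambda>x. x) (\<lambda>x. x) idm"
  by (rule famokI) (auto simp: idm_Hom)

lemma decomp: "\<pi> (objfam (\<lambda>x. ee x p)) = p"
proof -
  let ?K = "{k. fst k \<in> UNIV \<and> snd k \<in> {()} \<and> fst k = fst k}"
  have "\<pi> (objfam (\<lambda>x. ee x p)) = \<pi> (objfam (\<lambda>x. \<pi> (fam sP {()} (\<lambda>_. x) (\<lambda>_. x) (\<lambda>_. idm x) (\<lambda>_. p))))"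
    unfolding ee_act act_fam ..
  also have "\<dots> = \<pi> (fam sP ?K (\<lambda>k. fst k) (\<lambda>k. fst k) (\<lambda>k. cmp (fst k) (fst k) (fst k) (idm (fst k)) (idm (fst k))) (\<lambda>k. p))"
  proof (rule assoc[where J="\<lambda>_. {()}" and srcJ="\<lambda>i _. i" and tgtJ="\<lambda>i _. i" and morJ="\<lambda>i _. idm i" and valJ="\<lambda>i _. p"])
    show "famok UNIV (\<lambda>x. x) (\<lambda>x. x) idm" by (rule famok_obj)
    show "\<And>i. i \<in> UNIV \<Longrightarrow> famok {()} (\<lambda>_. i) (\<lambda>_. i) (\<lambda>_. idm i)" by (rule famok_single) (simp add: idm_Hom)
    show "?K = {k. fst k \<in> UNIV \<and> snd k \<in> {()} \<and> fst k = fst k}" ..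
    fix a b
    have "{k \<in> ?K. fst k = a \<and> fst k = b} \<subseteq> {(a, ())}" by auto
    then show "finite {k \<in> ?K. fst k = a \<and> fst k = b}" by (rule finite_subset) simp
  qed
  also have "?K = (\<lambda>i. (i, ())) ` UNIV" by (auto simp: image_iff)
  also have "fam sP ((\<lambda>i. (i, ())) ` UNIV) (\<lambda>k. fst k) (\<lambda>k. fst k) (\<lambda>k. cmp (fst k) (fst k) (fst k) (idm (fst k)) (idm (fst k))) (\<lambda>k. p)
      = objfam (\<lambda>_. p)"
    by (subst fam_reindex) (auto simp: inj_on_def comp_def cmp_id_r idm_Hom intro!: fam_cong)
  also have "objfam (\<lambda>_. p) = (\<lambda>c. if c \<in> Cset sM Hom then sP (counit idm c) p else 0)"
    unfolding fam_def counit_def by (auto simp: fun_eq_iff P.scale_sum_left)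
  finally show ?thesis using pi_unit by simp
qed

end

context kcat begin

definition csum :: "'s set \<Rightarrow> ('s \<Rightarrow> 'o \<Rightarrow> 'o \<Rightarrow> 'm \<Rightarrow> 'k) \<Rightarrow> 'o \<Rightarrow> 'o \<Rightarrow> 'm \<Rightarrow> 'k" where
  "csum S cc = (\<lambda>x y m. \<Sum>s\<in>S. cc s x y m)"

lemma czero_Cset: "(\<lambda>x y m. 0) \<in> Cset sM Hom"
  by (rule CsetI) (auto simp: dualsp_zerof csupp_def)

lemma homC_czero: assumes vs: "vector_space sP" and f: "f \<in> homC sM Hom sP"
  shows "f (\<lambda>(x::'o) (y::'o) (m::'m). (0::'k)) = 0"
proof -
  let ?z = "\<lambda>(x::'o) (y::'o) (m::'m). (0::'k)"
  have "cadd ?z ?z = ?z" unfolding cadd_def by simp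
  moreover have "f (cadd ?z ?z) = f ?z + f ?z"
    using f czero_Cset unfolding homC_def by blast
  ultimately show ?thesis by simp
qed

lemma homC_csum: assumes vs: "vector_space sP" and f: "f \<in> homC sM Hom sP" and fin: "finite S"
  and cc: "\<And>s. s \<in> S \<Longrightarrow> cc s \<in> Cset sM Hom"
  shows "csum S cc \<in> Cset sM Hom \<and> f (csum S cc) = (\<Sum>s\<in>S. f (cc s))"
  using fin cc
proof (induction S rule: finite_induct)
  case empty
  have "csum {} cc = (\<lambda>x y m. 0)" unfolding csum_def by simp
  then show ?case using czero_Cset homC_czero[OF vs f] by simp
next
  case (insert s F)
  have e: "csum (insert s F) cc = cadd (cc s) (csum F cc)"
    unfolding csum_def cadd_def using insert by (simp add: fun_eq_iff)
  have IH: "csum F cc \<in> Cset sM Hom" "f (csum F cc) = (\<Sum>s\<in>F. f (cc s))" using insert by auto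
  have cs: "cc s \<in> Cset sM Hom" using insert by auto
  show ?case unfolding e using cadd_Cset[OF cs IH(1)] f cs IH insert unfolding homC_def by simp
qed

definition BT :: "('o \<times> 'o \<times> 'm) set" where "BT = {i. snd (snd i) \<in> B (fst i) (fst (snd i))}"

lemma famok_BT: "famok BT fst (\<lambda>i. fst (snd i)) (\<lambda>i. snd (snd i))"
proof (rule famokI)
  fix i assume "i \<in> BT" then show "snd (snd i) \<in> Hom (fst i) (fst (snd i))" unfolding BT_def by (auto intro: hb_Hom)
next
  fix a b
  have "{i \<in> BT. fst i = a \<and> fst (snd i) = b} \<subseteq> (\<lambda>g. (a, b, g)) ` B a b" unfolding BT_def by (auto simp: image_iff)
  then show "finite {i \<in> BT. fst i = a \<and> fst (snd i) = b}" by (rule finite_subset) (simp add: hbasis_finite)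
qed

lemma c_expand: assumes c: "c \<in> Cset sM Hom"
  shows "c = csum {i\<in>BT. (fst i, fst (snd i)) \<in> csupp c}
     (\<lambda>i. cscale (c (fst i) (fst (snd i)) (snd (snd i))) (cdelta (fst i) (fst (snd i)) (dv (fst i) (fst (snd i)) (snd (snd i)))))"
proof (intro ext)
  fix x y m
  let ?S = "{i\<in>BT. (fst i, fst (snd i)) \<in> csupp c}"
  have finS: "finite ?S" by (rule famok_fin[OF famok_BT Cset_fin[OF c]])
  have "csum ?S (\<lambda>i. cscale (c (fst i) (fst (snd i)) (snd (snd i))) (cdelta (fst i) (fst (snd i)) (dv (fst i) (fst (snd i)) (snd (snd i))))) x y m
     = (\<Sum>i\<in>?S. c (fst i) (fst (snd i)) (snd (snd i)) * (if fst i = x \<and> fst (snd i) = y then dv x y (snd (snd i)) m else 0))"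
    unfolding csum_def cscale_def cdelta_def by (intro sum.cong refl) auto
  also have "\<dots> = (\<Sum>i\<in>{i\<in>?S. fst i = x \<and> fst (snd i) = y}. c x y (snd (snd i)) * dv x y (snd (snd i)) m)"
    by (rule sum.mono_neutral_cong_right) (use finS in auto)
  also have "\<dots> = c x y m"
  proof (cases "(x, y) \<in> csupp c")
    case True
    have e: "{i\<in>?S. fst i = x \<and> fst (snd i) = y} = (\<lambda>g. (x, y, g)) ` B x y"
    proof
      show "{i\<in>?S. fst i = x \<and> fst (snd i) = y} \<subseteq> (\<lambda>g. (x, y, g)) ` B x y"
      proof
        fix i assume i: "i \<in> {i\<in>?S. fst i = x \<and> fst (snd i) = y}"
        obtain a b g where ii: "i = (a, b, g)" by (cases i) blast
        show "i \<in> (\<lambda>g. (x, y, g)) ` B x y" using i unfolding ii BT_def by (auto intro!: imageI)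
      qed
      show "(\<lambda>g. (x, y, g)) ` B x y \<subseteq> {i\<in>?S. fst i = x \<and> fst (snd i) = y}"
        using True unfolding BT_def by auto
    qed
    have "(\<Sum>i\<in>{i\<in>?S. fst i = x \<and> fst (snd i) = y}. c x y (snd (snd i)) * dv x y (snd (snd i)) m)
        = (\<Sum>g\<in>B x y. c x y g * dv x y g m)"
    proof -
      have inj: "inj_on (\<lambda>g. (x, y, g)) (B x y)" by (rule inj_onI) simp
      have "(\<Sum>i\<in>(\<lambda>g. (x, y, g)) ` B x y. c x y (snd (snd i)) * dv x y (snd (snd i)) m) = (\<Sum>g\<in>B x y. c x y g * dv x y g m)"
        by (rule sum.reindex_cong[OF inj refl]) simp
      then show ?thesis unfolding e .
    qed
    also have "\<dots> = c x y m" using dualsp_expand[OF Cset_dualsp[OF c], where m=m] by (simp add: mult.commute)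
    finally show ?thesis .
  next
    case False
    then have emp: "{i\<in>?S. fst i = x \<and> fst (snd i) = y} = {}" by auto
    show ?thesis unfolding emp using csupp_out[OF False, of m] by simp
  qed
  finally show "c x y m = csum ?S (\<lambda>i. cscale (c (fst i) (fst (snd i)) (snd (snd i))) (cdelta (fst i) (fst (snd i)) (dv (fst i) (fst (snd i)) (snd (snd i))))) x y m"
    by simp
qed

lemma homC_fam: assumes vs: "vector_space sP" and f: "f \<in> homC sM Hom sP"
  shows "f = fam sP BT fst (\<lambda>i. fst (snd i)) (\<lambda>i. snd (snd i)) (\<lambda>i. f (cdelta (fst i) (fst (snd i)) (dv (fst i) (fst (snd i)) (snd (snd i)))))"
proof
  fix c show "f c = fam sP BT fst (\<lambda>i. fst (snd i)) (\<lambda>i. snd (snd i)) (\<lambda>i. f (cdelta (fst i) (fst (snd i)) (dv (fst i) (fst (snd i)) (snd (snd i))))) c"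
  proof (cases "c \<in> Cset sM Hom")
    case False then show ?thesis using f by (simp add: fam_out homC_def)
  next
    case True
    let ?S = "{i\<in>BT. (fst i, fst (snd i)) \<in> csupp c}"
    let ?cc = "\<lambda>i. cscale (c (fst i) (fst (snd i)) (snd (snd i))) (cdelta (fst i) (fst (snd i)) (dv (fst i) (fst (snd i)) (snd (snd i))))"
    have finS: "finite ?S" by (rule famok_fin[OF famok_BT Cset_fin[OF True]])
    have ccC: "?cc i \<in> Cset sM Hom" for i by (rule cscale_Cset, rule cdelta_Cset, rule dv_dualsp)
    have "f c = f (csum ?S ?cc)" using c_expand[OF True] by simp
    also have "\<dots> = (\<Sum>i\<in>?S. f (?cc i))" using homC_csum[OF vs f finS ccC] by simp
    also have "\<dots> = (\<Sum>i\<in>?S. sP (c (fst i) (fst (snd i)) (snd (snd i))) (f (cdelta (fst i) (fst (snd i)) (dv (fst i) (fst (snd i)) (snd (snd i))))))"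
      using f cdelta_Cset[OF dv_dualsp] unfolding homC_def by simp
    also have "\<dots> = fam sP BT fst (\<lambda>i. fst (snd i)) (\<lambda>i. snd (snd i)) (\<lambda>i. f (cdelta (fst i) (fst (snd i)) (dv (fst i) (fst (snd i)) (snd (snd i))))) c"
      unfolding fam_def using True by simp
    finally show ?thesis .
  qed
qed

lemma fam_merge:
  assumes vs: "vector_space sR" and okK: "famok K srcK tgtK morK" and okI: "famok I src tgt mor"
    and phi: "\<And>k. k \<in> K \<Longrightarrow> \<phi> k \<in> I \<and> srcK k = src (\<phi> k) \<and> tgtK k = tgt (\<phi> k) \<and> valK k = val (\<phi> k)"
    and sum: "\<And>i. i \<in> I \<Longrightarrow> mor i = (\<Sum>k\<in>{k\<in>K. \<phi> k = i}. morK k)"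
  shows "fam sR K srcK tgtK morK valK = fam sR I src tgt mor val"
proof
  fix c show "fam sR K srcK tgtK morK valK c = fam sR I src tgt mor val c"
  proof (cases "c \<in> Cset sM Hom")
    case False then show ?thesis by (simp add: fam_out)
  next
    case True
    let ?SK = "{k\<in>K. (srcK k, tgtK k) \<in> csupp c}" and ?SI = "{i\<in>I. (src i, tgt i) \<in> csupp c}"
    have fK: "finite ?SK" by (rule famok_fin[OF okK Cset_fin[OF True]])
    have fI: "finite ?SI" by (rule famok_fin[OF okI Cset_fin[OF True]])
    have "fam sR K srcK tgtK morK valK c = (\<Sum>k\<in>?SK. sR (c (srcK k) (tgtK k) (morK k)) (valK k))"
      unfolding fam_def using True by simp
    also have "\<dots> = (\<Sum>i\<in>?SI. \<Sum>k\<in>{k. k \<in> ?SK \<and> \<phi> k = i}. sR (c (srcK k) (tgtK k) (morK k)) (valK k))"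
      by (rule sum.group[symmetric, OF fK fI]) (use phi in auto)
    also have "\<dots> = (\<Sum>i\<in>?SI. sR (c (src i) (tgt i) (mor i)) (val i))"
    proof (rule sum.cong[OF refl])
      fix i assume i: "i \<in> ?SI"
      have e: "{k. k \<in> ?SK \<and> \<phi> k = i} = {k\<in>K. \<phi> k = i}" using i phi by auto
      have fin: "finite {k\<in>K. \<phi> k = i}" using fK e by (metis (no_types, lifting) finite_subset mem_Collect_eq subsetI)
      have "(\<Sum>k\<in>{k. k \<in> ?SK \<and> \<phi> k = i}. sR (c (srcK k) (tgtK k) (morK k)) (valK k))
          = (\<Sum>k\<in>{k\<in>K. \<phi> k = i}. sR (c (src i) (tgt i) (morK k)) (val i))"
        unfolding e by (rule sum.cong[OF refl]) (use phi in auto)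
      also have "\<dots> = sR (\<Sum>k\<in>{k\<in>K. \<phi> k = i}. c (src i) (tgt i) (morK k)) (val i)"
        by (simp add: module.scale_sum_left[OF vsm[OF vs]])
      also have "(\<Sum>k\<in>{k\<in>K. \<phi> k = i}. c (src i) (tgt i) (morK k)) = c (src i) (tgt i) (\<Sum>k\<in>{k\<in>K. \<phi> k = i}. morK k)"
        by (rule dualsp_sum[OF Cset_dualsp[OF True], symmetric]) (use phi famok_Hom[OF okK] in force)
      also have "\<dots> = c (src i) (tgt i) (mor i)" using sum i by simp
      finally show "(\<Sum>k\<in>{k. k \<in> ?SK \<and> \<phi> k = i}. sR (c (srcK k) (tgtK k) (morK k)) (valK k)) = sR (c (src i) (tgt i) (mor i)) (val i)" .
    qed
    also have "\<dots> = fam sR I src tgt mor val c" unfolding fam_def using True by simp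
    finally show ?thesis .
  qed
qed

definition BTy :: "'o \<Rightarrow> ('o \<times> 'o \<times> 'm) set" where "BTy y = {i. fst (snd i) = y \<and> snd (snd i) \<in> B (fst i) y}"

lemma famok_BTy: "famok (BTy y) fst (\<lambda>_. y) (\<lambda>i. snd (snd i))"
proof (rule famokI)
  fix i assume "i \<in> BTy y" then show "snd (snd i) \<in> Hom (fst i) y" unfolding BTy_def by (auto intro: hb_Hom)
next
  fix a b
  have "{i \<in> BTy y. fst i = a \<and> y = b} \<subseteq> (\<lambda>g. (a, y, g)) ` B a y" unfolding BTy_def by (auto simp: image_iff)
  then show "finite {i \<in> BTy y. fst i = a \<and> y = b}" by (rule finite_subset) (simp add: hbasis_finite)
qed

lemma rebase:
  assumes vsP: "vector_space sP" and vsR: "vector_space sR" and okJ: "famok (J::'j set) srcJ (\<lambda>_. y) morJ"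
    and V: "\<And>j. j \<in> J \<Longrightarrow> valJ j \<in> V (srcJ j)"
    and L: "\<And>a (S::'j set) k v. finite S \<Longrightarrow> (\<And>s. s \<in> S \<Longrightarrow> v s \<in> V a) \<Longrightarrow> L a (\<Sum>s\<in>S. sP (k s) (v s)) = (\<Sum>s\<in>S. sR (k s) (L a (v s)))"
  shows "fam sR (BTy y) fst (\<lambda>_. y) (\<lambda>i. snd (snd i))
           (\<lambda>i. L (fst i) (\<Sum>j\<in>{j\<in>J. srcJ j = fst i}. sP (dv (fst i) y (snd (snd i)) (morJ j)) (valJ j)))
       = fam sR J srcJ (\<lambda>_. y) morJ (\<lambda>j. L (srcJ j) (valJ j))"
proof
  fix c
  show "fam sR (BTy y) fst (\<lambda>_. y) (\<lambda>i. snd (snd i))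
           (\<lambda>i. L (fst i) (\<Sum>j\<in>{j\<in>J. srcJ j = fst i}. sP (dv (fst i) y (snd (snd i)) (morJ j)) (valJ j))) c
       = fam sR J srcJ (\<lambda>_. y) morJ (\<lambda>j. L (srcJ j) (valJ j)) c"
  proof (cases "c \<in> Cset sM Hom")
    case False then show ?thesis by (simp add: fam_out)
  next
    case True
    let ?A = "{a. (a, y) \<in> csupp c}"
    have fA: "finite ?A"
    proof -
      have "?A = fst ` {p\<in>csupp c. snd p = y}" by (auto simp: image_iff)
      then show ?thesis using Cset_fin[OF True] by simp
    qed
    let ?SB = "{i\<in>BTy y. (fst i, y) \<in> csupp c}" and ?SJ = "{j\<in>J. (srcJ j, y) \<in> csupp c}"
    have fB: "finite ?SB" by (rule famok_fin[OF famok_BTy Cset_fin[OF True]])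
    have fJ: "finite ?SJ" by (rule famok_fin[OF okJ Cset_fin[OF True]])
    have fJa: "finite {j\<in>J. srcJ j = a}" for a
      using famok_fin1[OF okJ, of a y] by simp
    have "fam sR (BTy y) fst (\<lambda>_. y) (\<lambda>i. snd (snd i))
           (\<lambda>i. L (fst i) (\<Sum>j\<in>{j\<in>J. srcJ j = fst i}. sP (dv (fst i) y (snd (snd i)) (morJ j)) (valJ j))) c
       = (\<Sum>i\<in>?SB. sR (c (fst i) y (snd (snd i))) (L (fst i) (\<Sum>j\<in>{j\<in>J. srcJ j = fst i}. sP (dv (fst i) y (snd (snd i)) (morJ j)) (valJ j))))"
      unfolding fam_def using True by simp
    also have "\<dots> = (\<Sum>a\<in>?A. \<Sum>i\<in>{i. i \<in> ?SB \<and> fst i = a}. sR (c (fst i) y (snd (snd i))) (L (fst i) (\<Sum>j\<in>{j\<in>J. srcJ j = fst i}. sP (dv (fst i) y (snd (snd i)) (morJ j)) (valJ j))))"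
      by (rule sum.group[symmetric, OF fB fA]) auto
    also have "\<dots> = (\<Sum>a\<in>?A. \<Sum>j\<in>{j. j \<in> ?SJ \<and> srcJ j = a}. sR (c a y (morJ j)) (L a (valJ j)))"
    proof (rule sum.cong[OF refl])
      fix a assume a: "a \<in> ?A"
      have e: "{i. i \<in> ?SB \<and> fst i = a} = (\<lambda>g. (a, y, g)) ` B a y"
      proof
        show "{i. i \<in> ?SB \<and> fst i = a} \<subseteq> (\<lambda>g. (a, y, g)) ` B a y"
        proof
          fix i assume i: "i \<in> {i. i \<in> ?SB \<and> fst i = a}"
          obtain a' b g where ii: "i = (a', b, g)" by (cases i) blast
          show "i \<in> (\<lambda>g. (a, y, g)) ` B a y" using i unfolding ii BTy_def by (auto intro!: imageI)
        qed
        show "(\<lambda>g. (a, y, g)) ` B a y \<subseteq> {i. i \<in> ?SB \<and> fst i = a}"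
          using a unfolding BTy_def by auto
      qed
      have e2: "{j. j \<in> ?SJ \<and> srcJ j = a} = {j\<in>J. srcJ j = a}" using a by auto
      have "(\<Sum>i\<in>{i. i \<in> ?SB \<and> fst i = a}. sR (c (fst i) y (snd (snd i))) (L (fst i) (\<Sum>j\<in>{j\<in>J. srcJ j = fst i}. sP (dv (fst i) y (snd (snd i)) (morJ j)) (valJ j))))
          = (\<Sum>g\<in>B a y. sR (c a y g) (L a (\<Sum>j\<in>{j\<in>J. srcJ j = a}. sP (dv a y g (morJ j)) (valJ j))))"
      proof -
        have inj: "inj_on (\<lambda>g. (a, y, g)) (B a y)" by (rule inj_onI) simp
        show ?thesis unfolding e by (rule sum.reindex_cong[OF inj refl]) simp
      qed
      also have "\<dots> = (\<Sum>g\<in>B a y. sR (c a y g) (\<Sum>j\<in>{j\<in>J. srcJ j = a}. sR (dv a y g (morJ j)) (L a (valJ j))))"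
        by (rule sum.cong[OF refl], rule arg_cong[where f="sR _"], rule L[OF fJa]) (use V in auto)
      also have "\<dots> = (\<Sum>j\<in>{j\<in>J. srcJ j = a}. sR (\<Sum>g\<in>B a y. dv a y g (morJ j) * c a y g) (L a (valJ j)))"
      proof -
        have "(\<Sum>g\<in>B a y. sR (c a y g) (\<Sum>j\<in>{j\<in>J. srcJ j = a}. sR (dv a y g (morJ j)) (L a (valJ j))))
           = (\<Sum>g\<in>B a y. \<Sum>j\<in>{j\<in>J. srcJ j = a}. sR (dv a y g (morJ j) * c a y g) (L a (valJ j)))"
          by (simp add: module.scale_sum_right[OF vsm[OF vsR]] module.scale_scale[OF vsm[OF vsR]] mult.commute)
        also have "\<dots> = (\<Sum>j\<in>{j\<in>J. srcJ j = a}. \<Sum>g\<in>B a y. sR (dv a y g (morJ j) * c a y g) (L a (valJ j)))"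
          by (rule sum.swap)
        also have "\<dots> = (\<Sum>j\<in>{j\<in>J. srcJ j = a}. sR (\<Sum>g\<in>B a y. dv a y g (morJ j) * c a y g) (L a (valJ j)))"
          by (simp add: module.scale_sum_left[OF vsm[OF vsR]])
        finally show ?thesis .
      qed
      also have "\<dots> = (\<Sum>j\<in>{j. j \<in> ?SJ \<and> srcJ j = a}. sR (c a y (morJ j)) (L a (valJ j)))"
        unfolding e2 by (rule sum.cong[OF refl]) (simp add: dualsp_expand[OF Cset_dualsp[OF True], symmetric])
      finally show "(\<Sum>i\<in>{i. i \<in> ?SB \<and> fst i = a}. sR (c (fst i) y (snd (snd i))) (L (fst i) (\<Sum>j\<in>{j\<in>J. srcJ j = fst i}. sP (dv (fst i) y (snd (snd i)) (morJ j)) (valJ j))))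
          = (\<Sum>j\<in>{j. j \<in> ?SJ \<and> srcJ j = a}. sR (c a y (morJ j)) (L a (valJ j)))" .
    qed
    also have "\<dots> = (\<Sum>a\<in>?A. \<Sum>j\<in>{j. j \<in> ?SJ \<and> srcJ j = a}. sR (c (srcJ j) y (morJ j)) (L (srcJ j) (valJ j)))"
      by (rule sum.cong[OF refl], rule sum.cong[OF refl]) auto
    also have "\<dots> = (\<Sum>j\<in>?SJ. sR (c (srcJ j) y (morJ j)) (L (srcJ j) (valJ j)))"
      by (rule sum.group[OF fJ fA]) auto
    also have "\<dots> = fam sR J srcJ (\<lambda>_. y) morJ (\<lambda>j. L (srcJ j) (valJ j)) c"
      unfolding fam_def using True by simp
    finally show ?thesis .
  qed
qed

end

context kcat begin
lemma precle_refl: "precle Hom x x"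
  by (rule precle_nz[OF idm_Hom idm_nz])
lemma precle_trans: "precle Hom x y \<Longrightarrow> precle Hom y z \<Longrightarrow> precle Hom x z"
  unfolding precle_def by (rule trancl_trans)
lemma precl_precle: "precl Hom x y \<Longrightarrow> precle Hom x y"
  unfolding precl_def by blast
lemma precl_not: "precl Hom x y \<Longrightarrow> \<not> precle Hom y x"
  unfolding precl_def by blast
end

context kcontra begin

lemma pi_single: "\<pi> (fam sP {i} src tgt mor val) = act (src i) (tgt i) (mor i) (val i)"
  unfolding act_fam fam_single[OF vsP] by simp

lemma pi_fam_finite: assumes fin: "finite I" and ok: "famok I src tgt mor"
  shows "\<pi> (fam sP I src tgt mor val) = (\<Sum>i\<in>I. act (src i) (tgt i) (mor i) (val i))"
proof -
  have "\<pi> (fam sP I src tgt mor val) = \<pi> (\<lambda>c. \<Sum>i\<in>I. fam sP {i} src tgt mor val c)"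
    unfolding fam_finite[OF vsP fin] ..
  also have "\<dots> = (\<Sum>i\<in>I. \<pi> (fam sP {i} src tgt mor val))"
    by (rule pi_sum[OF fin], rule fam_homC[OF vsP], rule famok_single, rule famok_Hom[OF ok])
  finally show ?thesis by (simp add: pi_single)
qed

lemma nakayama:
  fixes D :: "'o \<Rightarrow> 'p set"
  assumes DQ: "\<And>y d. d \<in> D y \<Longrightarrow> ee y d = d"
    and step: "\<And>y d. d \<in> D y \<Longrightarrow> \<exists>Os ds. finite (Os::('o \<times> 'm) set) \<and>
        (\<forall>ob\<in>Os. precl Hom (fst ob) y \<and> snd ob \<in> Hom (fst ob) y \<and> ds ob \<in> D (fst ob)) \<and>
        d = (\<Sum>ob\<in>Os. act (fst ob) y (snd ob) (ds ob))"
    and d0: "d0 \<in> D y0"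
  shows "d0 = 0"
proof -
  have "\<forall>yd. \<exists>p. snd yd \<in> D (fst yd) \<longrightarrow> finite (fst p) \<and>
        (\<forall>ob\<in>fst p. precl Hom (fst ob) (fst yd) \<and> snd ob \<in> Hom (fst ob) (fst yd) \<and> snd p ob \<in> D (fst ob)) \<and>
        snd yd = (\<Sum>ob\<in>fst p. act (fst ob) (fst yd) (snd ob) (snd p ob))"
  proof
    fix yd :: "'o \<times> 'p"
    show "\<exists>p. snd yd \<in> D (fst yd) \<longrightarrow> finite (fst p) \<and>
        (\<forall>ob\<in>fst p. precl Hom (fst ob) (fst yd) \<and> snd ob \<in> Hom (fst ob) (fst yd) \<and> snd p ob \<in> D (fst ob)) \<and>
        snd yd = (\<Sum>ob\<in>fst p. act (fst ob) (fst yd) (snd ob) (snd p ob))"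
    proof (cases "snd yd \<in> D (fst yd)")
      case True
      from step[OF True] obtain Os ds where H: "finite (Os::('o \<times> 'm) set) \<and>
        (\<forall>ob\<in>Os. precl Hom (fst ob) (fst yd) \<and> snd ob \<in> Hom (fst ob) (fst yd) \<and> ds ob \<in> D (fst ob)) \<and>
        snd yd = (\<Sum>ob\<in>Os. act (fst ob) (fst yd) (snd ob) (ds ob))"
        by (elim exE)
      show ?thesis by (rule exI[of _ "(Os, ds)"]) (use H in auto)
    next
      case False then show ?thesis by simp
    qed
  qed
  then have "\<exists>ch. \<forall>yd. snd yd \<in> D (fst yd) \<longrightarrow> finite (fst (ch yd)) \<and>
        (\<forall>ob\<in>fst (ch yd). precl Hom (fst ob) (fst yd) \<and> snd ob \<in> Hom (fst ob) (fst yd) \<and> snd (ch yd) ob \<in> D (fst ob)) \<and>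
        snd yd = (\<Sum>ob\<in>fst (ch yd). act (fst ob) (fst yd) (snd ob) (snd (ch yd) ob))"
    by (rule choice)
  then obtain ch where ch: "\<forall>yd. snd yd \<in> D (fst yd) \<longrightarrow> finite (fst (ch yd)) \<and>
        (\<forall>ob\<in>fst (ch yd). precl Hom (fst ob) (fst yd) \<and> snd ob \<in> Hom (fst ob) (fst yd) \<and> snd (ch yd) ob \<in> D (fst ob)) \<and>
        snd yd = (\<Sum>ob\<in>fst (ch yd). act (fst ob) (fst yd) (snd ob) (snd (ch yd) ob))"
    by (elim exE)
  define OF where "OF y d = fst (ch (y, d))" for y d
  define DS where "DS y d = snd (ch (y, d))" for y d
  have chOF: "finite (OF y d)" "\<And>ob. ob \<in> OF y d \<Longrightarrow> precl Hom (fst ob) y \<and> snd ob \<in> Hom (fst ob) y \<and> DS y d ob \<in> D (fst ob)"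
     "d = (\<Sum>ob\<in>OF y d. act (fst ob) y (snd ob) (DS y d ob))" if "d \<in> D y" for y d
    using ch[rule_format, of "(y, d)"] that unfolding OF_def DS_def by auto
  define nd where "nd = rec_list (y0, idm y0, d0) (\<lambda>ob ps r. (fst ob, cmp (fst ob) (fst r) y0 (fst (snd r)) (snd ob), DS (fst r) (snd (snd r)) ob))"
  have nd_Nil: "nd [] = (y0, idm y0, d0)" unfolding nd_def by simp
  have nd_Cons: "nd (ob # ps) = (fst ob, cmp (fst ob) (fst (nd ps)) y0 (fst (snd (nd ps))) (snd ob), DS (fst (nd ps)) (snd (snd (nd ps))) ob)" for ob ps
    unfolding nd_def by simp
  define valid where "valid = rec_list True (\<lambda>ob ps r. r \<and> ob \<in> OF (fst (nd ps)) (snd (snd (nd ps))))"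
  have valid_Nil: "valid []" unfolding valid_def by simp
  have valid_Cons: "valid (ob # ps) \<longleftrightarrow> valid ps \<and> ob \<in> OF (fst (nd ps)) (snd (snd (nd ps)))" for ob ps
    unfolding valid_def by simp
  let ?w = "\<lambda>ps. fst (nd ps)" and ?m = "\<lambda>ps. fst (snd (nd ps))" and ?v = "\<lambda>ps. snd (snd (nd ps))"
  let ?Int = "\<lambda>w. {z. precle Hom w z \<and> precle Hom z y0}"
  have inv: "valid ps \<Longrightarrow> ?v ps \<in> D (?w ps) \<and> ?m ps \<in> Hom (?w ps) y0 \<and> precle Hom (?w ps) y0 \<and> length ps \<le> card (?Int (?w ps))" for ps
  proof (induction ps)
    case Nil then show ?case using d0 idm_Hom precle_refl by (simp add: nd_Nil)
  next
    case (Cons ob ps)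
    then have vps: "valid ps" and oO: "ob \<in> OF (?w ps) (?v ps)" using valid_Cons by auto
    have IH: "?v ps \<in> D (?w ps)" "?m ps \<in> Hom (?w ps) y0" "precle Hom (?w ps) y0" "length ps \<le> card (?Int (?w ps))"
      using Cons.IH[OF vps] by auto
    have co: "precl Hom (fst ob) (?w ps)" "snd ob \<in> Hom (fst ob) (?w ps)" "DS (?w ps) (?v ps) ob \<in> D (fst ob)"
      using chOF(2)[OF IH(1) oO] by auto
    have w': "?w (ob # ps) = fst ob" by (simp add: nd_Cons)
    have p1: "precle Hom (fst ob) y0" using precle_trans[OF precl_precle[OF co(1)] IH(3)] .
    have sub: "insert (fst ob) (?Int (?w ps)) \<subseteq> ?Int (fst ob)"
      using precle_refl p1 precle_trans[OF precl_precle[OF co(1)]] by auto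
    have notin: "fst ob \<notin> ?Int (?w ps)" using precl_not[OF co(1)] by auto
    have fin: "finite (?Int (fst ob))" by (rule Z_finite)
    have "card (insert (fst ob) (?Int (?w ps))) \<le> card (?Int (fst ob))" by (rule card_mono[OF fin sub])
    moreover have "finite (?Int (?w ps))" by (rule Z_finite)
    ultimately have "Suc (card (?Int (?w ps))) \<le> card (?Int (fst ob))" using notin by simp
    then show ?case
      using co IH p1 w' by (simp add: nd_Cons cmp_Hom)
  qed
  let ?I = "{ps. valid ps}"
  have finlen: "finite {ps. valid ps \<and> length ps \<le> n}" for n
  proof (induction n)
    case 0
    have "{ps. valid ps \<and> length ps \<le> 0} \<subseteq> {[]}" by auto
    then show ?case by (rule finite_subset) simp
  next
    case (Suc n)
    have "{ps. valid ps \<and> length ps \<le> Suc n} \<subseteq> {[]} \<union> (\<Union>ps\<in>{ps. valid ps \<and> length ps \<le> n}. (\<lambda>ob. ob # ps) ` OF (?w ps) (?v ps))"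
    proof
      fix qs assume qs: "qs \<in> {ps. valid ps \<and> length ps \<le> Suc n}"
      show "qs \<in> {[]} \<union> (\<Union>ps\<in>{ps. valid ps \<and> length ps \<le> n}. (\<lambda>ob. ob # ps) ` OF (?w ps) (?v ps))"
      proof (cases qs)
        case Nil then show ?thesis by simp
      next
        case (Cons ob ps)
        then show ?thesis using qs valid_Cons by auto
      qed
    qed
    moreover have "finite ({[]} \<union> (\<Union>ps\<in>{ps. valid ps \<and> length ps \<le> n}. (\<lambda>ob. ob # ps) ` OF (?w ps) (?v ps)))"
      using Suc chOF(1) inv by auto
    ultimately show ?case by (rule finite_subset)
  qed
  have okI: "famok ?I ?w (\<lambda>_. y0) ?m"
  proof (rule famokI)
    fix ps assume "ps \<in> ?I" then show "?m ps \<in> Hom (?w ps) y0" using inv by auto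
  next
    fix a b
    have "{ps \<in> ?I. ?w ps = a \<and> y0 = b} \<subseteq> {ps. valid ps \<and> length ps \<le> card (?Int a)}" using inv by auto
    then show "finite {ps \<in> ?I. ?w ps = a \<and> y0 = b}" by (rule finite_subset) (rule finlen)
  qed
  let ?J = "\<lambda>ps. OF (?w ps) (?v ps)"
  let ?K = "{k. fst k \<in> ?I \<and> snd k \<in> ?J (fst k) \<and> ?w (fst k) = ?w (fst k)}"
  have okJ: "famok (?J ps) (\<lambda>ob. fst ob) (\<lambda>ob. ?w ps) (\<lambda>ob. snd ob)" if "ps \<in> ?I" for ps
  proof (rule famokI)
    have vD: "?v ps \<in> D (?w ps)" using inv that by auto
    fix ob assume "ob \<in> ?J ps" then show "snd ob \<in> Hom (fst ob) (?w ps)" using chOF(2)[OF vD] by auto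
  next
    have vD: "?v ps \<in> D (?w ps)" using inv that by auto
    fix a b show "finite {ob \<in> ?J ps. fst ob = a \<and> ?w ps = b}" using chOF(1)[OF vD] by auto
  qed
  have Kimg: "?K = (\<lambda>q. (tl q, hd q)) ` (?I - {[]})"
  proof
    show "?K \<subseteq> (\<lambda>q. (tl q, hd q)) ` (?I - {[]})"
    proof
      fix k assume k: "k \<in> ?K"
      then have "snd k # fst k \<in> ?I - {[]}" using valid_Cons by auto
      moreover have "k = (tl (snd k # fst k), hd (snd k # fst k))" by simp
      ultimately show "k \<in> (\<lambda>q. (tl q, hd q)) ` (?I - {[]})" by (rule rev_image_eqI)
    qed
    show "(\<lambda>q. (tl q, hd q)) ` (?I - {[]}) \<subseteq> ?K"
    proof
      fix k assume "k \<in> (\<lambda>q. (tl q, hd q)) ` (?I - {[]})"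
      then obtain q where q: "q \<in> ?I" "q \<noteq> []" and kq: "k = (tl q, hd q)" by blast
      obtain ob ps where qc: "q = ob # ps" using q(2) by (cases q) auto
      show "k \<in> ?K" using q kq valid_Cons unfolding qc by auto
    qed
  qed
  have finK: "finite {k \<in> ?K. fst (snd k) = a \<and> y0 = b}" for a b
  proof -
    have "{k \<in> ?K. fst (snd k) = a \<and> y0 = b} \<subseteq> (\<lambda>q. (tl q, hd q)) ` {ps \<in> ?I. ?w ps = a \<and> y0 = b}"
    proof
      fix k assume k: "k \<in> {k \<in> ?K. fst (snd k) = a \<and> y0 = b}"
      then have "snd k # fst k \<in> {ps \<in> ?I. ?w ps = a \<and> y0 = b}" using valid_Cons by (auto simp: nd_Cons)
      moreover have "k = (tl (snd k # fst k), hd (snd k # fst k))" by simp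
      ultimately show "k \<in> (\<lambda>q. (tl q, hd q)) ` {ps \<in> ?I. ?w ps = a \<and> y0 = b}" by (rule rev_image_eqI)
    qed
    then show ?thesis by (rule finite_subset) (use famok_fin1[OF okI] in blast)
  qed
  have "\<pi> (fam sP ?I ?w (\<lambda>_. y0) ?m (\<lambda>ps. \<pi> (fam sP (?J ps) (\<lambda>ob. fst ob) (\<lambda>ob. ?w ps) (\<lambda>ob. snd ob) (\<lambda>ob. DS (?w ps) (?v ps) ob))))
     = \<pi> (fam sP ?K (\<lambda>k. fst (snd k)) (\<lambda>k. y0) (\<lambda>k. cmp (fst (snd k)) (?w (fst k)) y0 (?m (fst k)) (snd (snd k)))
           (\<lambda>k. DS (?w (fst k)) (?v (fst k)) (snd k)))"
    by (rule assoc[OF okI okJ refl finK])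
  also have "fam sP ?I ?w (\<lambda>_. y0) ?m (\<lambda>ps. \<pi> (fam sP (?J ps) (\<lambda>ob. fst ob) (\<lambda>ob. ?w ps) (\<lambda>ob. snd ob) (\<lambda>ob. DS (?w ps) (?v ps) ob)))
     = fam sP ?I ?w (\<lambda>_. y0) ?m ?v"
  proof (rule fam_cong[OF refl])
    fix ps assume ps: "ps \<in> ?I"
    have vD: "?v ps \<in> D (?w ps)" using inv ps by auto
    have "\<pi> (fam sP (?J ps) (\<lambda>ob. fst ob) (\<lambda>ob. ?w ps) (\<lambda>ob. snd ob) (\<lambda>ob. DS (?w ps) (?v ps) ob))
        = (\<Sum>ob\<in>?J ps. act (fst ob) (?w ps) (snd ob) (DS (?w ps) (?v ps) ob))"
      by (rule pi_fam_finite[OF chOF(1)[OF vD] okJ[OF ps]])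
    also have "\<dots> = ?v ps" using chOF(3)[OF vD] by simp
    finally show "?w ps = ?w ps \<and> y0 = y0 \<and> ?m ps = ?m ps \<and> \<pi> (fam sP (?J ps) (\<lambda>ob. fst ob) (\<lambda>ob. ?w ps) (\<lambda>ob. snd ob) (\<lambda>ob. DS (?w ps) (?v ps) ob)) = ?v ps"
      by simp
  qed
  also have "fam sP ?K (\<lambda>k. fst (snd k)) (\<lambda>k. y0) (\<lambda>k. cmp (fst (snd k)) (?w (fst k)) y0 (?m (fst k)) (snd (snd k)))
           (\<lambda>k. DS (?w (fst k)) (?v (fst k)) (snd k)) = fam sP (?I - {[]}) ?w (\<lambda>_. y0) ?m ?v"
  proof -
    have inj: "inj_on (\<lambda>k. snd k # fst k) ?K" by (rule inj_onI) auto
    have img: "(\<lambda>k. snd k # fst k) ` ?K = ?I - {[]}"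
    proof
      show "(\<lambda>k. snd k # fst k) ` ?K \<subseteq> ?I - {[]}" using valid_Cons by auto
      show "?I - {[]} \<subseteq> (\<lambda>k. snd k # fst k) ` ?K"
      proof
        fix q assume q: "q \<in> ?I - {[]}"
        then obtain ob ps where qc: "q = ob # ps" by (cases q) auto
        have "(ps, ob) \<in> ?K" using q valid_Cons unfolding qc by auto
        then show "q \<in> (\<lambda>k. snd k # fst k) ` ?K" unfolding qc by (rule rev_image_eqI) simp
      qed
    qed
    have "fam sP (?I - {[]}) ?w (\<lambda>_. y0) ?m ?v = fam sP ((\<lambda>k. snd k # fst k) ` ?K) ?w (\<lambda>_. y0) ?m ?v"
      unfolding img ..
    also have "\<dots> = fam sP ?K (?w \<circ> (\<lambda>k. snd k # fst k)) ((\<lambda>_. y0) \<circ> (\<lambda>k. snd k # fst k)) (?m \<circ> (\<lambda>k. snd k # fst k)) (?v \<circ> (\<lambda>k. snd k # fst k))"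
      by (rule fam_reindex[OF inj])
    also have "\<dots> = fam sP ?K (\<lambda>k. fst (snd k)) (\<lambda>k. y0) (\<lambda>k. cmp (fst (snd k)) (?w (fst k)) y0 (?m (fst k)) (snd (snd k)))
           (\<lambda>k. DS (?w (fst k)) (?v (fst k)) (snd k))"
      by (rule fam_cong[OF refl]) (simp add: nd_Cons)
    finally show ?thesis by simp
  qed
  finally have eq: "\<pi> (fam sP ?I ?w (\<lambda>_. y0) ?m ?v) = \<pi> (fam sP (?I - {[]}) ?w (\<lambda>_. y0) ?m ?v)" .
  have split: "fam sP ?I ?w (\<lambda>_. y0) ?m ?v = (\<lambda>c. fam sP (?I - {[]}) ?w (\<lambda>_. y0) ?m ?v c + fam sP {[]} ?w (\<lambda>_. y0) ?m ?v c)"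
  proof -
    have Ieq: "?I = (?I - {[]}) \<union> {[]}" using valid_Nil by auto
    have "fam sP ?I ?w (\<lambda>_. y0) ?m ?v = fam sP ((?I - {[]}) \<union> {[]}) ?w (\<lambda>_. y0) ?m ?v"
      using Ieq by (rule arg_cong[where f="\<lambda>S. fam sP S ?w (\<lambda>_. y0) ?m ?v"])
    also have "\<dots> = (\<lambda>c. fam sP (?I - {[]}) ?w (\<lambda>_. y0) ?m ?v c + fam sP {[]} ?w (\<lambda>_. y0) ?m ?v c)"
      by (rule fam_union[OF vsP]) (use okI valid_Nil in \<open>auto intro: famok_subset\<close>)
    finally show ?thesis .
  qed
  have "\<pi> (fam sP ?I ?w (\<lambda>_. y0) ?m ?v) = \<pi> (fam sP (?I - {[]}) ?w (\<lambda>_. y0) ?m ?v) + \<pi> (fam sP {[]} ?w (\<lambda>_. y0) ?m ?v)"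
    unfolding split by (rule pi_add; rule fam_homC[OF vsP]; rule famok_subset[OF okI]; use valid_Nil in auto)
  then have "\<pi> (fam sP {[]} ?w (\<lambda>_. y0) ?m ?v) = 0" using eq by simp
  moreover have "\<pi> (fam sP {[]} ?w (\<lambda>_. y0) ?m ?v) = d0"
    unfolding pi_single using DQ[OF d0] by (simp add: nd_Nil ee_act)
  ultimately show ?thesis by simp
qed

end

locale kpair = P: kcontra sM Hom cmp idm sP \<pi>P + Q: kcontra sM Hom cmp idm sQ \<pi>Q
  for sM :: "'k::field \<Rightarrow> 'm::ab_group_add \<Rightarrow> 'm" and Hom :: "'o \<Rightarrow> 'o \<Rightarrow> 'm set"
    and cmp :: "'o \<Rightarrow> 'o \<Rightarrow> 'o \<Rightarrow> 'm \<Rightarrow> 'm \<Rightarrow> 'm" and idm :: "'o \<Rightarrow> 'm"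
    and sP :: "'k \<Rightarrow> 'p::ab_group_add \<Rightarrow> 'p" and \<pi>P :: "(('o \<Rightarrow> 'o \<Rightarrow> 'm \<Rightarrow> 'k) \<Rightarrow> 'p) \<Rightarrow> 'p"
    and sQ :: "'k \<Rightarrow> 'q::ab_group_add \<Rightarrow> 'q" and \<pi>Q :: "(('o \<Rightarrow> 'o \<Rightarrow> 'm \<Rightarrow> 'k) \<Rightarrow> 'q) \<Rightarrow> 'q" +
  fixes t :: "'o \<Rightarrow> 'p \<Rightarrow> 'q"
  assumes slf: "left_strictly_locally_finite sM Hom cmp"
    and mm: "module_mor Hom sP (Theta_obj sM Hom idm sP \<pi>P) (Theta_act sM Hom sP \<pi>P)
                              sQ (Theta_obj sM Hom idm sQ \<pi>Q) (Theta_act sM Hom sQ \<pi>Q) t"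
begin

abbreviation PT where "PT y \<equiv> Theta_obj sM Hom idm sP \<pi>P y"
abbreviation QT where "QT y \<equiv> Theta_obj sM Hom idm sQ \<pi>Q y"

lemma t_in: "p \<in> PT x \<Longrightarrow> t x p \<in> QT x" using mm unfolding module_mor_def by blast
lemma t_add: "p \<in> PT x \<Longrightarrow> p' \<in> PT x \<Longrightarrow> t x (p + p') = t x p + t x p'" using mm unfolding module_mor_def by blast
lemma t_scale: "p \<in> PT x \<Longrightarrow> t x (sP a p) = sQ a (t x p)" using mm unfolding module_mor_def by blast
lemma t_act: "p \<in> PT x \<Longrightarrow> f \<in> Hom x y \<Longrightarrow> t y (P.act x y f p) = Q.act x y f (t x p)"
  using mm unfolding module_mor_def Theta_act_def by blast
lemma t_zero: "t x 0 = 0" using t_add[OF P.Theta_zero P.Theta_zero] by simp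
lemma t_diff: "p \<in> PT x \<Longrightarrow> p' \<in> PT x \<Longrightarrow> t x (p - p') = t x p - t x p'"
  using t_add[of "p - p'" x p'] P.Theta_diff by fastforce
lemma t_sum: "(\<And>s. s \<in> S \<Longrightarrow> v s \<in> PT x) \<Longrightarrow> t x (\<Sum>s\<in>S. v s) = (\<Sum>s\<in>S. t x (v s))"
proof (induction S rule: infinite_finite_induct)
  case (infinite A) then show ?case by (simp add: t_zero)
next
  case empty then show ?case by (simp add: t_zero)
next
  case (insert s F)
  then show ?case by (simp add: t_add P.Theta_sum)
qed
lemma t_lin: "(\<And>s. s \<in> S \<Longrightarrow> v s \<in> PT a) \<Longrightarrow> t a (\<Sum>s\<in>S. sP (k s) (v s)) = (\<Sum>s\<in>S. sQ (k s) (t a (v s)))"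
  by (subst t_sum) (auto simp: P.Theta_scale t_scale)

lemma t_fin:
  assumes fin: "finite I" and ok: "P.famok I src (\<lambda>_. y) mor" and v: "\<And>i. i \<in> I \<Longrightarrow> val i \<in> PT (src i)"
  shows "t y (\<pi>P (kcat.fam sM Hom sP I src (\<lambda>_. y) mor val)) = \<pi>Q (kcat.fam sM Hom sQ I src (\<lambda>_. y) mor (\<lambda>i. t (src i) (val i)))"
proof -
  have "t y (\<pi>P (kcat.fam sM Hom sP I src (\<lambda>_. y) mor val)) = t y (\<Sum>i\<in>I. P.act (src i) y (mor i) (val i))"
    by (simp add: P.pi_fam_finite[OF fin ok])
  also have "\<dots> = (\<Sum>i\<in>I. t y (P.act (src i) y (mor i) (val i)))"
    by (rule t_sum, rule P.act_Theta, rule P.famok_Hom[OF ok, simplified])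
  also have "\<dots> = (\<Sum>i\<in>I. Q.act (src i) y (mor i) (t (src i) (val i)))"
    by (rule sum.cong[OF refl], rule t_act[OF v], assumption, rule P.famok_Hom[OF ok, simplified])
  also have "\<dots> = \<pi>Q (kcat.fam sM Hom sQ I src (\<lambda>_. y) mor (\<lambda>i. t (src i) (val i)))"
    by (simp add: Q.pi_fam_finite[OF fin ok])
  finally show ?thesis .
qed

definition good where "good y I src mor val \<longleftrightarrow> P.famok I src (\<lambda>_. y) mor \<and> (\<forall>i\<in>I. val i \<in> PT (src i))"

definition dfct where "dfct y I src mor val =
   t y (\<pi>P (kcat.fam sM Hom sP I src (\<lambda>_. y) mor val)) - \<pi>Q (kcat.fam sM Hom sQ I src (\<lambda>_. y) mor (\<lambda>i. t (src i) (val i)))"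

definition Dset where "Dset y = {d. \<exists>(I::('o \<times> 'o \<times> 'm) set) src mor val. good y I src mor val \<and>
    (\<forall>i\<in>I. precl Hom (src i) y) \<and> d = dfct y I src mor val}"

lemma good_sub: "good y I src mor val \<Longrightarrow> J \<subseteq> I \<Longrightarrow> good y J src mor val"
  unfolding good_def using P.famok_subset by blast

lemma PT_col: "good y I src mor val \<Longrightarrow> \<pi>P (kcat.fam sM Hom sP I src (\<lambda>_. y) mor val) \<in> PT y"
  unfolding good_def by (rule P.col_Theta) auto

lemma QT_col: "good y I src mor val \<Longrightarrow> \<pi>Q (kcat.fam sM Hom sQ I src (\<lambda>_. y) mor v) \<in> QT y"
  unfolding good_def by (rule Q.col_Theta) auto

lemma dfct_QT: "good y I src mor val \<Longrightarrow> dfct y I src mor val \<in> QT y"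
  unfolding dfct_def by (rule Q.Theta_diff, rule t_in, erule PT_col, erule QT_col)

lemma dfct_split:
  assumes g: "good y (I1 \<union> I2) src mor val" and dis: "I1 \<inter> I2 = {}"
  shows "dfct y (I1 \<union> I2) src mor val = dfct y I1 src mor val + dfct y I2 src mor val"
proof -
  have g1: "good y I1 src mor val" and g2: "good y I2 src mor val" using good_sub[OF g] by auto
  have ok: "P.famok (I1 \<union> I2) src (\<lambda>_. y) mor" using g unfolding good_def by blast
  have ok1: "P.famok I1 src (\<lambda>_. y) mor" and ok2: "P.famok I2 src (\<lambda>_. y) mor" using g1 g2 unfolding good_def by blast+
  have eP: "\<pi>P (kcat.fam sM Hom sP (I1 \<union> I2) src (\<lambda>_. y) mor val) = \<pi>P (kcat.fam sM Hom sP I1 src (\<lambda>_. y) mor val) + \<pi>P (kcat.fam sM Hom sP I2 src (\<lambda>_. y) mor val)"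
    unfolding P.fam_union[OF P.vsP ok dis] by (rule P.pi_add; rule P.fam_homC[OF P.vsP]; fact)
  have eQ: "\<pi>Q (kcat.fam sM Hom sQ (I1 \<union> I2) src (\<lambda>_. y) mor (\<lambda>i. t (src i) (val i))) = \<pi>Q (kcat.fam sM Hom sQ I1 src (\<lambda>_. y) mor (\<lambda>i. t (src i) (val i))) + \<pi>Q (kcat.fam sM Hom sQ I2 src (\<lambda>_. y) mor (\<lambda>i. t (src i) (val i)))"
    unfolding P.fam_union[OF Q.vsP ok dis] by (rule Q.pi_add; rule P.fam_homC[OF Q.vsP]; fact)
  show ?thesis unfolding dfct_def eP eQ t_add[OF PT_col[OF g1] PT_col[OF g2]] by simp
qed

lemma dfct_nz: assumes g: "good y I src mor val"
  shows "dfct y I src mor val = dfct y {i\<in>I. mor i \<noteq> 0} src mor val"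
proof -
  have ok: "P.famok I src (\<lambda>_. y) mor" using g unfolding good_def by blast
  show ?thesis unfolding dfct_def P.fam_nz[OF P.vsP ok] P.fam_nz[OF Q.vsP ok] ..
qed

lemma dfct_fin0: assumes g: "good y I src mor val" and fin: "finite I"
  shows "dfct y I src mor val = 0"
  unfolding dfct_def using t_fin[OF fin] g unfolding good_def by simp

lemma dfct_low: assumes g: "good y I src mor val"
  shows "dfct y I src mor val = dfct y {i\<in>I. mor i \<noteq> 0 \<and> precl Hom (src i) y} src mor val"
proof -
  have ok: "P.famok I src (\<lambda>_. y) mor" using g unfolding good_def by blast
  let ?N = "{i\<in>I. mor i \<noteq> 0}" and ?L = "{i\<in>I. mor i \<noteq> 0 \<and> precl Hom (src i) y}" and ?H = "{i\<in>I. mor i \<noteq> 0 \<and> \<not> precl Hom (src i) y}"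
  have NLH: "?N = ?H \<union> ?L" by auto
  have dis: "?H \<inter> ?L = {}" by auto
  have finH: "finite ?H"
  proof -
    have "?H \<subseteq> (\<Union>a\<in>{z. precle Hom y z \<and> precle Hom z y}. {i\<in>I. src i = a \<and> y = y})"
    proof
      fix i assume i: "i \<in> ?H"
      have m: "mor i \<in> Hom (src i) y" using P.famok_Hom[OF ok] i by auto
      have p: "precle Hom (src i) y" using P.precle_nz[OF m] i by auto
      then have "precle Hom y (src i)" using i unfolding precl_def by auto
      then show "i \<in> (\<Union>a\<in>{z. precle Hom y z \<and> precle Hom z y}. {i\<in>I. src i = a \<and> y = y})" using p i by auto
    qed
    moreover have "finite (\<Union>a\<in>{z. precle Hom y z \<and> precle Hom z y}. {i\<in>I. src i = a \<and> y = y})"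
      using P.Z_finite P.famok_fin1[OF ok] by blast
    ultimately show ?thesis by (rule finite_subset)
  qed
  have gN: "good y ?N src mor val" by (rule good_sub[OF g]) auto
  have "dfct y I src mor val = dfct y ?N src mor val" by (rule dfct_nz[OF g])
  also have "\<dots> = dfct y (?H \<union> ?L) src mor val" using NLH by (rule arg_cong[where f="\<lambda>S. dfct y S src mor val"])
  also have "\<dots> = dfct y ?H src mor val + dfct y ?L src mor val"
    by (rule dfct_split[OF _ dis]) (use gN NLH in simp)
  also have "dfct y ?H src mor val = 0" by (rule dfct_fin0[OF good_sub[OF g] finH]) auto
  finally show ?thesis by simp
qed

lemma dfct_any:
  assumes g: "good y (J::'j set) srcJ morJ valJ"
  shows "dfct y J srcJ morJ valJ \<in> Dset y"
proof -
  have okJ: "P.famok J srcJ (\<lambda>_. y) morJ" and vJ: "\<And>j. j \<in> J \<Longrightarrow> valJ j \<in> PT (srcJ j)" using g unfolding good_def by auto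
  define val' where "val' i = (\<Sum>j\<in>{j\<in>J. srcJ j = fst i}. sP (P.dv (fst i) y (snd (snd i)) (morJ j)) (valJ j))" for i :: "'o \<times> 'o \<times> 'm"
  have v'PT: "val' i \<in> PT (fst i)" for i unfolding val'_def
  proof (rule P.Theta_sum, rule P.Theta_scale)
    fix j assume "j \<in> {j\<in>J. srcJ j = fst i}"
    then show "valJ j \<in> PT (fst i)" using vJ[of j] by auto
  qed
  have gB: "good y (P.BTy y) fst (\<lambda>i. snd (snd i)) val'" unfolding good_def using P.famok_BTy v'PT by auto
  have eP: "kcat.fam sM Hom sP (P.BTy y) fst (\<lambda>_. y) (\<lambda>i. snd (snd i)) (\<lambda>i. (\<lambda>a p. p) (fst i) (val' i)) = kcat.fam sM Hom sP J srcJ (\<lambda>_. y) morJ (\<lambda>j. (\<lambda>a p. p) (srcJ j) (valJ j))"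
    unfolding val'_def by (rule P.rebase[OF P.vsP P.vsP okJ, where V="\<lambda>_. UNIV"]) auto
  have eQ: "kcat.fam sM Hom sQ (P.BTy y) fst (\<lambda>_. y) (\<lambda>i. snd (snd i)) (\<lambda>i. t (fst i) (val' i)) = kcat.fam sM Hom sQ J srcJ (\<lambda>_. y) morJ (\<lambda>j. t (srcJ j) (valJ j))"
    unfolding val'_def by (rule P.rebase[OF P.vsP Q.vsP okJ, where V="PT"], rule vJ, assumption, rule t_lin, blast)
  have "dfct y J srcJ morJ valJ = dfct y (P.BTy y) fst (\<lambda>i. snd (snd i)) val'"
    unfolding dfct_def using eP eQ by simp
  also have "\<dots> = dfct y {i\<in>P.BTy y. snd (snd i) \<noteq> 0 \<and> precl Hom (fst i) y} fst (\<lambda>i. snd (snd i)) val'"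
    by (rule dfct_low[OF gB])
  finally have eq: "dfct y J srcJ morJ valJ = dfct y {i\<in>P.BTy y. snd (snd i) \<noteq> 0 \<and> precl Hom (fst i) y} fst (\<lambda>i. snd (snd i)) val'" .
  have gL: "good y {i\<in>P.BTy y. snd (snd i) \<noteq> 0 \<and> precl Hom (fst i) y} fst (\<lambda>i. snd (snd i)) val'"
    by (rule good_sub[OF gB]) auto
  have pL: "\<forall>i\<in>{i\<in>P.BTy y. snd (snd i) \<noteq> 0 \<and> precl Hom (fst i) y}. precl Hom (fst i) y" by auto
  show ?thesis unfolding Dset_def mem_Collect_eq
    by (rule exI[of _ "{i\<in>P.BTy y. snd (snd i) \<noteq> 0 \<and> precl Hom (fst i) y}"], rule exI[of _ fst],
        rule exI[of _ "\<lambda>i. snd (snd i)"], rule exI[of _ val'], intro conjI, rule gL, rule pL, rule eq)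
qed

end

context kpair begin

lemma dstep:
  assumes d: "d \<in> Dset y"
  shows "\<exists>Os ds. finite (Os::('o \<times> 'm) set) \<and> (\<forall>ob\<in>Os. precl Hom (fst ob) y \<and> snd ob \<in> Hom (fst ob) y \<and> ds ob \<in> Dset (fst ob))
           \<and> d = (\<Sum>ob\<in>Os. Q.act (fst ob) y (snd ob) (ds ob))"
proof -
  obtain I :: "('o \<times> 'o \<times> 'm) set" and src mor val where g: "good y I src mor val" and lo: "\<forall>i\<in>I. precl Hom (src i) y"
    and dd: "d = dfct y I src mor val"
    using d unfolding Dset_def by blast
  have okI: "P.famok I src (\<lambda>_. y) mor" and vI: "\<And>i. i \<in> I \<Longrightarrow> val i \<in> PT (src i)" using g unfolding good_def by auto
  obtain X where Xfin: "finite X" and Xl: "\<forall>x\<in>X. precl Hom x y"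
    and Xf: "\<forall>z f. precl Hom z y \<longrightarrow> f \<in> Hom z y \<longrightarrow>
           (\<exists>(n::nat) xs g h. (\<forall>i<n. xs i \<in> X \<and> g i \<in> Hom z (xs i) \<and> h i \<in> Hom (xs i) y) \<and>
               f = (\<Sum>i<n. cmp z (xs i) y (h i) (g i)))"
    using slf unfolding left_strictly_locally_finite_def by blast
  have "\<forall>i. \<exists>q. i \<in> I \<longrightarrow> (\<forall>k<(fst q::nat). fst (snd q) k \<in> X \<and> fst (snd (snd q)) k \<in> Hom (src i) (fst (snd q) k) \<and> snd (snd (snd q)) k \<in> Hom (fst (snd q) k) y) \<and>
               mor i = (\<Sum>k<fst q. cmp (src i) (fst (snd q) k) y (snd (snd (snd q)) k) (fst (snd (snd q)) k))"
  proof
    fix i show "\<exists>q. i \<in> I \<longrightarrow> (\<forall>k<(fst q::nat). fst (snd q) k \<in> X \<and> fst (snd (snd q)) k \<in> Hom (src i) (fst (snd q) k) \<and> snd (snd (snd q)) k \<in> Hom (fst (snd q) k) y) \<and>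
               mor i = (\<Sum>k<fst q. cmp (src i) (fst (snd q) k) y (snd (snd (snd q)) k) (fst (snd (snd q)) k))"
    proof (cases "i \<in> I")
      case True
      have "mor i \<in> Hom (src i) y" using P.famok_Hom[OF okI True] by simp
      then obtain n xs gg hh where H: "(\<forall>k<(n::nat). xs k \<in> X \<and> gg k \<in> Hom (src i) (xs k) \<and> hh k \<in> Hom (xs k) y) \<and>
               mor i = (\<Sum>k<n. cmp (src i) (xs k) y (hh k) (gg k))"
        using Xf lo True by blast
      show ?thesis by (rule exI[of _ "(n, xs, gg, hh)"]) (use H in simp)
    next
      case False then show ?thesis by simp
    qed
  qed
  then have "\<exists>Fq. \<forall>i. i \<in> I \<longrightarrow> (\<forall>k<(fst (Fq i)::nat). fst (snd (Fq i)) k \<in> X \<and> fst (snd (snd (Fq i))) k \<in> Hom (src i) (fst (snd (Fq i)) k) \<and> snd (snd (snd (Fq i))) k \<in> Hom (fst (snd (Fq i)) k) y) \<and>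
               mor i = (\<Sum>k<fst (Fq i). cmp (src i) (fst (snd (Fq i)) k) y (snd (snd (snd (Fq i))) k) (fst (snd (snd (Fq i))) k))"
    by (rule choice)
  then obtain Fq where Fq: "\<forall>i. i \<in> I \<longrightarrow> (\<forall>k<(fst (Fq i)::nat). fst (snd (Fq i)) k \<in> X \<and> fst (snd (snd (Fq i))) k \<in> Hom (src i) (fst (snd (Fq i)) k) \<and> snd (snd (snd (Fq i))) k \<in> Hom (fst (snd (Fq i)) k) y) \<and>
               mor i = (\<Sum>k<fst (Fq i). cmp (src i) (fst (snd (Fq i)) k) y (snd (snd (snd (Fq i))) k) (fst (snd (snd (Fq i))) k))"
    by (elim exE)
  define nn where "nn i = fst (Fq i)" for i
  define xx where "xx i = fst (snd (Fq i))" for i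
  define gg where "gg i = fst (snd (snd (Fq i)))" for i
  define hh where "hh i = snd (snd (snd (Fq i)))" for i
  have fac: "\<And>i k. i \<in> I \<Longrightarrow> k < nn i \<Longrightarrow> xx i k \<in> X \<and> gg i k \<in> Hom (src i) (xx i k) \<and> hh i k \<in> Hom (xx i k) y"
    and facm: "\<And>i. i \<in> I \<Longrightarrow> mor i = (\<Sum>k<nn i. cmp (src i) (xx i k) y (hh i k) (gg i k))"
    using Fq unfolding nn_def xx_def gg_def hh_def by auto
  define Os where "Os = Sigma X (\<lambda>x'. hbasis sM Hom x' y)"
  have Osfin: "finite Os" unfolding Os_def using Xfin P.hbasis_finite by auto
  have Os_Hom: "snd ob \<in> Hom (fst ob) y" if "ob \<in> Os" for ob using that P.hb_Hom unfolding Os_def by auto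
  have Os_lo: "precl Hom (fst ob) y" if "ob \<in> Os" for ob using that Xl unfolding Os_def by auto
  define J where "J ob = {ik. fst ik \<in> I \<and> snd ik < nn (fst ik) \<and> xx (fst ik) (snd ik) = fst ob}" for ob :: "'o \<times> 'm"
  define srcJ where "srcJ ik = src (fst ik)" for ik :: "('o \<times> 'o \<times> 'm) \<times> nat"
  define morJ where "morJ ob ik = sM (P.dv (fst ob) y (snd ob) (hh (fst ik) (snd ik))) (gg (fst ik) (snd ik))" for ob :: "'o \<times> 'm" and ik :: "('o \<times> 'o \<times> 'm) \<times> nat"
  define valJ where "valJ ik = val (fst ik)" for ik :: "('o \<times> 'o \<times> 'm) \<times> nat"
  have finIa: "finite {ik. fst ik \<in> I \<and> src (fst ik) = a \<and> snd ik < nn (fst ik)}" for a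
  proof -
    have "{ik. fst ik \<in> I \<and> src (fst ik) = a \<and> snd ik < nn (fst ik)} \<subseteq> Sigma {i\<in>I. src i = a \<and> y = y} (\<lambda>i. {..<nn i})" by auto
    moreover have "finite (Sigma {i\<in>I. src i = a \<and> y = y} (\<lambda>i. {..<nn i}))"
      by (rule finite_SigmaI) (use P.famok_fin1[OF okI, of a y] in auto)
    ultimately show ?thesis by (rule finite_subset)
  qed
  have okJ: "P.famok (J ob) srcJ (\<lambda>_. fst ob) (morJ ob)" for ob
  proof (rule P.famokI)
    fix ik assume "ik \<in> J ob"
    then have a: "fst ik \<in> I" "snd ik < nn (fst ik)" "xx (fst ik) (snd ik) = fst ob" unfolding J_def by auto
    have "gg (fst ik) (snd ik) \<in> Hom (src (fst ik)) (xx (fst ik) (snd ik))" using fac[OF a(1) a(2)] by blast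
    then have "gg (fst ik) (snd ik) \<in> Hom (src (fst ik)) (fst ob)" unfolding a(3) .
    then show "morJ ob ik \<in> Hom (srcJ ik) (fst ob)" unfolding morJ_def srcJ_def by (rule P.Hom_scale)
  next
    fix a b
    have "{ik \<in> J ob. srcJ ik = a \<and> fst ob = b} \<subseteq> {ik. fst ik \<in> I \<and> src (fst ik) = a \<and> snd ik < nn (fst ik)}"
      unfolding J_def srcJ_def by auto
    then show "finite {ik \<in> J ob. srcJ ik = a \<and> fst ob = b}" by (rule finite_subset) (rule finIa)
  qed
  have gJ: "good (fst ob) (J ob) srcJ (morJ ob) valJ" for ob
    unfolding good_def using okJ vI unfolding J_def srcJ_def valJ_def by auto
  define ds where "ds ob = dfct (fst ob) (J ob) srcJ (morJ ob) valJ" for ob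
  have dsD: "ds ob \<in> Dset (fst ob)" for ob unfolding ds_def by (rule dfct_any[OF gJ])
  have okO: "P.famok Os fst (\<lambda>_. y) snd"
    by (rule P.famokI) (use Os_Hom Osfin in auto)
  let ?K = "{k. fst k \<in> Os \<and> snd k \<in> J (fst k) \<and> fst (fst k) = fst (fst k)}"
  have finK: "finite {k \<in> ?K. srcJ (snd k) = a \<and> y = b}" for a b
  proof -
    have "{k \<in> ?K. srcJ (snd k) = a \<and> y = b} \<subseteq> Os \<times> {ik. fst ik \<in> I \<and> src (fst ik) = a \<and> snd ik < nn (fst ik)}"
      unfolding J_def srcJ_def by auto
    then show ?thesis by (rule finite_subset) (use Osfin finIa in auto)
  qed
  let ?sK = "\<lambda>k. srcJ (snd k)" and ?mK = "\<lambda>k. cmp (srcJ (snd k)) (fst (fst k)) y (snd (fst k)) (morJ (fst k) (snd k))"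
  have okK: "P.famok ?K ?sK (\<lambda>k. y) ?mK"
  proof (rule P.famokI)
    fix k assume k: "k \<in> ?K"
    have k1: "fst k \<in> Os" and k2: "snd k \<in> J (fst k)" using k by auto
    show "?mK k \<in> Hom (?sK k) y"
      by (rule P.cmp_Hom, rule P.famok_Hom[OF okJ k2, simplified], rule Os_Hom[OF k1])
  next
    fix a b show "finite {k \<in> ?K. ?sK k = a \<and> y = b}" by (rule finK)
  qed
  have merge_sum: "mor i = (\<Sum>k\<in>{k\<in>?K. fst (snd k) = i}. ?mK k)" if i: "i \<in> I" for i
  proof -
    let ?f = "\<lambda>p. ((xx i (fst p), snd p), (i, fst p))"
    let ?S = "Sigma {..<nn i} (\<lambda>kk. hbasis sM Hom (xx i kk) y)"
    have img: "{k\<in>?K. fst (snd k) = i} = ?f ` ?S"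
    proof
      show "{k\<in>?K. fst (snd k) = i} \<subseteq> ?f ` ?S"
      proof
        fix k assume k: "k \<in> {k\<in>?K. fst (snd k) = i}"
        obtain x' b i' kk where kk: "k = ((x', b), (i', kk))" by (cases k) auto
        have "i' = i" "kk < nn i" "xx i kk = x'" "b \<in> hbasis sM Hom x' y"
          using k unfolding kk J_def Os_def by auto
        then show "k \<in> ?f ` ?S" unfolding kk by (intro rev_image_eqI[of "(kk, b)"]) auto
      qed
      show "?f ` ?S \<subseteq> {k\<in>?K. fst (snd k) = i}"
        unfolding J_def Os_def using fac[OF i] i by auto
    qed
    have inj: "inj_on ?f ?S" by (rule inj_onI) (auto simp: prod_eq_iff)
    have "(\<Sum>k\<in>{k\<in>?K. fst (snd k) = i}. ?mK k) = (\<Sum>p\<in>?S. ?mK (?f p))"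
      unfolding img by (rule sum.reindex[OF inj, unfolded comp_def])
    also have "\<dots> = (\<Sum>kk<nn i. \<Sum>b\<in>hbasis sM Hom (xx i kk) y. ?mK (?f (kk, b)))"
    proof -
      have "(\<Sum>kk<nn i. \<Sum>b\<in>hbasis sM Hom (xx i kk) y. ?mK (?f (kk, b))) = (\<Sum>(kk, b)\<in>?S. ?mK (?f (kk, b)))"
        by (rule sum.Sigma) (auto simp: P.hbasis_finite)
      then show ?thesis by (simp add: split_beta)
    qed
    also have "\<dots> = (\<Sum>kk<nn i. cmp (src i) (xx i kk) y (hh i kk) (gg i kk))"
    proof (rule sum.cong[OF refl])
      fix kk assume kk: "kk \<in> {..<nn i}"
      have fk: "xx i kk \<in> X" "gg i kk \<in> Hom (src i) (xx i kk)" "hh i kk \<in> Hom (xx i kk) y" using fac[OF i] kk by auto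
      have "(\<Sum>b\<in>hbasis sM Hom (xx i kk) y. ?mK (?f (kk, b)))
          = (\<Sum>b\<in>hbasis sM Hom (xx i kk) y. cmp (src i) (xx i kk) y (sM (P.dv (xx i kk) y b (hh i kk)) b) (gg i kk))"
        unfolding morJ_def srcJ_def
        by (rule sum.cong[OF refl]) (simp add: P.cmp_scale_r[OF fk(2) P.hb_Hom] P.cmp_scale_l[OF fk(2) P.hb_Hom])
      also have "\<dots> = cmp (src i) (xx i kk) y (\<Sum>b\<in>hbasis sM Hom (xx i kk) y. sM (P.dv (xx i kk) y b (hh i kk)) b) (gg i kk)"
        by (rule P.cmp_sum_l[symmetric]) (auto intro: P.Hom_scale P.hb_Hom fk(2))
      also have "\<dots> = cmp (src i) (xx i kk) y (hh i kk) (gg i kk)" by (simp add: P.expand[OF fk(3)])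
      finally show "(\<Sum>b\<in>hbasis sM Hom (xx i kk) y. ?mK (?f (kk, b))) = cmp (src i) (xx i kk) y (hh i kk) (gg i kk)" .
    qed
    also have "\<dots> = mor i" using facm[OF i] by simp
    finally show ?thesis by simp
  qed
  have phi: "\<And>k. k \<in> ?K \<Longrightarrow> fst (snd k) \<in> I \<and> ?sK k = src (fst (snd k)) \<and> y = y \<and> valJ (snd k) = val (fst (snd k))"
    unfolding J_def srcJ_def valJ_def by auto
  have mP: "kcat.fam sM Hom sP ?K ?sK (\<lambda>k. y) ?mK (\<lambda>k. valJ (snd k)) = kcat.fam sM Hom sP I src (\<lambda>_. y) mor val"
    by (rule P.fam_merge[OF P.vsP okK okI phi merge_sum])
  have mQ: "kcat.fam sM Hom sQ ?K ?sK (\<lambda>k. y) ?mK (\<lambda>k. t (srcJ (snd k)) (valJ (snd k))) = kcat.fam sM Hom sQ I src (\<lambda>_. y) mor (\<lambda>i. t (src i) (val i))"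
    by (rule P.fam_merge[OF Q.vsP okK okI _ merge_sum]) (use phi in auto)
  have aP: "\<pi>P (kcat.fam sM Hom sP Os fst (\<lambda>_. y) snd (\<lambda>ob. \<pi>P (kcat.fam sM Hom sP (J ob) srcJ (\<lambda>_. fst ob) (morJ ob) valJ)))
      = \<pi>P (kcat.fam sM Hom sP ?K ?sK (\<lambda>k. y) ?mK (\<lambda>k. valJ (snd k)))"
    by (rule P.assoc[OF okO okJ refl finK])
  have aQ: "\<pi>Q (kcat.fam sM Hom sQ Os fst (\<lambda>_. y) snd (\<lambda>ob. \<pi>Q (kcat.fam sM Hom sQ (J ob) srcJ (\<lambda>_. fst ob) (morJ ob) (\<lambda>ik. t (srcJ ik) (valJ ik)))))
      = \<pi>Q (kcat.fam sM Hom sQ ?K ?sK (\<lambda>k. y) ?mK (\<lambda>k. t (srcJ (snd k)) (valJ (snd k))))"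
    by (rule Q.assoc[OF okO okJ refl finK])
  let ?w = "\<lambda>ob. \<pi>P (kcat.fam sM Hom sP (J ob) srcJ (\<lambda>_. fst ob) (morJ ob) valJ)"
  let ?u = "\<lambda>ob. \<pi>Q (kcat.fam sM Hom sQ (J ob) srcJ (\<lambda>_. fst ob) (morJ ob) (\<lambda>ik. t (srcJ ik) (valJ ik)))"
  have wPT: "?w ob \<in> PT (fst ob)" for ob by (rule PT_col[OF gJ])
  have "d = t y (\<pi>P (kcat.fam sM Hom sP Os fst (\<lambda>_. y) snd ?w)) - \<pi>Q (kcat.fam sM Hom sQ Os fst (\<lambda>_. y) snd ?u)"
    unfolding dd dfct_def aP aQ mP mQ ..
  also have "t y (\<pi>P (kcat.fam sM Hom sP Os fst (\<lambda>_. y) snd ?w)) = \<pi>Q (kcat.fam sM Hom sQ Os fst (\<lambda>_. y) snd (\<lambda>ob. t (fst ob) (?w ob)))"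
    by (rule t_fin[OF Osfin okO wPT])
  also have "\<pi>Q (kcat.fam sM Hom sQ Os fst (\<lambda>_. y) snd (\<lambda>ob. t (fst ob) (?w ob))) - \<pi>Q (kcat.fam sM Hom sQ Os fst (\<lambda>_. y) snd ?u)
      = \<pi>Q (kcat.fam sM Hom sQ Os fst (\<lambda>_. y) snd (\<lambda>ob. t (fst ob) (?w ob) - ?u ob))"
    unfolding P.fam_diff_val[OF Q.vsP] by (rule Q.pi_diff[symmetric]; rule P.fam_homC[OF Q.vsP okO])
  also have "(\<lambda>ob. t (fst ob) (?w ob) - ?u ob) = ds" unfolding ds_def dfct_def by (rule ext) simp
  also have "\<pi>Q (kcat.fam sM Hom sQ Os fst (\<lambda>_. y) snd ds) = (\<Sum>ob\<in>Os. Q.act (fst ob) y (snd ob) (ds ob))"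
    by (rule Q.pi_fam_finite[OF Osfin okO])
  finally have "d = (\<Sum>ob\<in>Os. Q.act (fst ob) y (snd ob) (ds ob))" .
  then show ?thesis using Osfin Os_lo Os_Hom dsD by blast
qed

lemma core: assumes g: "good y J srcJ morJ valJ" shows "dfct y J srcJ morJ valJ = 0"
proof (rule Q.nakayama[where D=Dset])
  show "dfct y J srcJ morJ valJ \<in> Dset y" by (rule dfct_any[OF g])
next
  fix y' d assume "d \<in> Dset y'"
  then obtain I :: "('o \<times> 'o \<times> 'm) set" and src mor val where "good y' I src mor val" "d = dfct y' I src mor val" unfolding Dset_def by blast
  then have "d \<in> QT y'" using dfct_QT by simp
  then show "Q.ee y' d = d" using Q.Theta_iff by blast
next
  fix y' d assume "d \<in> Dset y'"
  then show "\<exists>Os ds. finite (Os::('o \<times> 'm) set) \<and> (\<forall>ob\<in>Os. precl Hom (fst ob) y' \<and> snd ob \<in> Hom (fst ob) y' \<and> ds ob \<in> Dset (fst ob))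
           \<and> d = (\<Sum>ob\<in>Os. Q.act (fst ob) y' (snd ob) (ds ob))" by (rule dstep)
qed

end

context kcat begin
lemma BT_mem: "(a, b, g) \<in> BT \<Longrightarrow> g \<in> Hom a b"
  unfolding BT_def by (auto intro: hb_Hom)
lemma lin_comp_fam:
  assumes vsP: "vector_space sP" and vsQ: "vector_space sQ"
    and add: "\<And>p p'. g (p + p') = g p + g p'" and sc: "\<And>a p. g (sP a p) = sQ a (g p)"
  shows "(\<lambda>c. g (fam sP I src tgt mor val c)) = fam sQ I src tgt mor (\<lambda>i. g (val i))"
proof
  have g0: "g 0 = 0" using add[of 0 0] by simp
  have gs: "g (\<Sum>s\<in>S. h s) = (\<Sum>s\<in>S. g (h s))" for S and h :: "_ \<Rightarrow> _"
    by (induction S rule: infinite_finite_induct) (auto simp: g0 add)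
  fix c show "g (fam sP I src tgt mor val c) = fam sQ I src tgt mor (\<lambda>i. g (val i)) c"
    unfolding fam_def by (auto simp: g0 gs sc)
qed
end

locale kpair0 = P: kcontra sM Hom cmp idm sP \<pi>P + Q: kcontra sM Hom cmp idm sQ \<pi>Q
  for sM :: "'k::field \<Rightarrow> 'm::ab_group_add \<Rightarrow> 'm" and Hom :: "'o \<Rightarrow> 'o \<Rightarrow> 'm set"
    and cmp :: "'o \<Rightarrow> 'o \<Rightarrow> 'o \<Rightarrow> 'm \<Rightarrow> 'm \<Rightarrow> 'm" and idm :: "'o \<Rightarrow> 'm"
    and sP :: "'k \<Rightarrow> 'p::ab_group_add \<Rightarrow> 'p" and \<pi>P :: "(('o \<Rightarrow> 'o \<Rightarrow> 'm \<Rightarrow> 'k) \<Rightarrow> 'p) \<Rightarrow> 'p"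
    and sQ :: "'k \<Rightarrow> 'q::ab_group_add \<Rightarrow> 'q" and \<pi>Q :: "(('o \<Rightarrow> 'o \<Rightarrow> 'm \<Rightarrow> 'k) \<Rightarrow> 'q) \<Rightarrow> 'q"
begin

lemma faithful:
  assumes g1: "contra_mor sM Hom sP \<pi>P sQ \<pi>Q g1" and g2: "contra_mor sM Hom sP \<pi>P sQ \<pi>Q g2"
    and agree: "\<forall>x. \<forall>p\<in>Theta_obj sM Hom idm sP \<pi>P x. g1 p = g2 p"
  shows "g1 = g2"
proof
  fix p
  have ok: "P.famok UNIV (\<lambda>x. x) (\<lambda>x. x) idm" by (rule P.famok_obj)
  have hom: "kcat.fam sM Hom sP UNIV (\<lambda>x. x) (\<lambda>x. x) idm (\<lambda>x. P.ee x p) \<in> homC sM Hom sP"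
    by (rule P.fam_homC[OF P.vsP ok])
  have gen: "g p = \<pi>Q (kcat.fam sM Hom sQ UNIV (\<lambda>x. x) (\<lambda>x. x) idm (\<lambda>x. g (P.ee x p)))"
    if g: "contra_mor sM Hom sP \<pi>P sQ \<pi>Q g" for g
  proof -
    have gd: "(\<forall>p p'. g (p + p') = g p + g p') \<and> (\<forall>a p. g (sP a p) = sQ a (g p)) \<and>
       (\<forall>f\<in>homC sM Hom sP. g (\<pi>P f) = \<pi>Q (g \<circ> f))" using g unfolding contra_mor_def .
    have add: "\<And>p p'. g (p + p') = g p + g p'" using gd[THEN conjunct1] by blast
    have sc: "\<And>a p. g (sP a p) = sQ a (g p)" using gd[THEN conjunct2, THEN conjunct1] by blast
    have cm: "g (\<pi>P f) = \<pi>Q (g \<circ> f)" if "f \<in> homC sM Hom sP" for f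
      using gd[THEN conjunct2, THEN conjunct2] that by (rule bspec)
    have e3: "g \<circ> kcat.fam sM Hom sP UNIV (\<lambda>x. x) (\<lambda>x. x) idm (\<lambda>x. P.ee x p) = kcat.fam sM Hom sQ UNIV (\<lambda>x. x) (\<lambda>x. x) idm (\<lambda>x. g (P.ee x p))"
    proof (rule ext)
      fix c show "(g \<circ> kcat.fam sM Hom sP UNIV (\<lambda>x. x) (\<lambda>x. x) idm (\<lambda>x. P.ee x p)) c = kcat.fam sM Hom sQ UNIV (\<lambda>x. x) (\<lambda>x. x) idm (\<lambda>x. g (P.ee x p)) c"
        using fun_cong[OF P.lin_comp_fam[where g=g and sP=sP and sQ=sQ and I=UNIV and src="\<lambda>x. x" and tgt="\<lambda>x. x" and mor=idm and val="\<lambda>x. P.ee x p", OF P.vsP Q.vsP add sc], of c] by simp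
    qed
    have "g p = g (\<pi>P (kcat.fam sM Hom sP UNIV (\<lambda>x. x) (\<lambda>x. x) idm (\<lambda>x. P.ee x p)))" by (simp only: P.decomp)
    also have "\<dots> = \<pi>Q (g \<circ> kcat.fam sM Hom sP UNIV (\<lambda>x. x) (\<lambda>x. x) idm (\<lambda>x. P.ee x p))" using hom by (rule cm)
    also have "\<dots> = \<pi>Q (kcat.fam sM Hom sQ UNIV (\<lambda>x. x) (\<lambda>x. x) idm (\<lambda>x. g (P.ee x p)))" unfolding e3 ..
    finally show ?thesis .
  qed
  have "(\<lambda>x. g1 (P.ee x p)) = (\<lambda>x. g2 (P.ee x p))" using agree P.Theta_ee by blast
  then show "g1 p = g2 p" using gen[OF g1] gen[OF g2] by simp
qed

end

context kpair begin

definition gmap where "gmap p = \<pi>Q (kcat.fam sM Hom sQ UNIV (\<lambda>x. x) (\<lambda>x. x) idm (\<lambda>x. t x (P.ee x p)))"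

lemma okobj: "P.famok UNIV (\<lambda>x. x) (\<lambda>x. x) idm" by (rule P.famok_obj)

lemma gmap_add: "gmap (p + p') = gmap p + gmap p'"
proof -
  have "(\<lambda>x. t x (P.ee x (p + p'))) = (\<lambda>x. t x (P.ee x p) + t x (P.ee x p'))"
    by (rule ext) (simp add: P.ee_add t_add P.Theta_ee)
  then show ?thesis unfolding gmap_def
    by (simp add: P.fam_add_val[OF Q.vsP] Q.pi_add P.fam_homC[OF Q.vsP okobj])
qed

lemma gmap_scale: "gmap (sP a p) = sQ a (gmap p)"
proof -
  have "(\<lambda>x. t x (P.ee x (sP a p))) = (\<lambda>x. sQ a (t x (P.ee x p)))"
    by (rule ext) (simp add: P.ee_scale t_scale P.Theta_ee)
  then show ?thesis unfolding gmap_def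
    by (simp add: P.fam_scale_val[OF Q.vsP] Q.pi_scale P.fam_homC[OF Q.vsP okobj])
qed

lemma gmap_agree: assumes p: "p \<in> PT x" shows "gmap p = t x p"
proof -
  have ep: "P.ee x p = p" using p P.Theta_iff by blast
  have z: "t z (P.ee z p) = 0" if "z \<in> UNIV - {x}" for z
  proof -
    have "P.ee z p = P.ee z (P.ee x p)" using ep by simp
    also have "\<dots> = 0" unfolding P.ee_act using that by (intro P.act_mismatch) (auto simp: P.idm_Hom)
    finally show ?thesis by (simp add: t_zero)
  qed
  have "gmap p = \<pi>Q (kcat.fam sM Hom sQ {x} (\<lambda>x. x) (\<lambda>x. x) idm (\<lambda>x. t x (P.ee x p)))"
    unfolding gmap_def by (subst P.fam_val0[OF Q.vsP okobj _ z]) auto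
  also have "\<dots> = Q.act x x (idm x) (t x p)" by (simp add: Q.pi_single ep)
  also have "\<dots> = t x p" using t_in[OF p] Q.Theta_iff Q.ee_act by metis
  finally show ?thesis .
qed

lemma gmap_comm: assumes f: "f \<in> homC sM Hom sP" shows "gmap (\<pi>P f) = \<pi>Q (gmap \<circ> f)"
proof -
  let ?fv = "\<lambda>i. f (cdelta (fst i) (fst (snd i)) (P.dv (fst i) (fst (snd i)) (snd (snd i))))"
  let ?tgt = "\<lambda>i::'o \<times> 'o \<times> 'm. fst (snd i)" and ?mor = "\<lambda>i::'o \<times> 'o \<times> 'm. snd (snd i)"
  let ?v = "\<lambda>i. t (fst i) (P.ee (fst i) (?fv i))"
  have fe: "f = kcat.fam sM Hom sP P.BT fst ?tgt ?mor ?fv" by (rule P.homC_fam[OF P.vsP f])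
  have okBT: "P.famok P.BT fst ?tgt ?mor" by (rule P.famok_BT)
  have "gmap \<circ> f = kcat.fam sM Hom sQ P.BT fst ?tgt ?mor (\<lambda>i. gmap (?fv i))"
  proof (rule ext)
    fix c
    have "(gmap \<circ> f) c = gmap (kcat.fam sM Hom sP P.BT fst ?tgt ?mor ?fv c)" using fe by (metis comp_apply)
    also have "\<dots> = kcat.fam sM Hom sQ P.BT fst ?tgt ?mor (\<lambda>i. gmap (?fv i)) c"
      using fun_cong[OF P.lin_comp_fam[where g=gmap and sP=sP and sQ=sQ and I=P.BT and src=fst and tgt="?tgt" and mor="?mor" and val="?fv", OF P.vsP Q.vsP gmap_add gmap_scale], of c] by simp
    finally show "(gmap \<circ> f) c = kcat.fam sM Hom sQ P.BT fst ?tgt ?mor (\<lambda>i. gmap (?fv i)) c" .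
  qed
  then have "\<pi>Q (gmap \<circ> f) = \<pi>Q (kcat.fam sM Hom sQ P.BT fst ?tgt ?mor (\<lambda>i. \<pi>Q (kcat.fam sM Hom sQ UNIV (\<lambda>x. x) (\<lambda>x. x) idm (\<lambda>x. t x (P.ee x (?fv i))))))"
    unfolding gmap_def by simp
  also have "\<dots> = \<pi>Q (kcat.fam sM Hom sQ {k. fst k \<in> P.BT \<and> snd k \<in> UNIV \<and> snd k = fst (fst k)} (\<lambda>k. snd k) (\<lambda>k. ?tgt (fst k))
        (\<lambda>k. cmp (snd k) (fst (fst k)) (?tgt (fst k)) (?mor (fst k)) (idm (snd k))) (\<lambda>k. t (snd k) (P.ee (snd k) (?fv (fst k)))))"
  proof (rule Q.assoc[OF okBT, where J="\<lambda>_. UNIV" and srcJ="\<lambda>_ x. x" and tgtJ="\<lambda>_ x. x" and morJ="\<lambda>_. idm"])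
    show "\<And>i. i \<in> P.BT \<Longrightarrow> P.famok UNIV (\<lambda>x. x) (\<lambda>x. x) idm" by (rule okobj)
    show "{k. fst k \<in> P.BT \<and> snd k \<in> UNIV \<and> snd k = fst (fst k)} = {k. fst k \<in> P.BT \<and> snd k \<in> UNIV \<and> snd k = fst (fst k)}" ..
    fix a b
    have "{k \<in> {k. fst k \<in> P.BT \<and> snd k \<in> UNIV \<and> snd k = fst (fst k)}. snd k = a \<and> ?tgt (fst k) = b}
        \<subseteq> (\<lambda>i. (i, a)) ` {i \<in> P.BT. fst i = a \<and> ?tgt i = b}" by (auto simp: image_iff)
    then show "finite {k \<in> {k. fst k \<in> P.BT \<and> snd k \<in> UNIV \<and> snd k = fst (fst k)}. snd k = a \<and> ?tgt (fst k) = b}"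
      by (rule finite_subset) (use P.famok_fin1[OF okBT] in blast)
  qed
  also have "{k. fst k \<in> P.BT \<and> snd k \<in> UNIV \<and> snd k = fst (fst k)} = (\<lambda>i. (i, fst i)) ` P.BT" by (auto simp: image_iff)
  also have "kcat.fam sM Hom sQ ((\<lambda>i. (i, fst i)) ` P.BT) (\<lambda>k. snd k) (\<lambda>k. ?tgt (fst k))
        (\<lambda>k. cmp (snd k) (fst (fst k)) (?tgt (fst k)) (?mor (fst k)) (idm (snd k))) (\<lambda>k. t (snd k) (P.ee (snd k) (?fv (fst k))))
      = kcat.fam sM Hom sQ P.BT fst ?tgt ?mor ?v"
    by (subst P.fam_reindex) (auto simp: inj_on_def comp_def P.cmp_id_r P.BT_mem intro!: P.fam_cong)
  finally have R: "\<pi>Q (gmap \<circ> f) = \<pi>Q (kcat.fam sM Hom sQ P.BT fst ?tgt ?mor ?v)" .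
  let ?J = "\<lambda>y. {i \<in> P.BT. ?tgt i = y}"
  have col: "t y (P.ee y (\<pi>P f)) = \<pi>Q (kcat.fam sM Hom sQ (?J y) fst ?tgt ?mor ?v)" for y
  proof -
    have okJ: "P.famok (?J y) fst (\<lambda>_. y) ?mor"
    proof (rule P.famokI)
      fix i assume "i \<in> ?J y" then show "?mor i \<in> Hom (fst i) y" using P.famok_Hom[OF okBT] by auto
    next
      fix a b have "{i \<in> ?J y. fst i = a \<and> y = b} \<subseteq> {i\<in>P.BT. fst i = a \<and> ?tgt i = b}" by auto
      then show "finite {i \<in> ?J y. fst i = a \<and> y = b}" by (rule finite_subset) (rule P.famok_fin1[OF okBT])
    qed
    have gJ: "good y (?J y) fst ?mor (\<lambda>i. P.ee (fst i) (?fv i))"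
      unfolding good_def using okJ P.Theta_ee by auto
    have "P.ee y (\<pi>P f) = \<pi>P (kcat.fam sM Hom sP (?J y) fst ?tgt ?mor ?fv)"
      by (subst fe, rule P.ee_fam[OF okBT])
    also have "\<dots> = \<pi>P (kcat.fam sM Hom sP (?J y) fst (\<lambda>_. y) ?mor ?fv)"
      by (rule arg_cong[where f=\<pi>P], rule P.fam_cong) auto
    also have "\<dots> = \<pi>P (kcat.fam sM Hom sP (?J y) fst (\<lambda>_. y) ?mor (\<lambda>i. P.ee (fst i) (?fv i)))"
      by (rule P.proj_vals[OF okJ, symmetric])
    finally have e1: "t y (P.ee y (\<pi>P f)) = t y (\<pi>P (kcat.fam sM Hom sP (?J y) fst (\<lambda>_. y) ?mor (\<lambda>i. P.ee (fst i) (?fv i))))" by simp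
    have "t y (\<pi>P (kcat.fam sM Hom sP (?J y) fst (\<lambda>_. y) ?mor (\<lambda>i. P.ee (fst i) (?fv i))))
        = \<pi>Q (kcat.fam sM Hom sQ (?J y) fst (\<lambda>_. y) ?mor ?v)"
      using core[OF gJ] unfolding dfct_def by simp
    also have "\<dots> = \<pi>Q (kcat.fam sM Hom sQ (?J y) fst ?tgt ?mor ?v)"
      by (rule arg_cong[where f=\<pi>Q], rule P.fam_cong) auto
    finally show ?thesis using e1 by simp
  qed
  have "gmap (\<pi>P f) = \<pi>Q (kcat.fam sM Hom sQ UNIV (\<lambda>x. x) (\<lambda>x. x) idm (\<lambda>y. \<pi>Q (kcat.fam sM Hom sQ (?J y) fst ?tgt ?mor ?v)))"
    unfolding gmap_def col ..
  also have "\<dots> = \<pi>Q (kcat.fam sM Hom sQ {k. fst k \<in> UNIV \<and> snd k \<in> ?J (fst k) \<and> ?tgt (snd k) = fst k} (\<lambda>k. fst (snd k)) (\<lambda>k. fst k)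
        (\<lambda>k. cmp (fst (snd k)) (fst k) (fst k) (idm (fst k)) (?mor (snd k))) (\<lambda>k. ?v (snd k)))"
  proof (rule Q.assoc[OF okobj, where J="?J" and srcJ="\<lambda>_. fst" and tgtJ="\<lambda>_. ?tgt" and morJ="\<lambda>_. ?mor" and valJ="\<lambda>_. ?v"])
    show "\<And>i. i \<in> UNIV \<Longrightarrow> P.famok (?J i) fst ?tgt ?mor" by (rule P.famok_subset[OF okBT]) auto
    show "{k. fst k \<in> UNIV \<and> snd k \<in> ?J (fst k) \<and> ?tgt (snd k) = fst k} = {k. fst k \<in> UNIV \<and> snd k \<in> ?J (fst k) \<and> ?tgt (snd k) = fst k}" ..
    fix a b
    have "{k \<in> {k. fst k \<in> UNIV \<and> snd k \<in> ?J (fst k) \<and> ?tgt (snd k) = fst k}. fst (snd k) = a \<and> fst k = b}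
        \<subseteq> (\<lambda>i. (b, i)) ` {i \<in> P.BT. fst i = a \<and> ?tgt i = b}" by (auto simp: image_iff)
    then show "finite {k \<in> {k. fst k \<in> UNIV \<and> snd k \<in> ?J (fst k) \<and> ?tgt (snd k) = fst k}. fst (snd k) = a \<and> fst k = b}"
      by (rule finite_subset) (use P.famok_fin1[OF okBT] in blast)
  qed
  also have "{k. fst k \<in> UNIV \<and> snd k \<in> ?J (fst k) \<and> ?tgt (snd k) = fst k} = (\<lambda>i. (?tgt i, i)) ` P.BT" by (auto simp: image_iff)
  also have "kcat.fam sM Hom sQ ((\<lambda>i. (?tgt i, i)) ` P.BT) (\<lambda>k. fst (snd k)) (\<lambda>k. fst k)
        (\<lambda>k. cmp (fst (snd k)) (fst k) (fst k) (idm (fst k)) (?mor (snd k))) (\<lambda>k. ?v (snd k))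
      = kcat.fam sM Hom sQ P.BT fst ?tgt ?mor ?v"
    by (subst P.fam_reindex) (auto simp: inj_on_def comp_def P.cmp_id_l P.BT_mem intro!: P.fam_cong)
  finally show ?thesis using R by simp
qed

lemma full: "\<exists>g. contra_mor sM Hom sP \<pi>P sQ \<pi>Q g \<and> (\<forall>x. \<forall>p\<in>Theta_obj sM Hom idm sP \<pi>P x. g p = t x p)"
proof (intro exI conjI)
  show "contra_mor sM Hom sP \<pi>P sQ \<pi>Q gmap"
    unfolding contra_mor_def using gmap_add gmap_scale gmap_comm by blast
  show "\<forall>x. \<forall>p\<in>Theta_obj sM Hom idm sP \<pi>P x. gmap p = t x p" using gmap_agree by blast
qed

end

theorem theorem3p7:
  fixes sM :: "'k::field \<Rightarrow> 'm::ab_group_add \<Rightarrow> 'm"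
    and Hom :: "'o \<Rightarrow> 'o \<Rightarrow> 'm set"
    and cmp :: "'o \<Rightarrow> 'o \<Rightarrow> 'o \<Rightarrow> 'm \<Rightarrow> 'm \<Rightarrow> 'm"
    and idm :: "'o \<Rightarrow> 'm"
    and sP :: "'k \<Rightarrow> 'p::ab_group_add \<Rightarrow> 'p"
    and \<pi>P :: "(('o \<Rightarrow> 'o \<Rightarrow> 'm \<Rightarrow> 'k) \<Rightarrow> 'p) \<Rightarrow> 'p"
    and sQ :: "'k \<Rightarrow> 'q::ab_group_add \<Rightarrow> 'q"
    and \<pi>Q :: "(('o \<Rightarrow> 'o \<Rightarrow> 'm \<Rightarrow> 'k) \<Rightarrow> 'q) \<Rightarrow> 'q"
  assumes "klin_cat sM Hom cmp idm"
    and "left_strictly_locally_finite sM Hom cmp"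
    and "contramodule sM Hom cmp idm sP \<pi>P"
    and "contramodule sM Hom cmp idm sQ \<pi>Q"
  shows "(\<forall>g1 g2. contra_mor sM Hom sP \<pi>P sQ \<pi>Q g1 \<longrightarrow> contra_mor sM Hom sP \<pi>P sQ \<pi>Q g2 \<longrightarrow>
            (\<forall>x. \<forall>p\<in>Theta_obj sM Hom idm sP \<pi>P x. g1 p = g2 p) \<longrightarrow> g1 = g2)
       \<and> (\<forall>t. module_mor Hom sP (Theta_obj sM Hom idm sP \<pi>P) (Theta_act sM Hom sP \<pi>P)
                              sQ (Theta_obj sM Hom idm sQ \<pi>Q) (Theta_act sM Hom sQ \<pi>Q) t \<longrightarrow>
            (\<exists>g. contra_mor sM Hom sP \<pi>P sQ \<pi>Q g \<and>
                 (\<forall>x. \<forall>p\<in>Theta_obj sM Hom idm sP \<pi>P x. g p = t x p)))"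
proof -
  have lf: "locally_finite sM Hom" using assms(2) unfolding left_strictly_locally_finite_def by blast
  interpret K0: kpair0 sM Hom cmp idm sP \<pi>P sQ \<pi>Q
    using assms(1,3,4) lf by (simp add: kpair0_def kcontra_def kcontra_axioms_def kcat_def)
  show ?thesis
  proof (intro conjI allI impI)
    fix g1 g2
    assume "contra_mor sM Hom sP \<pi>P sQ \<pi>Q g1" "contra_mor sM Hom sP \<pi>P sQ \<pi>Q g2"
      "\<forall>x. \<forall>p\<in>Theta_obj sM Hom idm sP \<pi>P x. g1 p = g2 p"
    then show "g1 = g2" by (rule K0.faithful)
  next
    fix t
    assume mm: "module_mor Hom sP (Theta_obj sM Hom idm sP \<pi>P) (Theta_act sM Hom sP \<pi>P)
                              sQ (Theta_obj sM Hom idm sQ \<pi>Q) (Theta_act sM Hom sQ \<pi>Q) t"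
    interpret K: kpair sM Hom cmp idm sP \<pi>P sQ \<pi>Q t
      using assms lf mm by (simp add: kpair_def kpair_axioms_def kcontra_def kcontra_axioms_def kcat_def)
    show "\<exists>g. contra_mor sM Hom sP \<pi>P sQ \<pi>Q g \<and>
                 (\<forall>x. \<forall>p\<in>Theta_obj sM Hom idm sP \<pi>P x. g p = t x p)"
      by (rule K.full)
  qed
qed

end
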